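(* Let $R$ be a ring and $(A_{i,r})$ a double complex of $R$-modules with all columns exact, and form its total complex with respect to $\Sigma=\prod$ (so $A_n=\prod_i A_{i,n-i}$). Then for each $n$ there is a short exact sequence $$0\to\operatorname{PB}(H^{\mathrm{tot}}(A_n))\to H^{\mathrm{tot}}(A_n)\to\varprojlim_{i\to\infty}(A_{i,n-i})_\square\to 0,$$ where the inverse limit is over the system with maps $(A_{i+1,n-i-1})_\square\to(A_{i,n-i})_\square$ given by $\bar\delta_1^{-1}\circ\bar\delta_2$, with $\bar\delta_2:(A_{i+1,n-i-1})_\square\to{}^\square A_{i+1,n-i}$ the extramural map of the horizontal arrow $A_{i+1,n-i-1}\to A_{i+1,n-i}$ and $\bar\delta_1:(A_{i,n-i})_\square\to{}^\square A_{i+1,n-i}$ the extramural map of the vertical arrow $A_{i,n-i}\to A_{i+1,n-i}$ (an isomorphism). This inverse limit is also isomorphic to the inverse limit of the corresponding system of receptors ${}^\square A_{i,n-i+1}$, and to $\ker(\bar\delta:A_{n\square}\to{}^\square A_{n+1})$; and $\operatorname{PB}(H^{\mathrm{tot}}(A_n))$ equals the image of the intramural map ${}^\square A_n\to H^{\mathrm{tot}}(A_n)$, isomorphic to $\operatorname{coker}(\bar\delta:A_{n-1\,\square}\to{}^\square A_n)$.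
   Context: A double complex of $R$-modules is a family $A_{i,r}$ $(i,r\in\mathbb{Z})$ ($i$ = row index increasing downward, $r$ = column index increasing rightward) with vertical maps $\delta_1:A_{i,r}\to A_{i+1,r}$ and horizontal maps $\delta_2:A_{i,r}\to A_{i,r+1}$, $\delta_1\delta_1=0$, $\delta_2\delta_2=0$, $\delta_1\delta_2=\delta_2\delta_1$. For an object $A$, with $d,e$ the horizontal maps into/out of $A$, $c,f$ the vertical maps into/out of $A$, $p$ the composite of two arrows ending at $A$, $q$ the composite of two arrows starting at $A$: receptor ${}^\square A=(\ker e\cap\ker f)/\operatorname{im}p$, donor $A_\square=\ker q/(\operatorname{im}c+\operatorname{im}d)$; an arrow $A\to B$ induces the "extramural" map $A_\square\to{}^\square B$. Total complex: $A_n=\prod_i A_{i,n-i}$, $\delta=\delta_2+(-1)^n\delta_1:A_n\to A_{n+1}$ (computed componentwise), $H^{\mathrm{tot}}(A_n)=\ker\delta/\operatorname{im}\delta$. $A_{n\square}=\prod_i(A_{i,n-i})_\square$, ${}^\square A_n=\prod_i{}^\square A_{i,n-i}$; $\bar\delta_1,\bar\delta_2:A_{n\square}\to{}^\square A_{n+1}$ are the products of the extramural maps of vertical, respectively horizontal, arrows; $\bar\delta=\bar\delta_2+(-1)^n\bar\delta_1$; the intramural map ${}^\square A_n\to H^{\mathrm{tot}}(A_n)$ is induced by the identity of $A_n$. An element $x\in H^{\mathrm{tot}}(A_n)$ is a "peekaboo element" if for every finite set $I\subseteq\mathbb{Z}$, $x$ is represented by a cycle $(x_i)\in A_n$ with $x_i=0$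 for all $i\in I$; these form a submodule $\operatorname{PB}(H^{\mathrm{tot}}(A_n))$. *)

theory Defs
  imports Main
begin

record ('r, 'a) rmod =
  carr  :: "'a set"
  madd  :: "'a \<Rightarrow> 'a \<Rightarrow> 'a"
  mzero :: "'a"
  msmul :: "'r \<Rightarrow> 'a \<Rightarrow> 'a"

definition is_rmod :: "('r::ring_1, 'a) rmod \<Rightarrow> bool" where
  "is_rmod M \<longleftrightarrow>
     mzero M \<in> carr M \<and>
     (\<forall>x\<in>carr M. \<forall>y\<in>carr M. madd M x y \<in> carr M) \<and>
     (\<forall>x\<in>carr M. \<forall>y\<in>carr M. \<forall>z\<in>carr M. madd M (madd M x y) z = madd M x (madd M y z)) \<and>
     (\<forall>x\<in>carr M. \<forall>y\<in>carr M. madd M x y = madd M y x) \<and>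
     (\<forall>x\<in>carr M. madd M (mzero M) x = x) \<and>
     (\<forall>x\<in>carr M. \<exists>y\<in>carr M. madd M x y = mzero M) \<and>
     (\<forall>a. \<forall>x\<in>carr M. msmul M a x \<in> carr M) \<and>
     (\<forall>a. \<forall>x\<in>carr M. \<forall>y\<in>carr M. msmul M a (madd M x y) = madd M (msmul M a x) (msmul M a y)) \<and>
     (\<forall>a b. \<forall>x\<in>carr M. msmul M (a + b) x = madd M (msmul M a x) (msmul M b x)) \<and>
     (\<forall>a b. \<forall>x\<in>carr M. msmul M (a * b) x = msmul M a (msmul M b x)) \<and>
     (\<forall>x\<in>carr M. msmul M 1 x = x)"

definition rmod_hom :: "('r, 'a) rmod \<Rightarrow> ('r, 'b) rmod \<Rightarrow> ('a \<Rightarrow> 'b) \<Rightarrow> bool" where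
  "rmod_hom M N f \<longleftrightarrow>
     f ` carr M \<subseteq> carr N \<and>
     (\<forall>x\<in>carr M. \<forall>y\<in>carr M. f (madd M x y) = madd N (f x) (f y)) \<and>
     (\<forall>a. \<forall>x\<in>carr M. f (msmul M a x) = msmul N a (f x))"

definition rmod_iso :: "('r, 'a) rmod \<Rightarrow> ('r, 'b) rmod \<Rightarrow> ('a \<Rightarrow> 'b) \<Rightarrow> bool" where
  "rmod_iso M N f \<longleftrightarrow> rmod_hom M N f \<and> bij_betw f (carr M) (carr N)"

definition mker :: "('r, 'a) rmod \<Rightarrow> ('r, 'b) rmod \<Rightarrow> ('a \<Rightarrow> 'b) \<Rightarrow> 'a set" where
  "mker M N f = {x \<in> carr M. f x = mzero N}"

definition sub_rmod :: "('r, 'a) rmod \<Rightarrow> 'a set \<Rightarrow> ('r, 'a) rmod" where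
  "sub_rmod M S = M\<lparr>carr := S\<rparr>"

definition qcls :: "('r, 'a) rmod \<Rightarrow> 'a set \<Rightarrow> 'a \<Rightarrow> 'a set" where
  "qcls M N x = {madd M x n | n. n \<in> N}"

definition quot_rmod :: "('r, 'a) rmod \<Rightarrow> 'a set \<Rightarrow> ('r, 'a set) rmod" where
  "quot_rmod M N =
     \<lparr> carr = qcls M N ` carr M,
       madd = (\<lambda>X Y. {madd M x y | x y. x \<in> X \<and> y \<in> Y}),
       mzero = qcls M N (mzero M),
       msmul = (\<lambda>a X. {madd M (msmul M a x) n | x n. x \<in> X \<and> n \<in> N}) \<rparr>"

definition sset :: "('r, 'a) rmod \<Rightarrow> 'a set \<Rightarrow> 'a set \<Rightarrow> 'a set" where
  "sset M U V = {madd M u v | u v. u \<in> U \<and> v \<in> V}"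

definition prod_rmod :: "(int \<Rightarrow> ('r, 'a) rmod) \<Rightarrow> ('r, int \<Rightarrow> 'a) rmod" where
  "prod_rmod Ms =
     \<lparr> carr = {x. \<forall>i. x i \<in> carr (Ms i)},
       madd = (\<lambda>x y i. madd (Ms i) (x i) (y i)),
       mzero = (\<lambda>i. mzero (Ms i)),
       msmul = (\<lambda>a x i. msmul (Ms i) a (x i)) \<rparr>"

text \<open>Inverse limit of a tower (X_i), maps phi i : X_(i+1) -> X_i, i in Z:
  compatible families. (Cofinal in i -> infinity, so this is lim_(i->oo).)\<close>
definition invlim :: "(int \<Rightarrow> ('r, 'a) rmod) \<Rightarrow> (int \<Rightarrow> 'a \<Rightarrow> 'a) \<Rightarrow> ('r, int \<Rightarrow> 'a) rmod" where
  "invlim Xs phi =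
     sub_rmod (prod_rmod Xs) {x \<in> carr (prod_rmod Xs). \<forall>i. x i = phi i (x (i + 1))}"

text \<open>A i r is the module in row i, column r; d1 i r : A i r -> A (i+1) r (vertical),
  d2 i r : A i r -> A i (r+1) (horizontal).\<close>
definition double_complex ::
  "(int \<Rightarrow> int \<Rightarrow> ('r::ring_1, 'm) rmod) \<Rightarrow> (int \<Rightarrow> int \<Rightarrow> 'm \<Rightarrow> 'm) \<Rightarrow> (int \<Rightarrow> int \<Rightarrow> 'm \<Rightarrow> 'm) \<Rightarrow> bool" where
  "double_complex A d1 d2 \<longleftrightarrow>
     (\<forall>i r. is_rmod (A i r)) \<and>
     (\<forall>i r. rmod_hom (A i r) (A (i + 1) r) (d1 i r)) \<and>
     (\<forall>i r. rmod_hom (A i r) (A i (r + 1)) (d2 i r)) \<and>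
     (\<forall>i r. \<forall>x\<in>carr (A i r). d1 (i + 1) r (d1 i r x) = mzero (A (i + 2) r)) \<and>
     (\<forall>i r. \<forall>x\<in>carr (A i r). d2 i (r + 1) (d2 i r x) = mzero (A i (r + 2))) \<and>
     (\<forall>i r. \<forall>x\<in>carr (A i r). d1 i (r + 1) (d2 i r x) = d2 (i + 1) r (d1 i r x))"

definition columns_exact ::
  "(int \<Rightarrow> int \<Rightarrow> ('r, 'm) rmod) \<Rightarrow> (int \<Rightarrow> int \<Rightarrow> 'm \<Rightarrow> 'm) \<Rightarrow> bool" where
  "columns_exact A d1 \<longleftrightarrow>
     (\<forall>i r. {x \<in> carr (A i r). d1 i r x = mzero (A (i + 1) r)} = d1 (i - 1) r ` carr (A (i - 1) r))"

text \<open>Denominator of the receptor: image of the composite of two arrows ending at A i r.\<close>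
definition recden where
  "recden A d1 d2 i r = (\<lambda>x. d1 (i - 1) r (d2 (i - 1) (r - 1) x)) ` carr (A (i - 1) (r - 1))"

definition receptor ::
  "(int \<Rightarrow> int \<Rightarrow> ('r, 'm) rmod) \<Rightarrow> (int \<Rightarrow> int \<Rightarrow> 'm \<Rightarrow> 'm) \<Rightarrow> (int \<Rightarrow> int \<Rightarrow> 'm \<Rightarrow> 'm)
     \<Rightarrow> int \<Rightarrow> int \<Rightarrow> ('r, 'm set) rmod" where
  "receptor A d1 d2 i r =
     quot_rmod (sub_rmod (A i r) {x \<in> carr (A i r). d2 i r x = mzero (A i (r + 1)) \<and> d1 i r x = mzero (A (i + 1) r)})
               (recden A d1 d2 i r)"

definition donor ::
  "(int \<Rightarrow> int \<Rightarrow> ('r, 'm) rmod) \<Rightarrow> (int \<Rightarrow> int \<Rightarrow> 'm \<Rightarrow> 'm) \<Rightarrow> (int \<Rightarrow> int \<Rightarrow> 'm \<Rightarrow> 'm)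
     \<Rightarrow> int \<Rightarrow> int \<Rightarrow> ('r, 'm set) rmod" where
  "donor A d1 d2 i r =
     quot_rmod (sub_rmod (A i r) {x \<in> carr (A i r). d1 i (r + 1) (d2 i r x) = mzero (A (i + 1) (r + 1))})
               (sset (A i r) (d1 (i - 1) r ` carr (A (i - 1) r)) (d2 i (r - 1) ` carr (A i (r - 1))))"

text \<open>Extramural maps, induced on representatives by the arrow:
  ext_v i r : (A i r)_box -> box(A (i+1) r), ext_h i r : (A i r)_box -> box(A i (r+1)).\<close>
definition ext_v where
  "ext_v A d1 d2 i r X = qcls (A (i + 1) r) (recden A d1 d2 (i + 1) r) (d1 i r (SOME x. x \<in> X))"

definition ext_h where
  "ext_h A d1 d2 i r X = qcls (A i (r + 1)) (recden A d1 d2 i (r + 1)) (d2 i r (SOME x. x \<in> X))"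

definition tot :: "(int \<Rightarrow> int \<Rightarrow> ('r, 'm) rmod) \<Rightarrow> int \<Rightarrow> ('r, int \<Rightarrow> 'm) rmod" where
  "tot A n = prod_rmod (\<lambda>i. A i (n - i))"

definition totd :: "(int \<Rightarrow> int \<Rightarrow> ('r::ring_1, 'm) rmod) \<Rightarrow> (int \<Rightarrow> int \<Rightarrow> 'm \<Rightarrow> 'm) \<Rightarrow> (int \<Rightarrow> int \<Rightarrow> 'm \<Rightarrow> 'm)
     \<Rightarrow> int \<Rightarrow> (int \<Rightarrow> 'm) \<Rightarrow> (int \<Rightarrow> 'm)" where
  "totd A d1 d2 n x =
     (\<lambda>i. madd (A i (n + 1 - i)) (d2 i (n - i) (x i))
            (msmul (A i (n + 1 - i)) ((-1) ^ nat \<bar>n\<bar>) (d1 (i - 1) (n - i + 1) (x (i - 1)))))"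

definition boundaries where
  "boundaries A d1 d2 n = totd A d1 d2 (n - 1) ` carr (tot A (n - 1))"

definition cycles where
  "cycles A d1 d2 n = {x \<in> carr (tot A n). totd A d1 d2 n x = mzero (tot A (n + 1))}"

definition Htot where
  "Htot A d1 d2 n = quot_rmod (sub_rmod (tot A n) (cycles A d1 d2 n)) (boundaries A d1 d2 n)"

definition PB where
  "PB A d1 d2 n = {X \<in> carr (Htot A d1 d2 n).
      \<forall>I. finite I \<longrightarrow> (\<exists>x\<in>X. \<forall>i\<in>I. x i = mzero (A i (n - i)))}"

definition donprod where
  "donprod A d1 d2 n = prod_rmod (\<lambda>i. donor A d1 d2 i (n - i))"

definition recprod where
  "recprod A d1 d2 n = prod_rmod (\<lambda>i. receptor A d1 d2 i (n - i))"

definition dbar1 where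
  "dbar1 A d1 d2 n X = (\<lambda>i. ext_v A d1 d2 (i - 1) (n - i + 1) (X (i - 1)))"

definition dbar2 where
  "dbar2 A d1 d2 n X = (\<lambda>i. ext_h A d1 d2 i (n - i) (X i))"

definition dbar where
  "dbar A d1 d2 n X =
     (\<lambda>i. madd (receptor A d1 d2 i (n + 1 - i)) (dbar2 A d1 d2 n X i)
            (msmul (receptor A d1 d2 i (n + 1 - i)) ((-1) ^ nat \<bar>n\<bar>) (dbar1 A d1 d2 n X i)))"

text \<open>Intramural map box(A_n) -> H^tot(A_n), induced by the identity.\<close>
definition intramural where
  "intramural A d1 d2 n Y =
     qcls (tot A n) (boundaries A d1 d2 n) (\<lambda>i. SOME y. y \<in> Y i)"

definition donor_lim where
  "donor_lim A d1 d2 n =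
     invlim (\<lambda>i. donor A d1 d2 i (n - i))
       (\<lambda>i. the_inv_into (carr (donor A d1 d2 i (n - i))) (ext_v A d1 d2 i (n - i))
              \<circ> ext_h A d1 d2 (i + 1) (n - i - 1))"

definition receptor_lim where
  "receptor_lim A d1 d2 n =
     invlim (\<lambda>i. receptor A d1 d2 i (n - i + 1))
       (\<lambda>i. ext_h A d1 d2 i (n - i)
              \<circ> the_inv_into (carr (donor A d1 d2 i (n - i))) (ext_v A d1 d2 i (n - i)))"

definition dbar_ker where
  "dbar_ker A d1 d2 n =
     sub_rmod (donprod A d1 d2 n) (mker (donprod A d1 d2 n) (recprod A d1 d2 (n + 1)) (dbar A d1 d2 n))"

definition dbar_coker where
  "dbar_coker A d1 d2 n =
     quot_rmod (recprod A d1 d2 n) (dbar A d1 d2 (n - 1) ` carr (donprod A d1 d2 (n - 1)))"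

end

theory Submission
  imports Defs
begin

definition mneg :: "('r::ring_1,'a) rmod \<Rightarrow> 'a \<Rightarrow> 'a" where "mneg M x = msmul M (-1) x"

definition submod :: "('r::ring_1,'a) rmod \<Rightarrow> 'a set \<Rightarrow> bool" where
 "submod M N \<longleftrightarrow> N \<subseteq> carr M \<and> mzero M \<in> N \<and> (\<forall>x\<in>N. \<forall>y\<in>N. madd M x y \<in> N) \<and> (\<forall>a. \<forall>x\<in>N. msmul M a x \<in> N)"

context fixes M :: "('r::ring_1,'a) rmod" assumes M: "is_rmod M" begin

lemma rm_zero[simp]: "mzero M \<in> carr M" using M by (auto simp: is_rmod_def)
lemma rm_add[simp]: "x \<in> carr M \<Longrightarrow> y \<in> carr M \<Longrightarrow> madd M x y \<in> carr M" using M by (auto simp: is_rmod_def)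
lemma rm_assoc: "x \<in> carr M \<Longrightarrow> y \<in> carr M \<Longrightarrow> z \<in> carr M \<Longrightarrow> madd M (madd M x y) z = madd M x (madd M y z)" using M by (auto simp: is_rmod_def)
lemma rm_comm: "x \<in> carr M \<Longrightarrow> y \<in> carr M \<Longrightarrow> madd M x y = madd M y x" using M by (auto simp: is_rmod_def)
lemma rm_lzero[simp]: "x \<in> carr M \<Longrightarrow> madd M (mzero M) x = x" using M by (auto simp: is_rmod_def)
lemma rm_rzero[simp]: "x \<in> carr M \<Longrightarrow> madd M x (mzero M) = x" using rm_comm[of x "mzero M"] by simp
lemma rm_inv: "x \<in> carr M \<Longrightarrow> \<exists>y\<in>carr M. madd M x y = mzero M" using M unfolding is_rmod_def by (elim conjE) blast
lemma rm_smul[simp]: "x \<in> carr M \<Longrightarrow> msmul M a x \<in> carr M" using M by (auto simp: is_rmod_def)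
lemma rm_smul_add: "x \<in> carr M \<Longrightarrow> y \<in> carr M \<Longrightarrow> msmul M a (madd M x y) = madd M (msmul M a x) (msmul M a y)" using M by (auto simp: is_rmod_def)
lemma rm_add_smul: "x \<in> carr M \<Longrightarrow> msmul M (a + b) x = madd M (msmul M a x) (msmul M b x)" using M by (auto simp: is_rmod_def)
lemma rm_smul_smul: "x \<in> carr M \<Longrightarrow> msmul M a (msmul M b x) = msmul M (a * b) x" using M by (auto simp: is_rmod_def)
lemma rm_one[simp]: "x \<in> carr M \<Longrightarrow> msmul M 1 x = x" using M by (auto simp: is_rmod_def)

lemma rm_cancel: assumes "x \<in> carr M" "y \<in> carr M" "z \<in> carr M" "madd M x y = madd M x z" shows "y = z"
proof -
  obtain x' where x': "x' \<in> carr M" "madd M x x' = mzero M" using rm_inv assms(1) by blast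
  have "y = madd M (madd M x' x) y" using x' assms by (simp add: rm_comm)
  also have "\<dots> = madd M x' (madd M x z)" using x' assms by (simp add: rm_assoc)
  also have "\<dots> = z" using x' assms by (simp add: rm_assoc[symmetric] rm_comm)
  finally show ?thesis .
qed

lemma rm_zero_smul[simp]: "x \<in> carr M \<Longrightarrow> msmul M 0 x = mzero M"
proof -
  assume x: "x \<in> carr M"
  have "madd M (msmul M 0 x) (msmul M 0 x) = msmul M (0 + 0) x" by (rule rm_add_smul[symmetric, OF x])
  also have "\<dots> = madd M (msmul M 0 x) (mzero M)" using x by simp
  finally have e: "madd M (msmul M 0 x) (msmul M 0 x) = madd M (msmul M 0 x) (mzero M)" .
  show ?thesis using rm_cancel[OF _ _ _ e] x by simp
qed

lemma rm_neg_closed[simp]: "x \<in> carr M \<Longrightarrow> mneg M x \<in> carr M" by (simp add: mneg_def)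

lemma rm_rneg[simp]: "x \<in> carr M \<Longrightarrow> madd M x (mneg M x) = mzero M"
proof -
  assume x: "x \<in> carr M"
  have "madd M x (mneg M x) = madd M (msmul M 1 x) (msmul M (-1) x)" using x by (simp add: mneg_def)
  also have "\<dots> = msmul M (1 + -1) x" by (rule rm_add_smul[symmetric, OF x])
  also have "\<dots> = mzero M" using x by simp
  finally show ?thesis .
qed

lemma rm_lneg[simp]: "x \<in> carr M \<Longrightarrow> madd M (mneg M x) x = mzero M"
  using rm_comm[of "mneg M x" x] by simp

lemma rm_smul_zero[simp]: "msmul M a (mzero M) = mzero M"
proof -
  have "madd M (msmul M a (mzero M)) (msmul M a (mzero M)) = msmul M a (madd M (mzero M) (mzero M))"
    by (rule rm_smul_add[symmetric]) simp_all
  also have "\<dots> = madd M (msmul M a (mzero M)) (mzero M)" by simp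
  finally have e: "madd M (msmul M a (mzero M)) (msmul M a (mzero M)) = madd M (msmul M a (mzero M)) (mzero M)" .
  show ?thesis using rm_cancel[OF _ _ _ e] by simp
qed

lemma rm_neg_unique: assumes x: "x \<in> carr M" and y: "y \<in> carr M" and e: "madd M x y = mzero M" shows "y = mneg M x"
proof -
  have "y = madd M (madd M (mneg M x) x) y" using x y by simp
  also have "\<dots> = madd M (mneg M x) (madd M x y)" by (rule rm_assoc[OF rm_neg_closed[OF x] x y])
  also have "\<dots> = mneg M x" using e x by simp
  finally show ?thesis .
qed

lemma rm_eq_iff: assumes x: "x \<in> carr M" and y: "y \<in> carr M" shows "x = y \<longleftrightarrow> madd M x (mneg M y) = mzero M"
proof
  assume "madd M x (mneg M y) = mzero M"
  then have "mneg M y = mneg M x" using rm_neg_unique[of x "mneg M y"] x y by simp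
  then have "mneg M (mneg M y) = mneg M (mneg M x)" by simp
  then show "x = y" using x y by (simp add: mneg_def rm_smul_smul)
qed (use y in simp)

lemma rm_neg_smul: "x \<in> carr M \<Longrightarrow> msmul M (- a) x = mneg M (msmul M a x)"
  by (simp add: mneg_def rm_smul_smul)

lemma rm_smul_neg: "x \<in> carr M \<Longrightarrow> msmul M a (mneg M x) = mneg M (msmul M a x)"
  by (simp add: mneg_def rm_smul_smul)

lemma rm_neg_add: "x \<in> carr M \<Longrightarrow> y \<in> carr M \<Longrightarrow> mneg M (madd M x y) = madd M (mneg M x) (mneg M y)"
  by (simp add: mneg_def rm_smul_add)

lemma rm_neg_neg[simp]: "x \<in> carr M \<Longrightarrow> mneg M (mneg M x) = x"
  by (simp add: mneg_def rm_smul_smul)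

lemma rm_neg_zero[simp]: "mneg M (mzero M) = mzero M" by (simp add: mneg_def)

lemma rm_lcomm: "x \<in> carr M \<Longrightarrow> y \<in> carr M \<Longrightarrow> z \<in> carr M \<Longrightarrow> madd M x (madd M y z) = madd M y (madd M x z)"
proof -
  assume a: "x \<in> carr M" "y \<in> carr M" "z \<in> carr M"
  have "madd M x (madd M y z) = madd M (madd M x y) z" using a by (simp add: rm_assoc)
  also have "\<dots> = madd M (madd M y x) z" using a rm_comm[of x y] by simp
  also have "\<dots> = madd M y (madd M x z)" using a by (simp add: rm_assoc)
  finally show ?thesis .
qed

lemma rm_diff_add: "x \<in> carr M \<Longrightarrow> y \<in> carr M \<Longrightarrow> madd M (madd M x (mneg M y)) y = x"
  by (simp add: rm_assoc)

lemma rm_add_diff: "x \<in> carr M \<Longrightarrow> y \<in> carr M \<Longrightarrow> madd M (madd M x y) (mneg M y) = x"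
  by (simp add: rm_assoc)

lemma rm_add_diff2: "x \<in> carr M \<Longrightarrow> y \<in> carr M \<Longrightarrow> madd M (madd M y x) (mneg M y) = x"
  by (simp add: rm_comm[of y x] rm_assoc)

lemma rm_mid: "x \<in> carr M \<Longrightarrow> y \<in> carr M \<Longrightarrow> madd M y (madd M x (mneg M y)) = x"
  by (simp add: rm_lcomm[of y x])

lemma rm_add4: "a \<in> carr M \<Longrightarrow> b \<in> carr M \<Longrightarrow> c \<in> carr M \<Longrightarrow> d \<in> carr M \<Longrightarrow>
   madd M (madd M a b) (madd M c d) = madd M (madd M a c) (madd M b d)"
proof -
  assume a: "a \<in> carr M" "b \<in> carr M" "c \<in> carr M" "d \<in> carr M"
  have "madd M (madd M a b) (madd M c d) = madd M a (madd M b (madd M c d))" using a by (simp add: rm_assoc)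
  also have "\<dots> = madd M a (madd M c (madd M b d))" using a rm_lcomm[of b c d] by simp
  also have "\<dots> = madd M (madd M a c) (madd M b d)" using a by (simp add: rm_assoc)
  finally show ?thesis .
qed

lemma rm_smul_sum_zero: "x \<in> carr M \<Longrightarrow> a + b = 0 \<Longrightarrow> madd M (msmul M a x) (msmul M b x) = mzero M"
  using rm_add_smul[of x a b] by simp

end

lemma submodD:
  assumes "submod M N"
  shows "N \<subseteq> carr M" "mzero M \<in> N" "x \<in> N \<Longrightarrow> y \<in> N \<Longrightarrow> madd M x y \<in> N" "x \<in> N \<Longrightarrow> msmul M a x \<in> N"
  using assms by (auto simp: submod_def)

lemma submod_neg: "submod M N \<Longrightarrow> x \<in> N \<Longrightarrow> mneg M x \<in> N" by (simp add: mneg_def submodD)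

lemma submod_rmod: assumes "is_rmod M" "submod M S" shows "is_rmod (sub_rmod M S)"
proof -
  have S: "S \<subseteq> carr M" using assms(2) submodD by auto
  have a: "\<forall>x\<in>S. \<exists>y\<in>S. madd M x y = mzero M"
  proof
    fix x assume x: "x \<in> S"
    show "\<exists>y\<in>S. madd M x y = mzero M" 
      using x S submod_neg[OF assms(2) x] rm_rneg[OF assms(1)] by blast
  qed
  show ?thesis using assms(1) S a submodD[OF assms(2)] unfolding is_rmod_def sub_rmod_def
    by (auto simp: subset_iff)
qed

context fixes M :: "('r::ring_1,'a) rmod" and N assumes M: "is_rmod M" and N: "submod M N" begin

lemma N_sub: "N \<subseteq> carr M" using N submodD by auto

lemma qcls_self: "x \<in> carr M \<Longrightarrow> x \<in> qcls M N x"
  unfolding qcls_def using submodD(2)[OF N] M by force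

lemma qcls_sub: "x \<in> carr M \<Longrightarrow> qcls M N x \<subseteq> carr M"
  unfolding qcls_def using N_sub M by auto

lemma qcls_le: assumes x: "x \<in> carr M" and y: "y \<in> carr M" and d: "madd M x (mneg M y) \<in> N"
  shows "qcls M N x \<subseteq> qcls M N y"
proof
  fix z assume "z \<in> qcls M N x"
  then obtain m where m: "m \<in> N" "z = madd M x m" unfolding qcls_def by auto
  have mc: "m \<in> carr M" using m N_sub by auto
  have dc: "madd M x (mneg M y) \<in> carr M" using M x y by simp
  have "madd M y (madd M (madd M x (mneg M y)) m) = madd M (madd M y (madd M x (mneg M y))) m"
    using M x y mc by (simp add: rm_assoc)
  also have "\<dots> = z" using m(2) M x y by (simp add: rm_mid)
  finally have "z = madd M y (madd M (madd M x (mneg M y)) m)" ..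
  moreover have "madd M (madd M x (mneg M y)) m \<in> N" using d m submodD(3)[OF N] by auto
  ultimately show "z \<in> qcls M N y" unfolding qcls_def by auto
qed

lemma qcls_eq_iff: assumes x: "x \<in> carr M" and y: "y \<in> carr M"
  shows "qcls M N x = qcls M N y \<longleftrightarrow> madd M x (mneg M y) \<in> N"
proof
  assume e: "qcls M N x = qcls M N y"
  then have "x \<in> qcls M N y" using qcls_self x by auto
  then obtain m where m: "m \<in> N" "x = madd M y m" unfolding qcls_def by auto
  have "madd M x (mneg M y) = m" using m N_sub M y by (simp add: rm_add_diff2 subset_iff)
  then show "madd M x (mneg M y) \<in> N" using m by simp
next
  assume d: "madd M x (mneg M y) \<in> N"
  have "madd M y (mneg M x) = mneg M (madd M x (mneg M y))"
    using M x y by (simp add: rm_neg_add rm_comm)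
  then have d2: "madd M y (mneg M x) \<in> N" using submod_neg[OF N d] by simp
  show "qcls M N x = qcls M N y" using qcls_le[OF x y d] qcls_le[OF y x d2] by auto
qed

lemma qcls_eqI: "x \<in> carr M \<Longrightarrow> y \<in> carr M \<Longrightarrow> madd M x (mneg M y) \<in> N \<Longrightarrow> qcls M N x = qcls M N y"
  using qcls_eq_iff by blast

lemma qcls_add_N: "x \<in> carr M \<Longrightarrow> m \<in> N \<Longrightarrow> qcls M N (madd M x m) = qcls M N x"
  using N_sub M by (intro qcls_eqI) (auto simp: rm_add_diff2 subset_iff)

lemma qcls_mem: assumes x: "x \<in> carr M" and y: "y \<in> qcls M N x" shows "y \<in> carr M" "qcls M N y = qcls M N x"
proof -
  obtain m where m: "m \<in> N" "y = madd M x m" using y unfolding qcls_def by auto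
  show "y \<in> carr M" using m N_sub M x by auto
  show "qcls M N y = qcls M N x" using qcls_add_N[OF x m(1)] m by simp
qed

lemma qcls_some: assumes x: "x \<in> carr M"
  shows "(SOME y. y \<in> qcls M N x) \<in> carr M" "qcls M N (SOME y. y \<in> qcls M N x) = qcls M N x"
  using someI[of "\<lambda>y. y \<in> qcls M N x", OF qcls_self[OF x]] qcls_mem[OF x] by auto

lemma qcls_some_diff: assumes x: "x \<in> carr M"
  shows "madd M (SOME y. y \<in> qcls M N x) (mneg M x) \<in> N"
  using qcls_some[OF x] qcls_eq_iff x by blast

lemma quot_carr: "carr (quot_rmod M N) = qcls M N ` carr M" by (simp add: quot_rmod_def)
lemma quot_zero: "mzero (quot_rmod M N) = qcls M N (mzero M)" by (simp add: quot_rmod_def)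

lemma quot_add: assumes x: "x \<in> carr M" and y: "y \<in> carr M"
  shows "madd (quot_rmod M N) (qcls M N x) (qcls M N y) = qcls M N (madd M x y)"
proof -
  have "{madd M x' y' |x' y'. x' \<in> qcls M N x \<and> y' \<in> qcls M N y} = qcls M N (madd M x y)"
  proof (intro equalityI subsetI)
    fix z assume "z \<in> {madd M x' y' |x' y'. x' \<in> qcls M N x \<and> y' \<in> qcls M N y}"
    then obtain m m' where m: "m \<in> N" "m' \<in> N" "z = madd M (madd M x m) (madd M y m')"
      unfolding qcls_def by auto
    have mc: "m \<in> carr M" "m' \<in> carr M" using m N_sub by auto
    have "z = madd M (madd M x y) (madd M m m')" using m(3) mc x y M
      by (simp add: rm_add4)
    then show "z \<in> qcls M N (madd M x y)" unfolding qcls_def using submodD(3)[OF N m(1,2)] by auto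
  next
    fix z assume "z \<in> qcls M N (madd M x y)"
    then obtain m where m: "m \<in> N" "z = madd M (madd M x y) m" unfolding qcls_def by auto
    have mc: "m \<in> carr M" using m N_sub by auto
    have "madd M (madd M x m) (madd M y (mzero M)) = madd M (madd M x y) (madd M m (mzero M))"
      by (rule rm_add4[OF M x mc y rm_zero[OF M]])
    then have "z = madd M (madd M x m) (madd M y (mzero M))" using m mc x y M by simp
    then show "z \<in> {madd M x' y' |x' y'. x' \<in> qcls M N x \<and> y' \<in> qcls M N y}"
      unfolding qcls_def using m submodD(2)[OF N] by blast
  qed
  then show ?thesis by (simp add: quot_rmod_def)
qed

lemma quot_smul: assumes x: "x \<in> carr M"
  shows "msmul (quot_rmod M N) a (qcls M N x) = qcls M N (msmul M a x)"
proof -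
  have "{madd M (msmul M a x') n |x' n. x' \<in> qcls M N x \<and> n \<in> N} = qcls M N (msmul M a x)"
  proof (intro equalityI subsetI)
    fix z assume "z \<in> {madd M (msmul M a x') n |x' n. x' \<in> qcls M N x \<and> n \<in> N}"
    then obtain m n where m: "m \<in> N" "n \<in> N" "z = madd M (msmul M a (madd M x m)) n"
      unfolding qcls_def by auto
    have mc: "m \<in> carr M" "n \<in> carr M" using m N_sub by auto
    have "z = madd M (msmul M a x) (madd M (msmul M a m) n)" using m(3) mc x M
      by (simp add: rm_assoc rm_smul_add)
    moreover have "madd M (msmul M a m) n \<in> N" using submodD(3,4)[OF N] m by auto
    ultimately show "z \<in> qcls M N (msmul M a x)" unfolding qcls_def by auto
  next
    fix z assume "z \<in> qcls M N (msmul M a x)"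
    then obtain m where m: "m \<in> N" "z = madd M (msmul M a x) m" unfolding qcls_def by auto
    then show "z \<in> {madd M (msmul M a x') n |x' n. x' \<in> qcls M N x \<and> n \<in> N}"
      using qcls_self[OF x] by blast
  qed
  then show ?thesis by (simp add: quot_rmod_def)
qed

lemma quot_rep: assumes "X \<in> carr (quot_rmod M N)"
  shows "(SOME x. x \<in> X) \<in> carr M" "qcls M N (SOME x. x \<in> X) = X"
  using assms qcls_some by (auto simp: quot_carr)

lemma quot_neg: "x \<in> carr M \<Longrightarrow> mneg (quot_rmod M N) (qcls M N x) = qcls M N (mneg M x)"
  by (simp add: mneg_def quot_smul)

lemma quot_rmod: "is_rmod (quot_rmod M N)"
proof -
  let ?Q = "quot_rmod M N" let ?q = "qcls M N"
  have ex: "\<And>X. X \<in> carr ?Q \<Longrightarrow> \<exists>x\<in>carr M. X = ?q x" by (auto simp: quot_carr)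
  have inQ: "\<And>x. x \<in> carr M \<Longrightarrow> ?q x \<in> carr ?Q" by (simp add: quot_carr)
  show ?thesis unfolding is_rmod_def
  proof (intro conjI ballI allI)
    show "mzero ?Q \<in> carr ?Q" by (simp add: quot_carr quot_zero M)
  next
    fix X Y assume X: "X \<in> carr ?Q" and Y: "Y \<in> carr ?Q"
    obtain x where x: "x \<in> carr M" "X = ?q x" using ex[OF X] by auto
    obtain y where y: "y \<in> carr M" "Y = ?q y" using ex[OF Y] by auto
    note xy = x(1) y(1) x(2) y(2)
    show "madd ?Q X Y \<in> carr ?Q" using xy by (simp add: quot_add inQ M)
    show "madd ?Q X Y = madd ?Q Y X" using xy by (simp add: quot_add rm_comm[OF M xy(1,2)])
  next
    fix X Y Z assume X: "X \<in> carr ?Q" and Y: "Y \<in> carr ?Q" and Z: "Z \<in> carr ?Q"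
    obtain x where x: "x \<in> carr M" "X = ?q x" using ex[OF X] by auto
    obtain y where y: "y \<in> carr M" "Y = ?q y" using ex[OF Y] by auto
    obtain z where z: "z \<in> carr M" "Z = ?q z" using ex[OF Z] by auto
    note xyz = x(1) y(1) z(1) x(2) y(2) z(2)
    show "madd ?Q (madd ?Q X Y) Z = madd ?Q X (madd ?Q Y Z)"
      using xyz by (simp add: quot_add M rm_assoc[OF M xyz(1,2,3)])
  next
    fix X assume X: "X \<in> carr ?Q"
    obtain x where x: "x \<in> carr M" "X = ?q x" using ex[OF X] by auto
    show "madd ?Q (mzero ?Q) X = X" using x by (simp add: quot_zero quot_add M)
    show "\<exists>Y\<in>carr ?Q. madd ?Q X Y = mzero ?Q"
      using x by (intro bexI[of _ "?q (mneg M x)"]) (simp_all add: quot_add quot_zero inQ M)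
    show "msmul ?Q 1 X = X" using x by (simp add: quot_smul M)
  next
    fix a X assume X: "X \<in> carr ?Q"
    obtain x where x: "x \<in> carr M" "X = ?q x" using ex[OF X] by auto
    show "msmul ?Q a X \<in> carr ?Q" using x by (simp add: quot_smul inQ M)
  next
    fix a X Y assume X: "X \<in> carr ?Q" and Y: "Y \<in> carr ?Q"
    obtain x where x: "x \<in> carr M" "X = ?q x" using ex[OF X] by auto
    obtain y where y: "y \<in> carr M" "Y = ?q y" using ex[OF Y] by auto
    note xy = x(1) y(1) x(2) y(2)
    from xy show "msmul ?Q a (madd ?Q X Y) = madd ?Q (msmul ?Q a X) (msmul ?Q a Y)"
      by (simp add: quot_add quot_smul M rm_smul_add)
  next
    fix a b X assume X: "X \<in> carr ?Q"
    obtain x where x: "x \<in> carr M" "X = ?q x" using ex[OF X] by auto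
    from x show "msmul ?Q (a + b) X = madd ?Q (msmul ?Q a X) (msmul ?Q b X)"
      by (simp add: quot_add quot_smul M rm_add_smul)
    show "msmul ?Q (a * b) X = msmul ?Q a (msmul ?Q b X)"
      using x by (simp add: quot_smul M rm_smul_smul)
  qed
qed

end

lemma submod_sub: "submod M N \<Longrightarrow> N \<subseteq> S \<Longrightarrow> submod (sub_rmod M S) N"
  by (auto simp: submod_def sub_rmod_def)

lemma sub_rmod_simps[simp]: "carr (sub_rmod M S) = S" "madd (sub_rmod M S) = madd M"
  "mzero (sub_rmod M S) = mzero M" "msmul (sub_rmod M S) = msmul M"
  by (auto simp: sub_rmod_def)

lemma mneg_sub[simp]: "mneg (sub_rmod M S) = mneg M" by (simp add: mneg_def fun_eq_iff)

lemma qcls_sub_rmod[simp]: "qcls (sub_rmod M S) N = qcls M N" by (simp add: qcls_def fun_eq_iff)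


lemma homD: assumes "rmod_hom M N f"
  shows "x \<in> carr M \<Longrightarrow> f x \<in> carr N"
    "x \<in> carr M \<Longrightarrow> y \<in> carr M \<Longrightarrow> f (madd M x y) = madd N (f x) (f y)"
    "x \<in> carr M \<Longrightarrow> f (msmul M a x) = msmul N a (f x)"
  using assms by (auto simp: rmod_hom_def)

lemma hom_zero: assumes M: "is_rmod M" and N: "is_rmod N" and f: "rmod_hom M N f"
  shows "f (mzero M) = mzero N"
proof -
  have fz: "f (mzero M) \<in> carr N" using homD(1)[OF f] M by simp
  have "madd N (f (mzero M)) (f (mzero M)) = f (madd M (mzero M) (mzero M))"
    using homD(2)[OF f, of "mzero M" "mzero M"] M by simp
  also have "\<dots> = madd N (f (mzero M)) (mzero N)" using M N fz by simp
  finally have e: "madd N (f (mzero M)) (f (mzero M)) = madd N (f (mzero M)) (mzero N)" .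
  show ?thesis using rm_cancel[OF N fz fz _ e] N by simp
qed

lemma hom_neg: "rmod_hom M N f \<Longrightarrow> x \<in> carr M \<Longrightarrow> f (mneg M x) = mneg N (f x)"
  by (simp add: mneg_def homD)

lemma hom_comp: assumes f: "rmod_hom M N f" and g: "rmod_hom N P g" shows "rmod_hom M P (\<lambda>x. g (f x))"
  unfolding rmod_hom_def using homD[OF f] homD[OF g] by auto

lemma hom_diff: "is_rmod M \<Longrightarrow> rmod_hom M N f \<Longrightarrow> x \<in> carr M \<Longrightarrow> y \<in> carr M \<Longrightarrow>
   f (madd M x (mneg M y)) = madd N (f x) (mneg N (f y))"
  by (simp add: homD hom_neg)

lemma submod_carr: "is_rmod M \<Longrightarrow> submod M (carr M)"
  by (simp add: submod_def)

lemma submod_image: assumes M: "is_rmod M" and N: "is_rmod N" and f: "rmod_hom M N f" and S: "submod M S"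
  shows "submod N (f ` S)"
proof -
  have Sc: "S \<subseteq> carr M" using submodD(1)[OF S] .
  show ?thesis unfolding submod_def
  proof (intro conjI ballI allI)
    show "f ` S \<subseteq> carr N" using Sc homD(1)[OF f] by auto
    show "mzero N \<in> f ` S" using hom_zero[OF M N f] submodD(2)[OF S] by (metis image_eqI)
  next
    fix u v assume "u \<in> f ` S" "v \<in> f ` S"
    then obtain x y where "x \<in> S" "y \<in> S" "u = f x" "v = f y" by auto
    then show "madd N u v \<in> f ` S" using homD(2)[OF f, of x y] Sc submodD(3)[OF S] by (metis image_eqI subsetD)
  next
    fix a u assume "u \<in> f ` S"
    then obtain x where "x \<in> S" "u = f x" by auto
    then show "msmul N a u \<in> f ` S" using homD(3)[OF f, of x a] Sc submodD(4)[OF S] by (metis image_eqI subsetD)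
  qed
qed

lemma submod_kernel: assumes M: "is_rmod M" and N: "is_rmod N" and f: "rmod_hom M N f"
  shows "submod M {x \<in> carr M. f x = mzero N}"
  unfolding submod_def using hom_zero[OF M N f] homD[OF f] M N by auto

lemma submod_int: "submod M U \<Longrightarrow> submod M V \<Longrightarrow> submod M (U \<inter> V)"
  by (auto simp: submod_def)

lemma submod_sset: assumes M: "is_rmod M" and U: "submod M U" and V: "submod M V"
  shows "submod M (sset M U V)"
proof -
  have Uc: "U \<subseteq> carr M" and Vc: "V \<subseteq> carr M" using submodD(1) U V by auto
  show ?thesis unfolding submod_def
  proof (intro conjI ballI allI)
    show "sset M U V \<subseteq> carr M" using Uc Vc by (auto simp: sset_def intro!: rm_add[OF M])
    show "mzero M \<in> sset M U V" unfolding sset_def using submodD(2)[OF U] submodD(2)[OF V] M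
      by (intro CollectI exI[of _ "mzero M"]) simp
  next
    fix x y assume "x \<in> sset M U V" "y \<in> sset M U V"
    then obtain u v u' v' where uv: "u \<in> U" "v \<in> V" "u' \<in> U" "v' \<in> V" "x = madd M u v" "y = madd M u' v'"
      unfolding sset_def by auto
    have "madd M x y = madd M (madd M u u') (madd M v v')"
      using uv Uc Vc rm_add4[OF M, of u v u' v'] by auto
    then show "madd M x y \<in> sset M U V" unfolding sset_def
      using uv submodD(3)[OF U] submodD(3)[OF V] by blast
  next
    fix a x assume "x \<in> sset M U V"
    then obtain u v where uv: "u \<in> U" "v \<in> V" "x = madd M u v" unfolding sset_def by auto
    have uc: "u \<in> carr M" "v \<in> carr M" using uv Uc Vc by auto
    have "msmul M a x = madd M (msmul M a u) (msmul M a v)" using uv(3) rm_smul_add[OF M uc] by simp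
    then show "msmul M a x \<in> sset M U V" unfolding sset_def
      using uv submodD(4)[OF U] submodD(4)[OF V] by blast
  qed
qed

lemma prod_simps[simp]: "carr (prod_rmod Ms) = {x. \<forall>i. x i \<in> carr (Ms i)}"
  "madd (prod_rmod Ms) = (\<lambda>x y i. madd (Ms i) (x i) (y i))"
  "mzero (prod_rmod Ms) = (\<lambda>i. mzero (Ms i))"
  "msmul (prod_rmod Ms) = (\<lambda>a x i. msmul (Ms i) a (x i))"
  by (simp_all add: prod_rmod_def)

lemma prod_mneg: "mneg (prod_rmod Ms) x = (\<lambda>i. mneg (Ms i) (x i))"
  by (simp add: mneg_def)

lemma prod_rmod: assumes Ms: "\<And>i. is_rmod (Ms i)" shows "is_rmod (prod_rmod Ms)"
  unfolding is_rmod_def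
proof (intro conjI ballI allI)
  let ?P = "prod_rmod Ms"
  show "mzero ?P \<in> carr ?P" using Ms by simp
  fix x assume x: "x \<in> carr ?P"
  then have xi: "\<And>i. x i \<in> carr (Ms i)" by simp
  show "madd ?P (mzero ?P) x = x" using xi Ms by (simp add: fun_eq_iff)
  show "\<exists>y\<in>carr ?P. madd ?P x y = mzero ?P"
    using xi Ms by (intro bexI[of _ "\<lambda>i. mneg (Ms i) (x i)"]) (simp_all add: fun_eq_iff)
  show "msmul ?P 1 x = x" using xi Ms by (simp add: fun_eq_iff)
  fix a b show "msmul ?P (a + b) x = madd ?P (msmul ?P a x) (msmul ?P b x)"
    using xi Ms by (simp add: fun_eq_iff rm_add_smul)
  show "msmul ?P (a * b) x = msmul ?P a (msmul ?P b x)"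
    using xi Ms by (simp add: fun_eq_iff rm_smul_smul)
next
  let ?P = "prod_rmod Ms"
  fix a x assume x: "x \<in> carr ?P"
  then show "msmul ?P a x \<in> carr ?P" using Ms by simp
next
  let ?P = "prod_rmod Ms"
  fix x y assume x: "x \<in> carr ?P" and y: "y \<in> carr ?P"
  then have xi: "\<And>i. x i \<in> carr (Ms i)" and yi: "\<And>i. y i \<in> carr (Ms i)" by simp_all
  show "madd ?P x y \<in> carr ?P" using xi yi Ms by simp
  show "madd ?P x y = madd ?P y x" by (simp add: fun_eq_iff rm_comm[OF Ms xi yi])
  fix a show "msmul ?P a (madd ?P x y) = madd ?P (msmul ?P a x) (msmul ?P a y)"
    using xi yi Ms by (simp add: fun_eq_iff rm_smul_add)
next
  let ?P = "prod_rmod Ms"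
  fix x y z assume x: "x \<in> carr ?P" and y: "y \<in> carr ?P" and z: "z \<in> carr ?P"
  then have xi: "\<And>i. x i \<in> carr (Ms i)" and yi: "\<And>i. y i \<in> carr (Ms i)" and zi: "\<And>i. z i \<in> carr (Ms i)" by simp_all
  show "madd ?P (madd ?P x y) z = madd ?P x (madd ?P y z)" by (simp add: fun_eq_iff rm_assoc[OF Ms xi yi zi])
qed


locale DC =
  fixes A :: "int \<Rightarrow> int \<Rightarrow> ('r::ring_1, 'm) rmod" and d1 d2 :: "int \<Rightarrow> int \<Rightarrow> 'm \<Rightarrow> 'm"
  assumes dc: "double_complex A d1 d2" and cex: "columns_exact A d1"
begin

lemma Am[simp]: "is_rmod (A i r)" using dc by (simp add: double_complex_def)
lemma h1: "rmod_hom (A i r) (A (i+1) r) (d1 i r)" using dc by (simp add: double_complex_def)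
lemma h2: "rmod_hom (A i r) (A i (r+1)) (d2 i r)" using dc by (simp add: double_complex_def)
lemma h1': "rmod_hom (A (i - 1) r) (A i r) (d1 (i - 1) r)" using h1[of "i - 1" r] by simp
lemma h2': "rmod_hom (A i (r - 1)) (A i r) (d2 i (r - 1))" using h2[of i "r - 1"] by simp

lemma d1_in[simp]: "x \<in> carr (A i r) \<Longrightarrow> d1 i r x \<in> carr (A (i+1) r)" using homD(1)[OF h1] .
lemma d2_in[simp]: "x \<in> carr (A i r) \<Longrightarrow> d2 i r x \<in> carr (A i (r+1))" using homD(1)[OF h2] .
lemma d1_in'[simp]: "x \<in> carr (A (i - 1) r) \<Longrightarrow> d1 (i - 1) r x \<in> carr (A i r)" using homD(1)[OF h1'] .
lemma d2_in'[simp]: "x \<in> carr (A i (r - 1)) \<Longrightarrow> d2 i (r - 1) x \<in> carr (A i r)" using homD(1)[OF h2'] .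
lemma d1_inj: "x \<in> carr (A i r) \<Longrightarrow> j = i + 1 \<Longrightarrow> d1 i r x \<in> carr (A j r)" by simp
lemma d2_inj: "x \<in> carr (A i r) \<Longrightarrow> s = r + 1 \<Longrightarrow> d2 i r x \<in> carr (A i s)" by simp

lemma d1_add: "x \<in> carr (A i r) \<Longrightarrow> y \<in> carr (A i r) \<Longrightarrow> d1 i r (madd (A i r) x y) = madd (A (i+1) r) (d1 i r x) (d1 i r y)"
  using homD(2)[OF h1] .
lemma d2_add: "x \<in> carr (A i r) \<Longrightarrow> y \<in> carr (A i r) \<Longrightarrow> d2 i r (madd (A i r) x y) = madd (A i (r+1)) (d2 i r x) (d2 i r y)"
  using homD(2)[OF h2] .
lemma d1_smul: "x \<in> carr (A i r) \<Longrightarrow> d1 i r (msmul (A i r) a x) = msmul (A (i+1) r) a (d1 i r x)"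
  using homD(3)[OF h1] .
lemma d2_smul: "x \<in> carr (A i r) \<Longrightarrow> d2 i r (msmul (A i r) a x) = msmul (A i (r+1)) a (d2 i r x)"
  using homD(3)[OF h2] .
lemma d1_zero[simp]: "d1 i r (mzero (A i r)) = mzero (A (i+1) r)" using hom_zero[OF Am Am h1] .
lemma d2_zero[simp]: "d2 i r (mzero (A i r)) = mzero (A i (r+1))" using hom_zero[OF Am Am h2] .
lemma d1_neg: "x \<in> carr (A i r) \<Longrightarrow> d1 i r (mneg (A i r) x) = mneg (A (i+1) r) (d1 i r x)" using hom_neg[OF h1] .
lemma d2_neg: "x \<in> carr (A i r) \<Longrightarrow> d2 i r (mneg (A i r) x) = mneg (A i (r+1)) (d2 i r x)" using hom_neg[OF h2] .

lemma d11: "x \<in> carr (A i r) \<Longrightarrow> d1 (i + 1) r (d1 i r x) = mzero (A (i + 2) r)"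
  using dc by (simp add: double_complex_def)
lemma d22: "x \<in> carr (A i r) \<Longrightarrow> d2 i (r + 1) (d2 i r x) = mzero (A i (r + 2))"
  using dc by (simp add: double_complex_def)
lemma d12: "x \<in> carr (A i r) \<Longrightarrow> d1 i (r + 1) (d2 i r x) = d2 (i + 1) r (d1 i r x)"
  using dc by (simp add: double_complex_def)

lemma d11': "x \<in> carr (A (i - 1) r) \<Longrightarrow> d1 i r (d1 (i - 1) r x) = mzero (A (i + 1) r)"
proof -
  assume x: "x \<in> carr (A (i - 1) r)"
  have e: "i - 1 + 2 = i + 1" by simp
  show ?thesis using d11[OF x] e by simp
qed
lemma d22': "x \<in> carr (A i (r - 1)) \<Longrightarrow> d2 i r (d2 i (r - 1) x) = mzero (A i (r + 1))"
proof -
  assume x: "x \<in> carr (A i (r - 1))"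
  have e: "r - 1 + 2 = r + 1" by simp
  show ?thesis using d22[OF x] e by simp
qed
lemma d12': "x \<in> carr (A (i - 1) r) \<Longrightarrow> d2 i r (d1 (i - 1) r x) = d1 (i - 1) (r + 1) (d2 (i - 1) r x)"
  using d12[of x "i - 1" r] by simp
lemma d12'': "x \<in> carr (A i (r - 1)) \<Longrightarrow> d1 i r (d2 i (r - 1) x) = d2 (i + 1) (r - 1) (d1 i (r - 1) x)"
  using d12[of x i "r - 1"] by simp

lemma exact: "x \<in> carr (A i r) \<Longrightarrow> d1 i r x = mzero (A (i + 1) r) \<Longrightarrow> \<exists>y\<in>carr (A (i - 1) r). x = d1 (i - 1) r y"
  using cex unfolding columns_exact_def by blast

lemma exact': "x \<in> carr (A (i + 1) r) \<Longrightarrow> d1 (i + 1) r x = mzero (A (i + 2) r) \<Longrightarrow> \<exists>y\<in>carr (A i r). x = d1 i r y"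
proof -
  assume "x \<in> carr (A (i + 1) r)" "d1 (i + 1) r x = mzero (A (i + 2) r)"
  then have "\<exists>y\<in>carr (A (i + 1 - 1) r). x = d1 (i + 1 - 1) r y"
    using exact[of x "i + 1" r] by (simp add: add.assoc)
  then show ?thesis by simp
qed

definition SD where "SD i r = {x \<in> carr (A i r). d1 i (r+1) (d2 i r x) = mzero (A (i+1) (r+1))}"
definition ND where "ND i r = sset (A i r) (d1 (i-1) r ` carr (A (i-1) r)) (d2 i (r-1) ` carr (A i (r-1)))"
definition SR where "SR i r = {x \<in> carr (A i r). d2 i r x = mzero (A i (r + 1)) \<and> d1 i r x = mzero (A (i + 1) r)}"
abbreviation NR where "NR i r \<equiv> recden A d1 d2 i r"

lemma donor_eq: "donor A d1 d2 i r = quot_rmod (sub_rmod (A i r) (SD i r)) (ND i r)"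
  by (simp add: donor_def SD_def ND_def)
lemma receptor_eq: "receptor A d1 d2 i r = quot_rmod (sub_rmod (A i r) (SR i r)) (NR i r)"
  by (simp add: receptor_def SR_def)

lemma ND_mem: "x \<in> ND i r \<longleftrightarrow> (\<exists>a\<in>carr (A (i - 1) r). \<exists>b\<in>carr (A i (r - 1)). x = madd (A i r) (d1 (i - 1) r a) (d2 i (r - 1) b))"
  unfolding ND_def sset_def by blast

lemma NR_mem: "x \<in> NR i r \<longleftrightarrow> (\<exists>c\<in>carr (A (i - 1) (r - 1)). x = d1 (i - 1) r (d2 (i - 1) (r - 1) c))"
  unfolding recden_def by blast

lemma hdd: "rmod_hom (A i r) (A (i+1) (r+1)) (\<lambda>x. d1 i (r+1) (d2 i r x))"
  using hom_comp[OF h2 h1] .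

lemma hdd': "rmod_hom (A (i - 1) (r - 1)) (A i r) (\<lambda>x. d1 (i - 1) r (d2 (i - 1) (r - 1) x))"
  using hdd[of "i - 1" "r - 1"] by simp

lemma SD_sub: "submod (A i r) (SD i r)"
  unfolding SD_def using submod_kernel[OF Am Am hdd] .

lemma ND_sub: "submod (A i r) (ND i r)"
  unfolding ND_def
  by (rule submod_sset[OF Am submod_image[OF Am Am h1' submod_carr[OF Am]] submod_image[OF Am Am h2' submod_carr[OF Am]]])

lemma SR_sub: "submod (A i r) (SR i r)"
proof -
  have "SR i r = {x \<in> carr (A i r). d2 i r x = mzero (A i (r + 1))} \<inter> {x \<in> carr (A i r). d1 i r x = mzero (A (i + 1) r)}"
    unfolding SR_def by auto
  then show ?thesis using submod_int[OF submod_kernel[OF Am Am h2] submod_kernel[OF Am Am h1]] by simp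
qed

lemma NR_sub: "submod (A i r) (NR i r)"
  unfolding recden_def using submod_image[OF Am Am hdd' submod_carr[OF Am]] .

lemma ND_SD: "ND i r \<subseteq> SD i r"
proof
  fix x assume "x \<in> ND i r"
  then obtain a b where ab: "a \<in> carr (A (i - 1) r)" "b \<in> carr (A i (r - 1))"
    "x = madd (A i r) (d1 (i - 1) r a) (d2 i (r - 1) b)" unfolding ND_mem by blast
  have "d2 i r x = madd (A i (r+1)) (d2 i r (d1 (i - 1) r a)) (d2 i r (d2 i (r - 1) b))"
    using ab by (simp add: d2_add)
  also have "\<dots> = d1 (i - 1) (r + 1) (d2 (i - 1) r a)" using ab by (simp add: d12' d22')
  finally have "d1 i (r + 1) (d2 i r x) = mzero (A (i + 1) (r + 1))" using ab by (simp add: d11')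
  moreover have "x \<in> carr (A i r)" using ab by simp
  ultimately show "x \<in> SD i r" unfolding SD_def by simp
qed

lemma NR_SR: "NR i r \<subseteq> SR i r"
proof
  fix x assume "x \<in> NR i r"
  then obtain c where c: "c \<in> carr (A (i - 1) (r - 1))" "x = d1 (i - 1) r (d2 (i - 1) (r - 1) c)"
    unfolding NR_mem by blast
  have dc: "d2 (i - 1) (r - 1) c \<in> carr (A (i - 1) r)" using c by simp
  have "d2 i r x = d1 (i - 1) (r + 1) (d2 (i - 1) r (d2 (i - 1) (r - 1) c))" using c dc by (simp add: d12')
  also have "\<dots> = mzero (A i (r + 1))" using c by (simp add: d22')
  finally have 1: "d2 i r x = mzero (A i (r + 1))" .
  have 2: "d1 i r x = mzero (A (i + 1) r)" using c dc by (simp add: d11')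
  show "x \<in> SR i r" using 1 2 c dc unfolding SR_def by simp
qed

lemma SDc: "SD i r \<subseteq> carr (A i r)" unfolding SD_def by auto
lemma SRc: "SR i r \<subseteq> carr (A i r)" unfolding SR_def by auto

lemma subSD: "is_rmod (sub_rmod (A i r) (SD i r))" using submod_rmod[OF Am SD_sub] .
lemma subSR: "is_rmod (sub_rmod (A i r) (SR i r))" using submod_rmod[OF Am SR_sub] .
lemma NDsub: "submod (sub_rmod (A i r) (SD i r)) (ND i r)" using submod_sub[OF ND_sub ND_SD] .
lemma NRsub: "submod (sub_rmod (A i r) (SR i r)) (NR i r)" using submod_sub[OF NR_sub NR_SR] .

lemma don_mod: "is_rmod (donor A d1 d2 i r)" unfolding donor_eq using quot_rmod[OF subSD NDsub] .
lemma rec_mod: "is_rmod (receptor A d1 d2 i r)" unfolding receptor_eq using quot_rmod[OF subSR NRsub] .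

abbreviation dq where "dq i r \<equiv> qcls (A i r) (ND i r)"
abbreviation rq where "rq i r \<equiv> qcls (A i r) (NR i r)"

lemma don_carr: "carr (donor A d1 d2 i r) = dq i r ` SD i r"
  unfolding donor_eq using quot_carr[OF subSD NDsub] by simp
lemma rec_carr: "carr (receptor A d1 d2 i r) = rq i r ` SR i r"
  unfolding receptor_eq using quot_carr[OF subSR NRsub] by simp
lemma don_zero: "mzero (donor A d1 d2 i r) = dq i r (mzero (A i r))"
  unfolding donor_eq using quot_zero[OF subSD NDsub] by simp
lemma rec_zero: "mzero (receptor A d1 d2 i r) = rq i r (mzero (A i r))"
  unfolding receptor_eq using quot_zero[OF subSR NRsub] by simp
lemma don_add: "x \<in> SD i r \<Longrightarrow> y \<in> SD i r \<Longrightarrow> madd (donor A d1 d2 i r) (dq i r x) (dq i r y) = dq i r (madd (A i r) x y)"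
  unfolding donor_eq using quot_add[OF subSD NDsub] by simp
lemma rec_add: "x \<in> SR i r \<Longrightarrow> y \<in> SR i r \<Longrightarrow> madd (receptor A d1 d2 i r) (rq i r x) (rq i r y) = rq i r (madd (A i r) x y)"
  unfolding receptor_eq using quot_add[OF subSR NRsub] by simp
lemma don_smul: "x \<in> SD i r \<Longrightarrow> msmul (donor A d1 d2 i r) a (dq i r x) = dq i r (msmul (A i r) a x)"
  unfolding donor_eq using quot_smul[OF subSD NDsub] by simp
lemma rec_smul: "x \<in> SR i r \<Longrightarrow> msmul (receptor A d1 d2 i r) a (rq i r x) = rq i r (msmul (A i r) a x)"
  unfolding receptor_eq using quot_smul[OF subSR NRsub] by simp
lemma don_eq: "x \<in> SD i r \<Longrightarrow> y \<in> SD i r \<Longrightarrow> dq i r x = dq i r y \<longleftrightarrow> madd (A i r) x (mneg (A i r) y) \<in> ND i r"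
  using qcls_eq_iff[OF subSD NDsub] by simp
lemma rec_eq: "x \<in> SR i r \<Longrightarrow> y \<in> SR i r \<Longrightarrow> rq i r x = rq i r y \<longleftrightarrow> madd (A i r) x (mneg (A i r) y) \<in> NR i r"
  using qcls_eq_iff[OF subSR NRsub] by simp
lemma don_some: "x \<in> SD i r \<Longrightarrow> (SOME y. y \<in> dq i r x) \<in> SD i r \<and> madd (A i r) (SOME y. y \<in> dq i r x) (mneg (A i r) x) \<in> ND i r"
  using qcls_some(1)[OF subSD NDsub] qcls_some_diff[OF subSD NDsub] by simp
lemma rec_some: "x \<in> SR i r \<Longrightarrow> (SOME y. y \<in> rq i r x) \<in> SR i r \<and> madd (A i r) (SOME y. y \<in> rq i r x) (mneg (A i r) x) \<in> NR i r"
  using qcls_some(1)[OF subSR NRsub] qcls_some_diff[OF subSR NRsub] by simp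
lemma don_rep: "X \<in> carr (donor A d1 d2 i r) \<Longrightarrow> (SOME x. x \<in> X) \<in> SD i r \<and> dq i r (SOME x. x \<in> X) = X"
  unfolding donor_eq using quot_rep[OF subSD NDsub] by simp
lemma rec_rep: "X \<in> carr (receptor A d1 d2 i r) \<Longrightarrow> (SOME x. x \<in> X) \<in> SR i r \<and> rq i r (SOME x. x \<in> X) = X"
  unfolding receptor_eq using quot_rep[OF subSR NRsub] by simp
lemma don_in: "x \<in> SD i r \<Longrightarrow> dq i r x \<in> carr (donor A d1 d2 i r)" by (simp add: don_carr)
lemma rec_in: "x \<in> SR i r \<Longrightarrow> rq i r x \<in> carr (receptor A d1 d2 i r)" by (simp add: rec_carr)
lemma don_eqI: "x \<in> SD i r \<Longrightarrow> y \<in> SD i r \<Longrightarrow> madd (A i r) x (mneg (A i r) y) \<in> ND i r \<Longrightarrow> dq i r x = dq i r y"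
  using don_eq by blast
lemma rec_eqI: "x \<in> SR i r \<Longrightarrow> y \<in> SR i r \<Longrightarrow> madd (A i r) x (mneg (A i r) y) \<in> NR i r \<Longrightarrow> rq i r x = rq i r y"
  using rec_eq by blast

end

lemma two_plus[simp]: "2 + (i::int) = i + 2" by simp

context DC begin

lemma d1_SR: "x \<in> SD i r \<Longrightarrow> d1 i r x \<in> SR (i + 1) r"
  unfolding SR_def SD_def by (auto simp: d12[symmetric] d11)

lemma d2_SR: "x \<in> SD i r \<Longrightarrow> d2 i r x \<in> SR i (r + 1)"
  unfolding SR_def SD_def by (auto simp: d22)

lemma ext_v_q: assumes x: "x \<in> SD i r"
  shows "ext_v A d1 d2 i r (dq i r x) = rq (i + 1) r (d1 i r x)"
proof -
  let ?y = "SOME y. y \<in> dq i r x"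
  have y: "?y \<in> SD i r" and m: "madd (A i r) ?y (mneg (A i r) x) \<in> ND i r" using don_some[OF x] by auto
  obtain a b where ab: "a \<in> carr (A (i - 1) r)" "b \<in> carr (A i (r - 1))"
    "madd (A i r) ?y (mneg (A i r) x) = madd (A i r) (d1 (i - 1) r a) (d2 i (r - 1) b)"
    using m unfolding ND_mem by blast
  have xc: "x \<in> carr (A i r)" and yc: "?y \<in> carr (A i r)" using x y SDc by auto
  have "madd (A (i+1) r) (d1 i r ?y) (mneg (A (i+1) r) (d1 i r x)) = d1 i r (madd (A i r) ?y (mneg (A i r) x))"
    using xc yc by (simp add: d1_add d1_neg)
  also have "\<dots> = d1 i r (d2 i (r - 1) b)" using ab by (simp add: d1_add d11')
  finally have "madd (A (i+1) r) (d1 i r ?y) (mneg (A (i+1) r) (d1 i r x)) \<in> NR (i + 1) r"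
    unfolding NR_mem using ab by auto
  then have "rq (i + 1) r (d1 i r ?y) = rq (i + 1) r (d1 i r x)"
    using rec_eqI[OF d1_SR[OF y] d1_SR[OF x]] by blast
  then show ?thesis unfolding ext_v_def by simp
qed

lemma ext_h_q: assumes x: "x \<in> SD i r"
  shows "ext_h A d1 d2 i r (dq i r x) = rq i (r + 1) (d2 i r x)"
proof -
  let ?y = "SOME y. y \<in> dq i r x"
  have y: "?y \<in> SD i r" and m: "madd (A i r) ?y (mneg (A i r) x) \<in> ND i r" using don_some[OF x] by auto
  obtain a b where ab: "a \<in> carr (A (i - 1) r)" "b \<in> carr (A i (r - 1))"
    "madd (A i r) ?y (mneg (A i r) x) = madd (A i r) (d1 (i - 1) r a) (d2 i (r - 1) b)"
    using m unfolding ND_mem by blast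
  have xc: "x \<in> carr (A i r)" and yc: "?y \<in> carr (A i r)" using x y SDc by auto
  have "madd (A i (r+1)) (d2 i r ?y) (mneg (A i (r+1)) (d2 i r x)) = d2 i r (madd (A i r) ?y (mneg (A i r) x))"
    using xc yc by (simp add: d2_add d2_neg)
  also have "\<dots> = d1 (i - 1) (r + 1) (d2 (i - 1) r a)" using ab by (simp add: d2_add d22' d12')
  finally have "madd (A i (r+1)) (d2 i r ?y) (mneg (A i (r+1)) (d2 i r x)) \<in> NR i (r + 1)"
    unfolding NR_mem using ab by auto
  then have "rq i (r + 1) (d2 i r ?y) = rq i (r + 1) (d2 i r x)"
    using rec_eqI[OF d2_SR[OF y] d2_SR[OF x]] by blast
  then show ?thesis unfolding ext_h_def by simp
qed

lemma SD_add: "x \<in> SD i r \<Longrightarrow> y \<in> SD i r \<Longrightarrow> madd (A i r) x y \<in> SD i r" using submodD(3)[OF SD_sub] .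
lemma SD_smul: "x \<in> SD i r \<Longrightarrow> msmul (A i r) a x \<in> SD i r" using submodD(4)[OF SD_sub] .
lemma SD_neg: "x \<in> SD i r \<Longrightarrow> mneg (A i r) x \<in> SD i r" using submod_neg[OF SD_sub] .
lemma SD_zero: "mzero (A i r) \<in> SD i r" using submodD(2)[OF SD_sub] .
lemma SR_add: "x \<in> SR i r \<Longrightarrow> y \<in> SR i r \<Longrightarrow> madd (A i r) x y \<in> SR i r" using submodD(3)[OF SR_sub] .
lemma SR_smul: "x \<in> SR i r \<Longrightarrow> msmul (A i r) a x \<in> SR i r" using submodD(4)[OF SR_sub] .
lemma SR_neg: "x \<in> SR i r \<Longrightarrow> mneg (A i r) x \<in> SR i r" using submod_neg[OF SR_sub] .
lemma SR_zero: "mzero (A i r) \<in> SR i r" using submodD(2)[OF SR_sub] .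

lemma ext_v_iso: "rmod_iso (donor A d1 d2 i r) (receptor A d1 d2 (i + 1) r) (ext_v A d1 d2 i r)"
proof -
  let ?D = "donor A d1 d2 i r" let ?R = "receptor A d1 d2 (i + 1) r" let ?f = "ext_v A d1 d2 i r"
  have hom: "rmod_hom ?D ?R ?f" unfolding rmod_hom_def
  proof (intro conjI ballI allI)
    show "?f ` carr ?D \<subseteq> carr ?R"
      by (auto simp: don_carr ext_v_q intro!: rec_in d1_SR)
  next
    fix X Y assume "X \<in> carr ?D" "Y \<in> carr ?D"
    then obtain x y where xy: "x \<in> SD i r" "y \<in> SD i r" "X = dq i r x" "Y = dq i r y" by (auto simp: don_carr)
    have c: "x \<in> carr (A i r)" "y \<in> carr (A i r)" using xy SDc by auto
    show "?f (madd ?D X Y) = madd ?R (?f X) (?f Y)"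
      using xy c by (simp add: don_add ext_v_q SD_add rec_add d1_SR d1_add)
  next
    fix a X assume "X \<in> carr ?D"
    then obtain x where xy: "x \<in> SD i r" "X = dq i r x" by (auto simp: don_carr)
    have c: "x \<in> carr (A i r)" using xy SDc by auto
    show "?f (msmul ?D a X) = msmul ?R a (?f X)"
      using xy c by (simp add: don_smul ext_v_q SD_smul rec_smul d1_SR d1_smul)
  qed
  have inj: "inj_on ?f (carr ?D)"
  proof (rule inj_onI)
    fix X Y assume "X \<in> carr ?D" "Y \<in> carr ?D" and e: "?f X = ?f Y"
    then obtain x y where xy: "x \<in> SD i r" "y \<in> SD i r" "X = dq i r x" "Y = dq i r y" by (auto simp: don_carr)
    have c: "x \<in> carr (A i r)" "y \<in> carr (A i r)" using xy SDc by auto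
    let ?d = "madd (A i r) x (mneg (A i r) y)"
    have dc: "?d \<in> carr (A i r)" using c by simp
    have "rq (i + 1) r (d1 i r x) = rq (i + 1) r (d1 i r y)" using e xy by (simp add: ext_v_q)
    then have "madd (A (i+1) r) (d1 i r x) (mneg (A (i+1) r) (d1 i r y)) \<in> NR (i + 1) r"
      using rec_eq[OF d1_SR[OF xy(1)] d1_SR[OF xy(2)]] by blast
    then obtain cc where cc: "cc \<in> carr (A i (r - 1))" "madd (A (i+1) r) (d1 i r x) (mneg (A (i+1) r) (d1 i r y)) = d1 i r (d2 i (r - 1) cc)"
      unfolding NR_mem by auto
    have ccc: "d2 i (r - 1) cc \<in> carr (A i r)" using cc by simp
    let ?e = "madd (A i r) ?d (mneg (A i r) (d2 i (r - 1) cc))"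
    have ec: "?e \<in> carr (A i r)" using dc ccc by simp
    have "d1 i r ?e = madd (A (i+1) r) (d1 i r ?d) (mneg (A (i+1) r) (d1 i r (d2 i (r - 1) cc)))"
      using dc ccc by (simp add: d1_add d1_neg)
    also have "d1 i r ?d = madd (A (i+1) r) (d1 i r x) (mneg (A (i+1) r) (d1 i r y))" using c by (simp add: d1_add d1_neg)
    finally have "d1 i r ?e = mzero (A (i + 1) r)" using cc ccc by simp
    then obtain aa where aa: "aa \<in> carr (A (i - 1) r)" "?e = d1 (i - 1) r aa" using exact[OF ec] by blast
    have "?d = madd (A i r) ?e (d2 i (r - 1) cc)" using dc ccc by (simp add: rm_diff_add)
    then have "?d \<in> ND i r" unfolding ND_mem using aa cc by auto
    then show "X = Y" using xy don_eqI by auto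
  qed
  have surj: "?f ` carr ?D = carr ?R"
  proof
    show "?f ` carr ?D \<subseteq> carr ?R" using hom unfolding rmod_hom_def by simp
  next
    show "carr ?R \<subseteq> ?f ` carr ?D"
    proof
      fix Y assume "Y \<in> carr ?R"
      then obtain z where z: "z \<in> SR (i + 1) r" "Y = rq (i + 1) r z" by (auto simp: rec_carr)
      have zc: "z \<in> carr (A (i + 1) r)" and z1: "d1 (i + 1) r z = mzero (A (i + 2) r)"
        and z2: "d2 (i + 1) r z = mzero (A (i + 1) (r + 1))" using z unfolding SR_def by auto
      obtain x where x: "x \<in> carr (A i r)" "z = d1 i r x" using exact'[OF zc z1] by blast
      have xs: "x \<in> SD i r" unfolding SD_def using x z2 by (simp add: d12)
      have "Y = ?f (dq i r x)" using z x xs by (simp add: ext_v_q)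
      then show "Y \<in> ?f ` carr ?D" using don_in[OF xs] by blast
    qed
  qed
  show ?thesis unfolding rmod_iso_def bij_betw_def using hom inj surj by blast
qed

end

definition sg :: "int \<Rightarrow> 'r::ring_1" where "sg k = (if even k then 1 else -1)"
lemma pow_sg: "((-1::'r::ring_1) ^ nat \<bar>k\<bar>) = sg k"
proof -
  have "even (nat \<bar>k\<bar>) \<longleftrightarrow> even k" by (simp add: even_nat_iff)
  then show ?thesis by (auto simp: sg_def)
qed
lemma sg_succ: "sg (k + 1) = - (sg k :: 'r::ring_1)" by (simp add: sg_def)
lemma sg_pred: "sg (k - 1) = - (sg k :: 'r::ring_1)" by (simp add: sg_def)
lemma sg_sq: "sg k * sg k = (1 :: 'r::ring_1)" by (simp add: sg_def)
lemma sg_comm: "a * sg k = sg k * (a :: 'r::ring_1)" by (simp add: sg_def)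

lemma rm_sg_sg: "is_rmod M \<Longrightarrow> x \<in> carr M \<Longrightarrow> msmul M (sg k) (msmul M (sg k) x) = x"
  by (simp add: rm_smul_smul sg_sq)
lemma rm_sg_comm: "is_rmod M \<Longrightarrow> x \<in> carr M \<Longrightarrow> msmul M a (msmul M (sg k) x) = msmul M (sg k) (msmul M a x)"
  by (simp add: rm_smul_smul sg_comm)

context DC begin

lemma d1_addg: "x \<in> carr (A i r) \<Longrightarrow> y \<in> carr (A i r) \<Longrightarrow> j = i + 1 \<Longrightarrow> d1 i r (madd (A i r) x y) = madd (A j r) (d1 i r x) (d1 i r y)"
  by (simp add: d1_add)
lemma d2_addg: "x \<in> carr (A i r) \<Longrightarrow> y \<in> carr (A i r) \<Longrightarrow> s = r + 1 \<Longrightarrow> d2 i r (madd (A i r) x y) = madd (A i s) (d2 i r x) (d2 i r y)"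
  by (simp add: d2_add)
lemma d1_smulg: "x \<in> carr (A i r) \<Longrightarrow> j = i + 1 \<Longrightarrow> d1 i r (msmul (A i r) a x) = msmul (A j r) a (d1 i r x)"
  by (simp add: d1_smul)
lemma d2_smulg: "x \<in> carr (A i r) \<Longrightarrow> s = r + 1 \<Longrightarrow> d2 i r (msmul (A i r) a x) = msmul (A i s) a (d2 i r x)"
  by (simp add: d2_smul)
lemma d1_negg: "x \<in> carr (A i r) \<Longrightarrow> j = i + 1 \<Longrightarrow> d1 i r (mneg (A i r) x) = mneg (A j r) (d1 i r x)"
  by (simp add: d1_neg)
lemma d2_negg: "x \<in> carr (A i r) \<Longrightarrow> s = r + 1 \<Longrightarrow> d2 i r (mneg (A i r) x) = mneg (A i s) (d2 i r x)"
  by (simp add: d2_neg)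
lemma d1_zerog: "j = i + 1 \<Longrightarrow> d1 i r (mzero (A i r)) = mzero (A j r)" by simp
lemma d2_zerog: "s = r + 1 \<Longrightarrow> d2 i r (mzero (A i r)) = mzero (A i s)" by simp
lemma d11g: "x \<in> carr (A i r) \<Longrightarrow> j = i + 1 \<Longrightarrow> k = i + 2 \<Longrightarrow> d1 j r (d1 i r x) = mzero (A k r)"
  by (simp add: d11)
lemma d22g: "x \<in> carr (A i r) \<Longrightarrow> s = r + 1 \<Longrightarrow> t = r + 2 \<Longrightarrow> d2 i s (d2 i r x) = mzero (A i t)"
  by (simp add: d22)
lemma d12g: "x \<in> carr (A i r) \<Longrightarrow> j = i + 1 \<Longrightarrow> s = r + 1 \<Longrightarrow> d1 i s (d2 i r x) = d2 j r (d1 i r x)"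
  by (simp add: d12)

lemma A_idx: "r = s \<Longrightarrow> A i r = A i s" by simp

lemma tot_in: "x \<in> carr (tot A m) \<longleftrightarrow> (\<forall>i. x i \<in> carr (A i (m - i)))" by (simp add: tot_def)
lemma tot_ing: "x \<in> carr (tot A m) \<Longrightarrow> r = m - i \<Longrightarrow> x i \<in> carr (A i r)" by (simp add: tot_def)
lemma tot_mod: "is_rmod (tot A m)" unfolding tot_def by (rule prod_rmod) simp
lemma tot_add: "madd (tot A m) x y = (\<lambda>i. madd (A i (m - i)) (x i) (y i))" by (simp add: tot_def)
lemma tot_smul: "msmul (tot A m) a x = (\<lambda>i. msmul (A i (m - i)) a (x i))" by (simp add: tot_def)
lemma tot_zero: "mzero (tot A m) = (\<lambda>i. mzero (A i (m - i)))" by (simp add: tot_def)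
lemma tot_neg: "mneg (tot A m) x = (\<lambda>i. mneg (A i (m - i)) (x i))" by (simp add: tot_def prod_mneg)

lemma totd_g: "b = m - i \<Longrightarrow> c = m - i + 1 \<Longrightarrow>
  totd A d1 d2 m x i = madd (A i c) (d2 i b (x i)) (msmul (A i c) (sg m) (d1 (i - 1) c (x (i - 1))))"
proof -
  assume b: "b = m - i" and c: "c = m - i + 1"
  have e: "m + 1 - i = m - i + 1" by simp
  show ?thesis unfolding totd_def pow_sg e using b c by simp
qed

lemma totd_comp_in: assumes x: "x \<in> carr (tot A m)"
  shows "totd A d1 d2 m x i \<in> carr (A i (m - i + 1))"
proof -
  have xi: "x i \<in> carr (A i (m - i))" using tot_ing[OF x] by simp
  have xp: "x (i - 1) \<in> carr (A (i - 1) (m - i + 1))" using tot_ing[OF x, of "m - i + 1" "i - 1"] by simp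
  show ?thesis using totd_g[of "m - i" m i "m - i + 1" x] xi xp by simp
qed

lemma totd_in: assumes x: "x \<in> carr (tot A m)" shows "totd A d1 d2 m x \<in> carr (tot A (m + 1))"
proof -
  have e: "\<And>i. m + 1 - i = m - i + 1" by simp
  show ?thesis unfolding tot_in e using totd_comp_in[OF x] by simp
qed

lemma totd_hom: "rmod_hom (tot A m) (tot A (m + 1)) (totd A d1 d2 m)"
  unfolding rmod_hom_def
proof (intro conjI ballI allI)
  have e: "\<And>i. m + 1 - i = m - i + 1" by simp
  show "totd A d1 d2 m ` carr (tot A m) \<subseteq> carr (tot A (m + 1))" using totd_in by auto
  fix x y assume x: "x \<in> carr (tot A m)" and y: "y \<in> carr (tot A m)"
  show "totd A d1 d2 m (madd (tot A m) x y) = madd (tot A (m + 1)) (totd A d1 d2 m x) (totd A d1 d2 m y)"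
  proof
    fix i
    let ?M = "A i (m - i + 1)"
    have xi: "x i \<in> carr (A i (m - i))" using tot_ing[OF x] by simp
    have xp: "x (i - 1) \<in> carr (A (i - 1) (m - i + 1))" using tot_ing[OF x, of "m - i + 1" "i - 1"] by simp
    have yi: "y i \<in> carr (A i (m - i))" using tot_ing[OF y] by simp
    have yp: "y (i - 1) \<in> carr (A (i - 1) (m - i + 1))" using tot_ing[OF y, of "m - i + 1" "i - 1"] by simp
    have ep: "m - (i - 1) = m - i + 1" by simp
    have "totd A d1 d2 m (madd (tot A m) x y) i = madd ?M (d2 i (m - i) (madd (A i (m - i)) (x i) (y i)))
        (msmul ?M (sg m) (d1 (i - 1) (m - i + 1) (madd (A (i - 1) (m - i + 1)) (x (i - 1)) (y (i - 1)))))"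
      by (simp add: totd_g[of "m - i" m i "m - i + 1"] tot_add ep)
    also have "\<dots> = madd ?M (madd ?M (d2 i (m - i) (x i)) (d2 i (m - i) (y i)))
        (madd ?M (msmul ?M (sg m) (d1 (i - 1) (m - i + 1) (x (i - 1)))) (msmul ?M (sg m) (d1 (i - 1) (m - i + 1) (y (i - 1)))))"
      using xi xp yi yp by (simp add: d2_addg d1_add rm_smul_add)
    also have "\<dots> = madd ?M (madd ?M (d2 i (m - i) (x i)) (msmul ?M (sg m) (d1 (i - 1) (m - i + 1) (x (i - 1)))))
         (madd ?M (d2 i (m - i) (y i)) (msmul ?M (sg m) (d1 (i - 1) (m - i + 1) (y (i - 1)))))"
      using xi xp yi yp by (simp add: rm_add4)
    also have "\<dots> = madd (tot A (m + 1)) (totd A d1 d2 m x) (totd A d1 d2 m y) i"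
      by (simp add: totd_g[of "m - i" m i "m - i + 1"] tot_add e)
    finally show "totd A d1 d2 m (madd (tot A m) x y) i = madd (tot A (m + 1)) (totd A d1 d2 m x) (totd A d1 d2 m y) i" .
  qed
next
  have e: "\<And>i. m + 1 - i = m - i + 1" by simp
  fix a x assume x: "x \<in> carr (tot A m)"
  show "totd A d1 d2 m (msmul (tot A m) a x) = msmul (tot A (m + 1)) a (totd A d1 d2 m x)"
  proof
    fix i
    let ?M = "A i (m - i + 1)"
    have xi: "x i \<in> carr (A i (m - i))" using tot_ing[OF x] by simp
    have xp: "x (i - 1) \<in> carr (A (i - 1) (m - i + 1))" using tot_ing[OF x, of "m - i + 1" "i - 1"] by simp
    have ep: "m - (i - 1) = m - i + 1" by simp
    have "totd A d1 d2 m (msmul (tot A m) a x) i = madd ?M (d2 i (m - i) (msmul (A i (m - i)) a (x i)))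
        (msmul ?M (sg m) (d1 (i - 1) (m - i + 1) (msmul (A (i - 1) (m - i + 1)) a (x (i - 1)))))"
      by (simp add: totd_g[of "m - i" m i "m - i + 1"] tot_smul ep)
    also have "\<dots> = madd ?M (msmul ?M a (d2 i (m - i) (x i)))
        (msmul ?M a (msmul ?M (sg m) (d1 (i - 1) (m - i + 1) (x (i - 1)))))"
      using xi xp by (simp add: d2_smulg d1_smul rm_sg_comm)
    also have "\<dots> = msmul ?M a (madd ?M (d2 i (m - i) (x i)) (msmul ?M (sg m) (d1 (i - 1) (m - i + 1) (x (i - 1)))))"
      using xi xp by (simp add: rm_smul_add)
    also have "\<dots> = msmul (tot A (m + 1)) a (totd A d1 d2 m x) i"
      by (simp add: totd_g[of "m - i" m i "m - i + 1"] tot_smul e)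
    finally show "totd A d1 d2 m (msmul (tot A m) a x) i = msmul (tot A (m + 1)) a (totd A d1 d2 m x) i" .
  qed
qed

lemma totd_totd: assumes w: "w \<in> carr (tot A (m - 1))"
  shows "totd A d1 d2 m (totd A d1 d2 (m - 1) w) = mzero (tot A (m + 1))"
proof
  fix i
  let ?v = "totd A d1 d2 (m - 1) w"
  let ?M = "A i (m - i + 1)"
  let ?s = "sg m :: 'r"
  have wi: "w i \<in> carr (A i (m - i - 1))" using tot_ing[OF w, of "m - i - 1" i] by simp
  have wp: "w (i - 1) \<in> carr (A (i - 1) (m - i))" using tot_ing[OF w, of "m - i" "i - 1"] by simp
  have wpp: "w (i - 2) \<in> carr (A (i - 2) (m - i + 1))" using tot_ing[OF w, of "m - i + 1" "i - 2"] by simp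
  have vi: "?v i = madd (A i (m - i)) (d2 i (m - i - 1) (w i)) (msmul (A i (m - i)) (- ?s) (d1 (i - 1) (m - i) (w (i - 1))))"
    by (simp add: totd_g[of "m - i - 1" "m - 1" i "m - i" w] sg_pred)
  have vp: "?v (i - 1) = madd (A (i - 1) (m - i + 1)) (d2 (i - 1) (m - i) (w (i - 1)))
      (msmul (A (i - 1) (m - i + 1)) (- ?s) (d1 (i - 2) (m - i + 1) (w (i - 2))))"
  proof -
    have "i - 1 - 1 = i - 2" by simp
    then show ?thesis by (simp add: totd_g[of "m - i" "m - 1" "i - 1" "m - i + 1" w] sg_pred)
  qed
  let ?Y = "d1 (i - 1) (m - i + 1) (d2 (i - 1) (m - i) (w (i - 1)))"
  have Yc: "?Y \<in> carr ?M" using wp by (simp add: d1_inj)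
  have d1wp: "d1 (i - 1) (m - i) (w (i - 1)) \<in> carr (A i (m - i))" using wp by simp
  have d2wi: "d2 i (m - i - 1) (w i) \<in> carr (A i (m - i))" using wi d2_inj by simp
  have d2wp: "d2 (i - 1) (m - i) (w (i - 1)) \<in> carr (A (i - 1) (m - i + 1))" using wp by simp
  have d1wpp: "d1 (i - 2) (m - i + 1) (w (i - 2)) \<in> carr (A (i - 1) (m - i + 1))" by (rule d1_inj[OF wpp]) simp
  have A1: "d2 i (m - i) (?v i) = msmul ?M (- ?s) ?Y"
  proof -
    have "d2 i (m - i) (?v i) = madd ?M (d2 i (m - i) (d2 i (m - i - 1) (w i)))
        (msmul ?M (- ?s) (d2 i (m - i) (d1 (i - 1) (m - i) (w (i - 1)))))"
      using vi d1wp d2wi by (simp add: d2_addg d2_smulg)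
    also have "d2 i (m - i) (d2 i (m - i - 1) (w i)) = mzero ?M" using d22g[OF wi, of "m - i" "m - i + 1"] by simp
    also have "d2 i (m - i) (d1 (i - 1) (m - i) (w (i - 1))) = ?Y" using d12g[OF wp, of i "m - i + 1"] by simp
    finally show ?thesis using Yc by simp
  qed
  have A2: "d1 (i - 1) (m - i + 1) (?v (i - 1)) = ?Y"
  proof -
    have "d1 (i - 1) (m - i + 1) (?v (i - 1)) = madd ?M ?Y (msmul ?M (- ?s) (d1 (i - 1) (m - i + 1) (d1 (i - 2) (m - i + 1) (w (i - 2)))))"
      using vp d2wp d1wpp by (simp add: d1_addg d1_smulg)
    also have "d1 (i - 1) (m - i + 1) (d1 (i - 2) (m - i + 1) (w (i - 2))) = mzero ?M"
      using d11g[OF wpp, of "i - 1" i] by simp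
    finally show ?thesis using Yc by simp
  qed
  have "totd A d1 d2 m ?v i = madd ?M (d2 i (m - i) (?v i)) (msmul ?M ?s (d1 (i - 1) (m - i + 1) (?v (i - 1))))"
    by (rule totd_g) simp_all
  also have "\<dots> = madd ?M (msmul ?M (- ?s) ?Y) (msmul ?M ?s ?Y)" using A1 A2 by simp
  also have "\<dots> = mzero ?M" using Yc by (simp add: rm_smul_sum_zero)
  finally have "totd A d1 d2 m ?v i = mzero ?M" .
  moreover have e: "m + 1 - i = m - i + 1" by simp
  ultimately show "totd A d1 d2 m ?v i = mzero (tot A (m + 1)) i"
    by (simp add: tot_zero A_idx[OF e])
qed

end

context DC begin

lemma cyc_sub: "submod (tot A m) (cycles A d1 d2 m)"
  unfolding cycles_def using submod_kernel[OF tot_mod tot_mod totd_hom] .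

lemma bnd_sub: "submod (tot A m) (boundaries A d1 d2 m)"
  unfolding boundaries_def using submod_image[OF tot_mod tot_mod totd_hom[of "m - 1"] submod_carr[OF tot_mod]] by simp

lemma bnd_cyc: "boundaries A d1 d2 m \<subseteq> cycles A d1 d2 m"
proof
  fix x assume "x \<in> boundaries A d1 d2 m"
  then obtain w where w: "w \<in> carr (tot A (m - 1))" "x = totd A d1 d2 (m - 1) w" unfolding boundaries_def by auto
  have "x \<in> carr (tot A m)" using totd_in[OF w(1)] w(2) by simp
  then show "x \<in> cycles A d1 d2 m" unfolding cycles_def using totd_totd[OF w(1)] w(2) by simp
qed

lemma cycc: "cycles A d1 d2 m \<subseteq> carr (tot A m)" unfolding cycles_def by auto

lemma subC: "is_rmod (sub_rmod (tot A m) (cycles A d1 d2 m))" using submod_rmod[OF tot_mod cyc_sub] .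
lemma Bsub: "submod (sub_rmod (tot A m) (cycles A d1 d2 m)) (boundaries A d1 d2 m)"
  using submod_sub[OF bnd_sub bnd_cyc] .

abbreviation hq where "hq m \<equiv> qcls (tot A m) (boundaries A d1 d2 m)"

lemma Htot_eq: "Htot A d1 d2 m = quot_rmod (sub_rmod (tot A m) (cycles A d1 d2 m)) (boundaries A d1 d2 m)"
  by (simp add: Htot_def)

lemma H_mod: "is_rmod (Htot A d1 d2 m)" unfolding Htot_eq using quot_rmod[OF subC Bsub] .
lemma H_carr: "carr (Htot A d1 d2 m) = hq m ` cycles A d1 d2 m"
  unfolding Htot_eq using quot_carr[OF subC Bsub] by simp
lemma H_zero: "mzero (Htot A d1 d2 m) = hq m (mzero (tot A m))"
  unfolding Htot_eq using quot_zero[OF subC Bsub] by simp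
lemma H_add: "x \<in> cycles A d1 d2 m \<Longrightarrow> y \<in> cycles A d1 d2 m \<Longrightarrow> madd (Htot A d1 d2 m) (hq m x) (hq m y) = hq m (madd (tot A m) x y)"
  unfolding Htot_eq using quot_add[OF subC Bsub] by simp
lemma H_smul: "x \<in> cycles A d1 d2 m \<Longrightarrow> msmul (Htot A d1 d2 m) a (hq m x) = hq m (msmul (tot A m) a x)"
  unfolding Htot_eq using quot_smul[OF subC Bsub] by simp
lemma H_eq: "x \<in> cycles A d1 d2 m \<Longrightarrow> y \<in> cycles A d1 d2 m \<Longrightarrow> hq m x = hq m y \<longleftrightarrow> madd (tot A m) x (mneg (tot A m) y) \<in> boundaries A d1 d2 m"
  using qcls_eq_iff[OF subC Bsub] by simp
lemma H_eqI: "x \<in> cycles A d1 d2 m \<Longrightarrow> y \<in> cycles A d1 d2 m \<Longrightarrow> madd (tot A m) x (mneg (tot A m) y) \<in> boundaries A d1 d2 m \<Longrightarrow> hq m x = hq m y"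
  using H_eq by blast
lemma H_in: "x \<in> cycles A d1 d2 m \<Longrightarrow> hq m x \<in> carr (Htot A d1 d2 m)" by (simp add: H_carr)
lemma H_mem: assumes X: "X \<in> carr (Htot A d1 d2 m)" and x: "x \<in> X"
  shows "x \<in> cycles A d1 d2 m" "X = hq m x"
proof -
  obtain y where y: "y \<in> cycles A d1 d2 m" "X = hq m y" using X by (auto simp: H_carr)
  show "x \<in> cycles A d1 d2 m" using qcls_mem(1)[OF subC Bsub, where x=y and y=x] y x by simp
  show "X = hq m x" using qcls_mem(2)[OF subC Bsub, where x=y and y=x] y x by simp
qed
lemma H_self: "x \<in> cycles A d1 d2 m \<Longrightarrow> x \<in> hq m x"
  using qcls_self[OF subC Bsub] by simp
lemma H_ne: "X \<in> carr (Htot A d1 d2 m) \<Longrightarrow> (SOME x. x \<in> X) \<in> X"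
proof -
  assume "X \<in> carr (Htot A d1 d2 m)"
  then obtain x where "x \<in> cycles A d1 d2 m" "X = hq m x" by (auto simp: H_carr)
  then have "x \<in> X" using H_self by simp
  then show ?thesis by (rule someI[where P="\<lambda>x. x \<in> X"])
qed

lemma hq_add_bnd: assumes z: "z \<in> hq m y" and yc: "y \<in> carr (tot A m)" and b: "b \<in> boundaries A d1 d2 m"
  shows "madd (tot A m) z b \<in> hq m y"
proof -
  obtain u where u: "u \<in> boundaries A d1 d2 m" "z = madd (tot A m) y u" using z unfolding qcls_def by auto
  have uc: "u \<in> carr (tot A m)" and bc: "b \<in> carr (tot A m)" using u b submodD(1)[OF bnd_sub] by auto
  have "madd (tot A m) z b = madd (tot A m) y (madd (tot A m) u b)" using u(2) yc uc bc by (simp add: rm_assoc[OF tot_mod])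
  moreover have "madd (tot A m) u b \<in> boundaries A d1 d2 m" using submodD(3)[OF bnd_sub u(1) b] .
  ultimately show ?thesis unfolding qcls_def by auto
qed

lemma cyc_comp: assumes x: "x \<in> cycles A d1 d2 m"
  shows "madd (A i (m - i + 1)) (d2 i (m - i) (x i)) (msmul (A i (m - i + 1)) (sg m) (d1 (i - 1) (m - i + 1) (x (i - 1)))) = mzero (A i (m - i + 1))"
proof -
  have "totd A d1 d2 m x = mzero (tot A (m + 1))" using x unfolding cycles_def by simp
  then have "totd A d1 d2 m x i = mzero (A i (m + 1 - i))" by (simp add: tot_zero)
  moreover have e: "m + 1 - i = m - i + 1" by simp
  ultimately show ?thesis using totd_g[of "m - i" m i "m - i + 1" x] by (simp add: A_idx[OF e])
qed

lemma cyc_d2: assumes x: "x \<in> cycles A d1 d2 m"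
  shows "d2 i (m - i) (x i) = msmul (A i (m - i + 1)) (- sg m) (d1 (i - 1) (m - i + 1) (x (i - 1)))"
proof -
  have xc: "x \<in> carr (tot A m)" using x cycc by auto
  have xi: "x i \<in> carr (A i (m - i))" using tot_ing[OF xc] by simp
  have xp: "x (i - 1) \<in> carr (A (i - 1) (m - i + 1))" using tot_ing[OF xc, of "m - i + 1" "i - 1"] by simp
  let ?M = "A i (m - i + 1)"
  have a: "d2 i (m - i) (x i) \<in> carr ?M" using xi by simp
  have b: "msmul ?M (sg m) (d1 (i - 1) (m - i + 1) (x (i - 1))) \<in> carr ?M" using xp by simp
  have "madd ?M (msmul ?M (sg m) (d1 (i - 1) (m - i + 1) (x (i - 1)))) (d2 i (m - i) (x i)) = mzero ?M"
    using cyc_comp[OF x, of i] rm_comm[OF Am a b] by simp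
  then have "d2 i (m - i) (x i) = mneg ?M (msmul ?M (sg m) (d1 (i - 1) (m - i + 1) (x (i - 1))))"
    using rm_neg_unique[OF Am b a] by simp
  then show ?thesis using xp by (simp add: rm_neg_smul)
qed

end

locale DCn = DC A d1 d2 for A :: "int \<Rightarrow> int \<Rightarrow> ('r::ring_1, 'm) rmod" and d1 d2 +
  fixes n :: int
begin

abbreviation s where "s \<equiv> (sg n :: 'r)"
definition eps :: "int \<Rightarrow> 'r" where "eps i = sg ((n + 1) * i)"

lemma eps_succ: "eps (i + 1) * (- s) = eps i" by (auto simp: eps_def sg_def algebra_simps)
lemma eps_pred: "eps i = - s * eps (i - 1)" by (auto simp: eps_def sg_def algebra_simps)
lemma eps_sq: "eps i * eps i = 1" by (simp add: eps_def sg_sq)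
lemma eps_comm: "a * eps i = eps i * a" by (simp add: eps_def sg_comm)
lemma eps_sum: "eps i + s * eps (i - 1) = 0" by (auto simp: eps_def sg_def algebra_simps)

lemma rm_eps_eps: "is_rmod M \<Longrightarrow> x \<in> carr M \<Longrightarrow> msmul M (eps i) (msmul M (eps i) x) = x"
  by (simp add: rm_smul_smul eps_sq)
lemma rm_eps_comm: "is_rmod M \<Longrightarrow> x \<in> carr M \<Longrightarrow> msmul M a (msmul M (eps i) x) = msmul M (eps i) (msmul M a x)"
  by (simp add: rm_smul_smul eps_comm)

lemma cyc_SD: assumes x: "x \<in> cycles A d1 d2 m" shows "x i \<in> SD i (m - i)"
proof -
  have xc: "x \<in> carr (tot A m)" using x cycc by auto
  have xi: "x i \<in> carr (A i (m - i))" using tot_ing[OF xc] by simp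
  have xp: "x (i - 1) \<in> carr (A (i - 1) (m - i + 1))" using tot_ing[OF xc, of "m - i + 1" "i - 1"] by simp
  have "d1 i (m - i + 1) (d2 i (m - i) (x i)) = msmul (A (i + 1) (m - i + 1)) (- sg m) (d1 i (m - i + 1) (d1 (i - 1) (m - i + 1) (x (i - 1))))"
    using cyc_d2[OF x, of i] xp by (simp add: d1_smul)
  also have "\<dots> = mzero (A (i + 1) (m - i + 1))" using xp by (simp add: d11')
  finally show ?thesis unfolding SD_def using xi by simp
qed

end

context DC begin

lemma bnd_comp: assumes w: "w \<in> carr (tot A (m - 1))"
  shows "totd A d1 d2 (m - 1) w i = madd (A i (m - i)) (d2 i (m - i - 1) (w i)) (msmul (A i (m - i)) (- sg m) (d1 (i - 1) (m - i) (w (i - 1))))"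
  by (simp add: totd_g[of "m - i - 1" "m - 1" i "m - i" w] sg_pred)

lemma bnd_ND: assumes b: "b \<in> boundaries A d1 d2 m" shows "b i \<in> ND i (m - i)"
proof -
  obtain w where w: "w \<in> carr (tot A (m - 1))" "b = totd A d1 d2 (m - 1) w" using b unfolding boundaries_def by auto
  have wi: "w i \<in> carr (A i (m - i - 1))" using tot_ing[OF w(1), of "m - i - 1" i] by simp
  have wp: "w (i - 1) \<in> carr (A (i - 1) (m - i))" using tot_ing[OF w(1), of "m - i" "i - 1"] by simp
  let ?a = "msmul (A (i - 1) (m - i)) (- sg m) (w (i - 1))"
  have ac: "?a \<in> carr (A (i - 1) (m - i))" using wp by simp
  have "b i = madd (A i (m - i)) (d2 i (m - i - 1) (w i)) (d1 (i - 1) (m - i) ?a)"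
    using w(2) bnd_comp[OF w(1)] wp by (simp add: d1_smul)
  also have "\<dots> = madd (A i (m - i)) (d1 (i - 1) (m - i) ?a) (d2 i (m - i - 1) (w i))"
    using wi ac by (simp add: rm_comm[OF Am])
  finally show ?thesis unfolding ND_mem using ac wi by auto
qed

lemma ext_h_in: "X \<in> carr (donor A d1 d2 i r) \<Longrightarrow> ext_h A d1 d2 i r X \<in> carr (receptor A d1 d2 i (r + 1))"
  by (auto simp: don_carr ext_h_q intro!: rec_in d2_SR)

lemma ext_v_in: "X \<in> carr (donor A d1 d2 i r) \<Longrightarrow> ext_v A d1 d2 i r X \<in> carr (receptor A d1 d2 (i + 1) r)"
  by (auto simp: don_carr ext_v_q intro!: rec_in d1_SR)

lemma ext_v_inj: "inj_on (ext_v A d1 d2 i r) (carr (donor A d1 d2 i r))"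
  using ext_v_iso[of i r] unfolding rmod_iso_def bij_betw_def by simp
lemma ext_v_surj: "ext_v A d1 d2 i r ` carr (donor A d1 d2 i r) = carr (receptor A d1 d2 (i + 1) r)"
  using ext_v_iso[of i r] unfolding rmod_iso_def bij_betw_def by simp

lemma inv_ext_v: "X \<in> carr (donor A d1 d2 i r) \<Longrightarrow> the_inv_into (carr (donor A d1 d2 i r)) (ext_v A d1 d2 i r) (ext_v A d1 d2 i r X) = X"
  by (rule the_inv_into_f_f[OF ext_v_inj])
lemma ext_v_inv: "Y \<in> carr (receptor A d1 d2 (i + 1) r) \<Longrightarrow> ext_v A d1 d2 i r (the_inv_into (carr (donor A d1 d2 i r)) (ext_v A d1 d2 i r) Y) = Y"
  by (rule f_the_inv_into_f[OF ext_v_inj]) (simp add: ext_v_surj)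
lemma inv_ext_v_in: "Y \<in> carr (receptor A d1 d2 (i + 1) r) \<Longrightarrow> the_inv_into (carr (donor A d1 d2 i r)) (ext_v A d1 d2 i r) Y \<in> carr (donor A d1 d2 i r)"
  by (rule the_inv_into_into[OF ext_v_inj]) (simp_all add: ext_v_surj)

end

context DCn begin

lemma nidx: "n - (i + 1) = n - i - 1" by simp
lemma nidx2: "n - i - 1 + 1 = n - i" by simp

abbreviation phi where "phi i \<equiv> (the_inv_into (carr (donor A d1 d2 i (n - i))) (ext_v A d1 d2 i (n - i))
              \<circ> ext_h A d1 d2 (i + 1) (n - i - 1))"

lemma DL_carr: "carr (donor_lim A d1 d2 n) = {Z. (\<forall>i. Z i \<in> carr (donor A d1 d2 i (n - i))) \<and> (\<forall>i. Z i = phi i (Z (i + 1)))}"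
  unfolding donor_lim_def invlim_def by auto
lemma DL_add: "madd (donor_lim A d1 d2 n) Z W = (\<lambda>i. madd (donor A d1 d2 i (n - i)) (Z i) (W i))"
  unfolding donor_lim_def invlim_def by simp
lemma DL_smul: "msmul (donor_lim A d1 d2 n) a Z = (\<lambda>i. msmul (donor A d1 d2 i (n - i)) a (Z i))"
  unfolding donor_lim_def invlim_def by simp
lemma DL_zero: "mzero (donor_lim A d1 d2 n) = (\<lambda>i. mzero (donor A d1 d2 i (n - i)))"
  unfolding donor_lim_def invlim_def by simp

lemma compat_iff: assumes a: "Z i \<in> carr (donor A d1 d2 i (n - i))" and b: "Z (i + 1) \<in> carr (donor A d1 d2 (i + 1) (n - (i + 1)))"
  shows "Z i = phi i (Z (i + 1)) \<longleftrightarrow> ext_v A d1 d2 i (n - i) (Z i) = ext_h A d1 d2 (i + 1) (n - i - 1) (Z (i + 1))"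
proof -
  have hin: "ext_h A d1 d2 (i + 1) (n - i - 1) (Z (i + 1)) \<in> carr (receptor A d1 d2 (i + 1) (n - i))"
    using ext_h_in[of "Z (i + 1)" "i + 1" "n - i - 1"] b unfolding nidx by simp
  show ?thesis
  proof
    assume "Z i = phi i (Z (i + 1))"
    then show "ext_v A d1 d2 i (n - i) (Z i) = ext_h A d1 d2 (i + 1) (n - i - 1) (Z (i + 1))"
      using ext_v_inv[OF hin] by simp
  next
    assume "ext_v A d1 d2 i (n - i) (Z i) = ext_h A d1 d2 (i + 1) (n - i - 1) (Z (i + 1))"
    then show "Z i = phi i (Z (i + 1))" using inv_ext_v[OF a] by simp
  qed
qed

definition gmap where "gmap X = (\<lambda>i. dq i (n - i) (msmul (A i (n - i)) (eps i) ((SOME x. x \<in> X) i)))"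

lemma cyc_tot: "x \<in> cycles A d1 d2 m \<Longrightarrow> x \<in> carr (tot A m)" using cycc by auto
lemma cyc_c: "x \<in> cycles A d1 d2 m \<Longrightarrow> r = m - i \<Longrightarrow> x i \<in> carr (A i r)" by (rule tot_ing[OF cyc_tot])

lemma g_rep: assumes X: "X \<in> carr (Htot A d1 d2 n)" and x: "x \<in> X"
  shows "gmap X = (\<lambda>i. dq i (n - i) (msmul (A i (n - i)) (eps i) (x i)))"
proof
  fix i
  let ?y = "SOME x. x \<in> X"
  have y: "?y \<in> X" using H_ne[OF X] .
  have xc: "x \<in> cycles A d1 d2 n" and Xx: "X = hq n x" using H_mem[OF X x] by auto
  have yc: "?y \<in> cycles A d1 d2 n" and Xy: "X = hq n ?y" using H_mem[OF X y] by auto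
  have "madd (tot A n) ?y (mneg (tot A n) x) \<in> boundaries A d1 d2 n" using H_eq[OF yc xc] Xx Xy by simp
  then have "madd (tot A n) ?y (mneg (tot A n) x) i \<in> ND i (n - i)" by (rule bnd_ND)
  then have d: "madd (A i (n - i)) (?y i) (mneg (A i (n - i)) (x i)) \<in> ND i (n - i)" by (simp add: tot_add tot_neg)
  have xi: "x i \<in> carr (A i (n - i))" and yi: "?y i \<in> carr (A i (n - i))" using cyc_c xc yc by auto
  have "madd (A i (n - i)) (msmul (A i (n - i)) (eps i) (?y i)) (mneg (A i (n - i)) (msmul (A i (n - i)) (eps i) (x i)))
      = msmul (A i (n - i)) (eps i) (madd (A i (n - i)) (?y i) (mneg (A i (n - i)) (x i)))"
    using xi yi by (simp add: rm_smul_add rm_smul_neg)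
  also have "\<dots> \<in> ND i (n - i)" using submodD(4)[OF ND_sub d] .
  finally have "dq i (n - i) (msmul (A i (n - i)) (eps i) (?y i)) = dq i (n - i) (msmul (A i (n - i)) (eps i) (x i))"
    by (rule don_eqI[OF SD_smul[OF cyc_SD[OF yc]] SD_smul[OF cyc_SD[OF xc]]])
  then show "gmap X i = dq i (n - i) (msmul (A i (n - i)) (eps i) (x i))" unfolding gmap_def by simp
qed

lemma g_hq: "x \<in> cycles A d1 d2 n \<Longrightarrow> gmap (hq n x) = (\<lambda>i. dq i (n - i) (msmul (A i (n - i)) (eps i) (x i)))"
proof -
  assume x: "x \<in> cycles A d1 d2 n"
  show ?thesis by (rule g_rep[OF H_in[OF x] H_self[OF x]])
qed

lemma g_in: assumes x: "x \<in> cycles A d1 d2 n" shows "gmap (hq n x) \<in> carr (donor_lim A d1 d2 n)"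
proof -
  let ?Z = "gmap (hq n x)"
  have Zi: "\<And>i. ?Z i \<in> carr (donor A d1 d2 i (n - i))"
    using x by (simp add: g_hq don_in SD_smul cyc_SD)
  have "?Z i = phi i (?Z (i + 1))" for i
  proof -
    have xi: "x i \<in> carr (A i (n - i))" using cyc_c[OF x] by simp
    have xs: "x (i + 1) \<in> SD (i + 1) (n - i - 1)" using cyc_SD[OF x, of "i + 1"] unfolding nidx .
    have xs': "x (i + 1) \<in> carr (A (i + 1) (n - i - 1))" using xs SDc by auto
    have cd: "d2 (i + 1) (n - i - 1) (x (i + 1)) = msmul (A (i + 1) (n - i)) (- s) (d1 i (n - i) (x i))"
      using cyc_d2[OF x, of "i + 1"] unfolding nidx nidx2 by simp
    have "ext_h A d1 d2 (i + 1) (n - i - 1) (?Z (i + 1)) = rq (i + 1) (n - i) (d2 (i + 1) (n - i - 1) (msmul (A (i + 1) (n - i - 1)) (eps (i + 1)) (x (i + 1))))"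
      using x xs by (simp add: g_hq nidx ext_h_q SD_smul)
    also have "\<dots> = rq (i + 1) (n - i) (msmul (A (i + 1) (n - i)) (eps i) (d1 i (n - i) (x i)))"
      using xs' xi eps_succ[of i] by (simp add: d2_smulg cd rm_smul_smul)
    also have "\<dots> = ext_v A d1 d2 i (n - i) (?Z i)"
      using x xi by (simp add: g_hq ext_v_q SD_smul cyc_SD d1_smul)
    finally have "ext_v A d1 d2 i (n - i) (?Z i) = ext_h A d1 d2 (i + 1) (n - i - 1) (?Z (i + 1))" by simp
    then show ?thesis using compat_iff[of ?Z i, OF Zi[of i] Zi[of "i + 1"]] by simp
  qed
  then show ?thesis unfolding DL_carr by (intro CollectI conjI allI Zi)
qed

end

lemma rm_diff_self: "is_rmod M \<Longrightarrow> x \<in> carr M \<Longrightarrow> y \<in> carr M \<Longrightarrow> madd M (madd M x (mneg M y)) (mneg M x) = mneg M y"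
proof -
  assume M: "is_rmod M" and x: "x \<in> carr M" and y: "y \<in> carr M"
  have "madd M (madd M x (mneg M y)) (mneg M x) = madd M x (madd M (mneg M y) (mneg M x))" using M x y by (simp add: rm_assoc)
  also have "\<dots> = madd M x (madd M (mneg M x) (mneg M y))" using M x y rm_comm[of M "mneg M y" "mneg M x"] by simp
  also have "\<dots> = madd M (madd M x (mneg M x)) (mneg M y)" by (rule rm_assoc[OF M x _ _, symmetric]) (simp_all add: M x y)
  also have "\<dots> = mneg M y" using M x y by simp
  finally show ?thesis .
qed

context DC begin

lemma d1_ND: "a \<in> carr (A (i - 1) r) \<Longrightarrow> d1 (i - 1) r a \<in> ND i r"
  unfolding ND_mem by (rule bexI[of _ a], rule bexI[of _ "mzero (A i (r - 1))"]) simp_all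

lemma sub_d1_ND: assumes a: "a \<in> carr (A (i - 1) r)" and x: "x \<in> SD i r"
  shows "dq i r (madd (A i r) x (mneg (A i r) (d1 (i - 1) r a))) = dq i r x"
proof -
  have dn: "d1 (i - 1) r a \<in> ND i r" using d1_ND[OF a] .
  have ds: "d1 (i - 1) r a \<in> SD i r" using dn ND_SD by auto
  have xc: "x \<in> carr (A i r)" using x SDc by auto
  have dc: "d1 (i - 1) r a \<in> carr (A i r)" using a by simp
  show ?thesis
  proof (rule don_eqI)
    show "madd (A i r) x (mneg (A i r) (d1 (i - 1) r a)) \<in> SD i r" using SD_add[OF x SD_neg[OF ds]] .
    show "x \<in> SD i r" by (rule x)
    show "madd (A i r) (madd (A i r) x (mneg (A i r) (d1 (i - 1) r a))) (mneg (A i r) x) \<in> ND i r"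
      using rm_diff_self[OF Am xc dc] submod_neg[OF ND_sub dn] by simp
  qed
qed

end

context DCn begin

lemma cyc_add: "x \<in> cycles A d1 d2 m \<Longrightarrow> y \<in> cycles A d1 d2 m \<Longrightarrow> madd (tot A m) x y \<in> cycles A d1 d2 m"
  using submodD(3)[OF cyc_sub] .
lemma cyc_smul: "x \<in> cycles A d1 d2 m \<Longrightarrow> msmul (tot A m) a x \<in> cycles A d1 d2 m"
  using submodD(4)[OF cyc_sub] .

lemma g_hom: "rmod_hom (Htot A d1 d2 n) (donor_lim A d1 d2 n) gmap"
  unfolding rmod_hom_def
proof (intro conjI ballI allI)
  show "gmap ` carr (Htot A d1 d2 n) \<subseteq> carr (donor_lim A d1 d2 n)"
    by (auto simp: H_carr g_in)
next
  fix X Y assume "X \<in> carr (Htot A d1 d2 n)" "Y \<in> carr (Htot A d1 d2 n)"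
  then obtain x y where x: "x \<in> cycles A d1 d2 n" "X = hq n x" and y: "y \<in> cycles A d1 d2 n" "Y = hq n y"
    by (auto simp: H_carr)
  show "gmap (madd (Htot A d1 d2 n) X Y) = madd (donor_lim A d1 d2 n) (gmap X) (gmap Y)"
  proof -
    have "gmap (madd (Htot A d1 d2 n) X Y) = gmap (hq n (madd (tot A n) x y))" using x y by (simp add: H_add)
    also have "\<dots> = madd (donor_lim A d1 d2 n) (gmap X) (gmap Y)"
    proof
      fix i
      have xi: "x i \<in> carr (A i (n - i))" and yi: "y i \<in> carr (A i (n - i))" using cyc_c x y by auto
      have "gmap (hq n (madd (tot A n) x y)) i = dq i (n - i) (madd (A i (n - i)) (msmul (A i (n - i)) (eps i) (x i)) (msmul (A i (n - i)) (eps i) (y i)))"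
        using cyc_add[OF x(1) y(1)] xi yi by (simp add: g_hq tot_add rm_smul_add)
      also have "\<dots> = madd (donor_lim A d1 d2 n) (gmap X) (gmap Y) i"
        using x y by (simp add: g_hq DL_add don_add SD_smul cyc_SD)
      finally show "gmap (hq n (madd (tot A n) x y)) i = madd (donor_lim A d1 d2 n) (gmap X) (gmap Y) i" .
    qed
    finally show ?thesis .
  qed
next
  fix a X assume "X \<in> carr (Htot A d1 d2 n)"
  then obtain x where x: "x \<in> cycles A d1 d2 n" "X = hq n x" by (auto simp: H_carr)
  show "gmap (msmul (Htot A d1 d2 n) a X) = msmul (donor_lim A d1 d2 n) a (gmap X)"
  proof -
    have "gmap (msmul (Htot A d1 d2 n) a X) = gmap (hq n (msmul (tot A n) a x))" using x by (simp add: H_smul)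
    also have "\<dots> = msmul (donor_lim A d1 d2 n) a (gmap X)"
    proof
      fix i
      have xi: "x i \<in> carr (A i (n - i))" using cyc_c x by auto
      have "gmap (hq n (msmul (tot A n) a x)) i = dq i (n - i) (msmul (A i (n - i)) a (msmul (A i (n - i)) (eps i) (x i)))"
        using cyc_smul[OF x(1)] xi by (simp add: g_hq tot_smul rm_eps_comm)
      also have "\<dots> = msmul (donor_lim A d1 d2 n) a (gmap X) i"
        using x by (simp add: g_hq DL_smul don_smul SD_smul cyc_SD)
      finally show "gmap (hq n (msmul (tot A n) a x)) i = msmul (donor_lim A d1 d2 n) a (gmap X) i" .
    qed
    finally show ?thesis .
  qed
qed

lemma idx1: "n - (i - 1) - 1 = n - i" by simp
lemma idx2: "n - (i - 1) = n - i + 1" by simp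

lemma g_surj: assumes Z: "Z \<in> carr (donor_lim A d1 d2 n)" shows "Z \<in> gmap ` carr (Htot A d1 d2 n)"
proof -
  have ZZ: "(\<forall>i. Z i \<in> carr (donor A d1 d2 i (n - i))) \<and> (\<forall>i. Z i = phi i (Z (i + 1)))"
    using Z unfolding DL_carr by (rule CollectD)
  note Zi = conjunct1[OF ZZ, rule_format]
  note comp = conjunct2[OF ZZ, rule_format]
  define z where "z i = (SOME x. x \<in> Z i)" for i
  have zs: "\<And>i. z i \<in> SD i (n - i)" and Zz: "\<And>i. dq i (n - i) (z i) = Z i"
    using don_rep[OF Zi] unfolding z_def by auto
  have zc: "\<And>i. z i \<in> carr (A i (n - i))" using zs SDc by auto
  have zs1: "z (i + 1) \<in> SD (i + 1) (n - i - 1)" for i using zs[of "i + 1"] unfolding nidx .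
  have Zz1: "Z (i + 1) = dq (i + 1) (n - i - 1) (z (i + 1))" for i using Zz[of "i + 1", symmetric] unfolding nidx .
  have ex: "\<exists>c\<in>carr (A i (n - i - 1)). madd (A (i + 1) (n - i)) (d2 (i + 1) (n - i - 1) (z (i + 1))) (mneg (A (i + 1) (n - i)) (d1 i (n - i) (z i)))
         = d1 i (n - i) (d2 i (n - i - 1) c)" for i
  proof -
    have "ext_v A d1 d2 i (n - i) (Z i) = ext_h A d1 d2 (i + 1) (n - i - 1) (Z (i + 1))"
      using compat_iff[of Z i, OF Zi Zi] comp[of i] by simp
    then have "rq (i + 1) (n - i) (d2 (i + 1) (n - i - 1) (z (i + 1))) = rq (i + 1) (n - i) (d1 i (n - i) (z i))"
      using Zz[of i, symmetric] Zz1[of i] zs zs1 by (simp add: ext_v_q ext_h_q)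
    moreover have "d2 (i + 1) (n - i - 1) (z (i + 1)) \<in> SR (i + 1) (n - i)" using d2_SR[OF zs1[of i]] by simp
    ultimately have "madd (A (i + 1) (n - i)) (d2 (i + 1) (n - i - 1) (z (i + 1))) (mneg (A (i + 1) (n - i)) (d1 i (n - i) (z i))) \<in> NR (i + 1) (n - i)"
      using rec_eq[OF _ d1_SR[OF zs[of i]]] by simp
    then show ?thesis unfolding NR_mem by simp
  qed
  define c where "c i = (SOME c. c \<in> carr (A i (n - i - 1)) \<and> madd (A (i + 1) (n - i)) (d2 (i + 1) (n - i - 1) (z (i + 1))) (mneg (A (i + 1) (n - i)) (d1 i (n - i) (z i)))
         = d1 i (n - i) (d2 i (n - i - 1) c))" for i
  have cc: "c i \<in> carr (A i (n - i - 1)) \<and> madd (A (i + 1) (n - i)) (d2 (i + 1) (n - i - 1) (z (i + 1))) (mneg (A (i + 1) (n - i)) (d1 i (n - i) (z i)))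
         = d1 i (n - i) (d2 i (n - i - 1) (c i))" for i
    using ex[of i] unfolding c_def Bex_def by (rule someI_ex)
  have c: "\<And>i. c i \<in> carr (A i (n - i - 1))"
    "\<And>i. madd (A (i + 1) (n - i)) (d2 (i + 1) (n - i - 1) (z (i + 1))) (mneg (A (i + 1) (n - i)) (d1 i (n - i) (z i)))
         = d1 i (n - i) (d2 i (n - i - 1) (c i))" using cc by auto
  have cp: "c (i - 1) \<in> carr (A (i - 1) (n - i))" for i using c(1)[of "i - 1"] unfolding idx1 .
  have cE: "madd (A i (n - i + 1)) (d2 i (n - i) (z i)) (mneg (A i (n - i + 1)) (d1 (i - 1) (n - i + 1) (z (i - 1))))
         = d1 (i - 1) (n - i + 1) (d2 (i - 1) (n - i) (c (i - 1)))" for i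
    using c(2)[of "i - 1"] unfolding idx1 idx2 by simp
  define x where "x i = msmul (A i (n - i)) (eps i) (madd (A i (n - i)) (z i) (mneg (A i (n - i)) (d1 (i - 1) (n - i) (c (i - 1)))))" for i
  have xi: "x i \<in> carr (A i (n - i))" for i unfolding x_def using zc cp by simp
  have xt: "x \<in> carr (tot A n)" using xi unfolding tot_in by simp
  have xp: "x (i - 1) = msmul (A (i - 1) (n - i + 1)) (eps (i - 1)) (madd (A (i - 1) (n - i + 1)) (z (i - 1))
       (mneg (A (i - 1) (n - i + 1)) (d1 (i - 2) (n - i + 1) (c (i - 2)))))" for i
  proof -
    have "i - 1 - 1 = i - 2" by simp
    then show ?thesis unfolding x_def idx2 by simp
  qed
  have zp: "z (i - 1) \<in> carr (A (i - 1) (n - i + 1))" for i using zc[of "i - 1"] unfolding idx2 .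
  have cpp: "c (i - 2) \<in> carr (A (i - 2) (n - i + 1))" for i
  proof -
    have e: "n - (i - 2) - 1 = n - i + 1" by simp
    show ?thesis using c(1)[of "i - 2"] unfolding e .
  qed
  have xcyc: "x \<in> cycles A d1 d2 n"
  proof -
    have "totd A d1 d2 n x i = mzero (tot A (n + 1)) i" for i
    proof -
      let ?M = "A i (n - i + 1)"
      let ?Y = "d1 (i - 1) (n - i + 1) (z (i - 1))"
      let ?D = "d1 (i - 1) (n - i + 1) (d2 (i - 1) (n - i) (c (i - 1)))"
      have Yc: "?Y \<in> carr ?M" using zp by simp
      have dcp: "d2 (i - 1) (n - i) (c (i - 1)) \<in> carr (A (i - 1) (n - i + 1))" using cp by simp
      have Dc: "?D \<in> carr ?M" using dcp by simp
      have d2z: "d2 i (n - i) (z i) \<in> carr ?M" using zc by simp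
      have d2x: "d2 i (n - i) (x i) = msmul ?M (eps i) ?Y"
      proof -
        have "d2 i (n - i) (x i) = msmul ?M (eps i) (madd ?M (d2 i (n - i) (z i)) (mneg ?M (d2 i (n - i) (d1 (i - 1) (n - i) (c (i - 1))))))"
          unfolding x_def using zc cp by (simp add: d2_smul d2_add d2_neg)
        also have "d2 i (n - i) (d1 (i - 1) (n - i) (c (i - 1))) = ?D" using cp by (simp add: d12')
        also have "madd ?M (d2 i (n - i) (z i)) (mneg ?M ?D) = ?Y"
        proof -
          have "d2 i (n - i) (z i) = madd ?M (madd ?M (d2 i (n - i) (z i)) (mneg ?M ?Y)) ?Y"
            using d2z Yc by (simp add: rm_diff_add)
          also have "\<dots> = madd ?M ?D ?Y" using cE[of i] by simp
          finally have "d2 i (n - i) (z i) = madd ?M ?D ?Y" .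
          then show ?thesis using Yc Dc by (simp add: rm_add_diff2)
        qed
        finally show ?thesis .
      qed
      have d1x: "d1 (i - 1) (n - i + 1) (x (i - 1)) = msmul ?M (eps (i - 1)) ?Y"
      proof -
        have "d1 (i - 1) (n - i + 1) (x (i - 1)) = msmul ?M (eps (i - 1)) (madd ?M ?Y (mneg ?M (d1 (i - 1) (n - i + 1) (d1 (i - 2) (n - i + 1) (c (i - 2))))))"
          unfolding xp using zp cpp d1_inj[OF cpp[of i], of "i - 1"] by (simp add: d1_smul d1_add d1_neg)
        also have "d1 (i - 1) (n - i + 1) (d1 (i - 2) (n - i + 1) (c (i - 2))) = mzero ?M"
          using d11g[OF cpp, of "i - 1" i] by simp
        finally show ?thesis using Yc by simp
      qed
      have "totd A d1 d2 n x i = madd ?M (d2 i (n - i) (x i)) (msmul ?M s (d1 (i - 1) (n - i + 1) (x (i - 1))))"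
        by (rule totd_g) simp_all
      also have "\<dots> = madd ?M (msmul ?M (eps i) ?Y) (msmul ?M (s * eps (i - 1)) ?Y)"
        using Yc by (simp add: d2x d1x rm_smul_smul)
      also have "\<dots> = mzero ?M" using Yc eps_sum[of i] by (simp add: rm_smul_sum_zero)
      finally have "totd A d1 d2 n x i = mzero ?M" .
      moreover have e: "n + 1 - i = n - i + 1" by simp
      ultimately show ?thesis by (simp add: tot_zero A_idx[OF e])
    qed
    then have "totd A d1 d2 n x = mzero (tot A (n + 1))" by (rule ext)
    then show ?thesis unfolding cycles_def using xt by simp
  qed
  have "gmap (hq n x) = Z"
  proof
    fix i
    have "gmap (hq n x) i = dq i (n - i) (madd (A i (n - i)) (z i) (mneg (A i (n - i)) (d1 (i - 1) (n - i) (c (i - 1)))))"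
      using xcyc zc cp by (simp add: g_hq x_def rm_eps_eps)
    also have "\<dots> = Z i" using sub_d1_ND[OF cp zs] Zz by simp
    finally show "gmap (hq n x) i = Z i" .
  qed
  then show ?thesis using image_eqI[OF _ H_in[OF xcyc], of Z gmap] by simp
qed

end

context DC begin
lemma SR_c: "x \<in> SR i r \<Longrightarrow> x \<in> carr (A i r)" unfolding SR_def by simp
lemma SR_d1: "x \<in> SR i r \<Longrightarrow> d1 i r x = mzero (A (i + 1) r)" unfolding SR_def by simp
lemma SR_d2: "x \<in> SR i r \<Longrightarrow> d2 i r x = mzero (A i (r + 1))" unfolding SR_def by simp
lemma SR_I: "x \<in> carr (A i r) \<Longrightarrow> d2 i r x = mzero (A i (r + 1)) \<Longrightarrow> d1 i r x = mzero (A (i + 1) r) \<Longrightarrow> x \<in> SR i r"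
  unfolding SR_def by simp
end

context DCn begin

definition bic where "bic y \<longleftrightarrow> y \<in> carr (tot A n) \<and> (\<forall>i. y i \<in> SR i (n - i))"

lemma recprod_carr: "carr (recprod A d1 d2 n) = {Y. \<forall>i. Y i \<in> carr (receptor A d1 d2 i (n - i))}"
  by (simp add: recprod_def)

lemma bic_cyc: assumes y: "bic y" shows "y \<in> cycles A d1 d2 n"
proof -
  have yt: "y \<in> carr (tot A n)" and ys: "\<And>i. y i \<in> SR i (n - i)" using y unfolding bic_def by auto
  have "totd A d1 d2 n y i = mzero (tot A (n + 1)) i" for i
  proof -
    have a: "d2 i (n - i) (y i) = mzero (A i (n - i + 1))" using SR_d2[OF ys[of i]] .
    have b: "d1 (i - 1) (n - i + 1) (y (i - 1)) = mzero (A i (n - i + 1))" using SR_d1[OF ys[of "i - 1"]] unfolding idx2 by simp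
    have "totd A d1 d2 n y i = madd (A i (n - i + 1)) (d2 i (n - i) (y i)) (msmul (A i (n - i + 1)) s (d1 (i - 1) (n - i + 1) (y (i - 1))))"
      by (rule totd_g) simp_all
    also have "\<dots> = mzero (A i (n - i + 1))" using a b by simp
    finally have "totd A d1 d2 n y i = mzero (A i (n - i + 1))" .
    moreover have e: "n + 1 - i = n - i + 1" by simp
    ultimately show ?thesis by (simp add: tot_zero A_idx[OF e])
  qed
  then have "totd A d1 d2 n y = mzero (tot A (n + 1))" by (rule ext)
  then show ?thesis unfolding cycles_def using yt by simp
qed

lemma idx3: "n - 1 - j = n - j - 1" by simp

lemma intra_rq: assumes y: "bic y"
  shows "intramural A d1 d2 n (\<lambda>i. rq i (n - i) (y i)) = hq n y"
proof -
  have yt: "y \<in> carr (tot A n)" and ys: "\<And>i. y i \<in> SR i (n - i)" using y unfolding bic_def by auto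
  define u where "u i = (SOME u. u \<in> rq i (n - i) (y i))" for i
  have us: "u i \<in> SR i (n - i)" and ud: "madd (A i (n - i)) (u i) (mneg (A i (n - i)) (y i)) \<in> NR i (n - i)" for i
    using rec_some[OF ys[of i]] unfolding u_def by auto
  have ex: "\<exists>c. c \<in> carr (A (i - 1) (n - i - 1)) \<and> madd (A i (n - i)) (u i) (mneg (A i (n - i)) (y i)) = d1 (i - 1) (n - i) (d2 (i - 1) (n - i - 1) c)" for i
    using ud[of i] unfolding NR_mem by auto
  define c where "c i = (SOME c. c \<in> carr (A (i - 1) (n - i - 1)) \<and> madd (A i (n - i)) (u i) (mneg (A i (n - i)) (y i)) = d1 (i - 1) (n - i) (d2 (i - 1) (n - i - 1) c))" for i
  have cc: "c i \<in> carr (A (i - 1) (n - i - 1)) \<and> madd (A i (n - i)) (u i) (mneg (A i (n - i)) (y i)) = d1 (i - 1) (n - i) (d2 (i - 1) (n - i - 1) (c i))" for i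
    using ex[of i] unfolding c_def by (rule someI_ex)
  have c1: "c (j + 1) \<in> carr (A j (n - j - 2))" for j
  proof -
    have e: "n - (j + 1) - 1 = n - j - 2" by simp
    show ?thesis using conjunct1[OF cc[of "j + 1"]] unfolding e by simp
  qed
  define w where "w j = msmul (A j (n - j - 1)) (- s) (d2 j (n - j - 2) (c (j + 1)))" for j
  have wc: "w j \<in> carr (A j (n - j - 1))" for j
  proof -
    have e: "n - j - 2 + 1 = n - j - 1" by simp
    have "d2 j (n - j - 2) (c (j + 1)) \<in> carr (A j (n - j - 1))" using d2_in[OF c1[of j]] unfolding e .
    then show ?thesis unfolding w_def by simp
  qed
  have wt: "w \<in> carr (tot A (n - 1))" unfolding tot_in idx3 using wc by simp
  have ut: "u \<in> carr (tot A n)" unfolding tot_in using us SR_c by blast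
  have ub: "bic u" unfolding bic_def using ut us by simp
  have beq: "totd A d1 d2 (n - 1) w = madd (tot A n) u (mneg (tot A n) y)"
  proof
    fix i
    have cpi: "c i \<in> carr (A (i - 1) (n - i - 1))" using cc by simp
    have wp: "w (i - 1) = msmul (A (i - 1) (n - i)) (- s) (d2 (i - 1) (n - i - 1) (c i))"
    proof -
      have e: "n - (i - 1) - 2 = n - i - 1" by simp
      show ?thesis unfolding w_def idx1 e by simp
    qed
    have "totd A d1 d2 (n - 1) w i = madd (A i (n - i)) (d2 i (n - i - 1) (w i)) (msmul (A i (n - i)) (- s) (d1 (i - 1) (n - i) (w (i - 1))))"
      using bnd_comp[OF wt] by simp
    also have "d2 i (n - i - 1) (w i) = mzero (A i (n - i))"
    proof -
      have e: "n - i - 2 + 1 = n - i - 1" by simp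
      have "d2 i (n - i - 1) (d2 i (n - i - 2) (c (i + 1))) = mzero (A i (n - i))"
        using d22g[OF c1[of i], of "n - i - 1" "n - i"] by simp
      moreover have "d2 i (n - i - 2) (c (i + 1)) \<in> carr (A i (n - i - 1))" using d2_in[OF c1[of i]] unfolding e .
      ultimately show ?thesis unfolding w_def by (simp add: d2_smul)
    qed
    also have "msmul (A i (n - i)) (- s) (d1 (i - 1) (n - i) (w (i - 1))) = d1 (i - 1) (n - i) (d2 (i - 1) (n - i - 1) (c i))"
      unfolding wp using cpi by (simp add: d1_smul rm_smul_smul sg_sq)
    also have "\<dots> = madd (A i (n - i)) (u i) (mneg (A i (n - i)) (y i))" using cc by simp
    finally show "totd A d1 d2 (n - 1) w i = madd (tot A n) u (mneg (tot A n) y) i"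
      using us[of i] ys[of i] SR_c by (simp add: tot_add tot_neg)
  qed
  have "madd (tot A n) u (mneg (tot A n) y) \<in> boundaries A d1 d2 n"
    unfolding boundaries_def beq[symmetric] using wt by simp
  then have "hq n u = hq n y" using H_eqI[OF bic_cyc[OF ub] bic_cyc[OF y]] by simp
  moreover have "intramural A d1 d2 n (\<lambda>i. rq i (n - i) (y i)) = hq n u"
    unfolding intramural_def u_def by simp
  ultimately show ?thesis by simp
qed

end

context DCn begin

lemma sbnd: assumes t: "t \<in> carr (A (p - 1) (n - p))"
  shows "\<exists>\<beta>\<in>boundaries A d1 d2 n. \<beta> p = mneg (A p (n - p)) (d1 (p - 1) (n - p) t)
     \<and> \<beta> (p - 1) = msmul (A (p - 1) (n - p + 1)) s (d2 (p - 1) (n - p) t)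
     \<and> (\<forall>i. i \<noteq> p \<longrightarrow> i \<noteq> p - 1 \<longrightarrow> \<beta> i = mzero (A i (n - i)))"
proof -
  define w where "w j = (if j = p - 1 then msmul (A (p - 1) (n - p)) s t else mzero (A j (n - j - 1)))" for j
  have wc: "w j \<in> carr (A j (n - j - 1))" for j
  proof (cases "j = p - 1")
    case True
    have e: "n - (p - 1) - 1 = n - p" by simp
    show ?thesis using True t unfolding w_def e by simp
  next
    case False then show ?thesis unfolding w_def by simp
  qed
  have wt: "w \<in> carr (tot A (n - 1))" unfolding tot_in idx3 using wc by simp
  let ?b = "totd A d1 d2 (n - 1) w"
  have bB: "?b \<in> boundaries A d1 d2 n" unfolding boundaries_def using wt by simp
  have bc: "?b i = madd (A i (n - i)) (d2 i (n - i - 1) (w i)) (msmul (A i (n - i)) (- s) (d1 (i - 1) (n - i) (w (i - 1))))" for i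
    using bnd_comp[OF wt] by simp
  have wz: "i \<noteq> p - 1 \<Longrightarrow> w i = mzero (A i (n - i - 1))" for i unfolding w_def by simp
  have wzp: "i \<noteq> p \<Longrightarrow> w (i - 1) = mzero (A (i - 1) (n - i))" for i
  proof -
    assume "i \<noteq> p"
    then have "i - 1 \<noteq> p - 1" by simp
    then show ?thesis unfolding w_def idx1 by simp
  qed
  have d1t: "d1 (p - 1) (n - p) t \<in> carr (A p (n - p))" using t by simp
  have b1: "?b p = mneg (A p (n - p)) (d1 (p - 1) (n - p) t)"
  proof -
    have "w (p - 1) = msmul (A (p - 1) (n - p)) s t" unfolding w_def by simp
    then show ?thesis using bc[of p] wz[of p] t d1t by (simp add: d1_smul rm_smul_smul sg_sq mneg_def)
  qed
  have b2: "?b (p - 1) = msmul (A (p - 1) (n - p + 1)) s (d2 (p - 1) (n - p) t)"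
  proof -
    have e: "p - 1 - 1 = p - 2" by simp
    have e3: "n - p + 1 - 1 = n - p" by simp
    have "?b (p - 1) = madd (A (p - 1) (n - p + 1)) (d2 (p - 1) (n - p) (w (p - 1)))
        (msmul (A (p - 1) (n - p + 1)) (- s) (d1 (p - 2) (n - p + 1) (w (p - 2))))"
      using bc[of "p - 1"] unfolding idx1 idx2 e e3 .
    moreover have "w (p - 2) = mzero (A (p - 2) (n - p + 1))"
    proof -
      have e2: "n - (p - 2) - 1 = n - p + 1" by simp
      have "p - 2 \<noteq> p - 1" by simp
      then show ?thesis unfolding w_def e2 by simp
    qed
    moreover have "d1 (p - 2) (n - p + 1) (mzero (A (p - 2) (n - p + 1))) = mzero (A (p - 1) (n - p + 1))"
      by (rule d1_zerog) simp
    moreover have "w (p - 1) = msmul (A (p - 1) (n - p)) s t" unfolding w_def by simp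
    ultimately show ?thesis using t by (simp add: d2_smul)
  qed
  have b3: "i \<noteq> p \<Longrightarrow> i \<noteq> p - 1 \<Longrightarrow> ?b i = mzero (A i (n - i))" for i
  proof -
    assume a: "i \<noteq> p" "i \<noteq> p - 1"
    have "d2 i (n - i - 1) (mzero (A i (n - i - 1))) = mzero (A i (n - i))" by (rule d2_zerog) simp
    moreover have "d1 (i - 1) (n - i) (mzero (A (i - 1) (n - i))) = mzero (A i (n - i))" by (rule d1_zerog) simp
    ultimately show ?thesis using bc[of i] wz[OF a(2)] wzp[OF a(1)] by simp
  qed
  show ?thesis using bB b1 b2 b3 by blast
qed

lemma bic_SR: "bic z \<Longrightarrow> z i \<in> SR i (n - i)" unfolding bic_def by simp
lemma bic_t: "bic z \<Longrightarrow> z \<in> carr (tot A n)" unfolding bic_def by simp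

lemma kill: assumes y: "bic y"
  shows "\<exists>z\<in>hq n y. bic z \<and> (\<forall>j. b - int k < j \<and> j \<le> b \<longrightarrow> z j = mzero (A j (n - j)))"
proof (induction k)
  case 0
  show ?case using H_self[OF bic_cyc[OF y]] y by auto
next
  case (Suc k)
  then obtain z where z: "z \<in> hq n y" "bic z" and zz: "\<And>j. b - int k < j \<Longrightarrow> j \<le> b \<Longrightarrow> z j = mzero (A j (n - j))"
    by blast
  define p where "p = b - int k"
  have zp: "z p \<in> SR p (n - p)" using bic_SR[OF z(2)] .
  obtain t where t: "t \<in> carr (A (p - 1) (n - p))" "z p = d1 (p - 1) (n - p) t"
    using exact[OF SR_c[OF zp] SR_d1[OF zp]] by blast
  obtain \<beta> where bB: "\<beta> \<in> boundaries A d1 d2 n" and b1: "\<beta> p = mneg (A p (n - p)) (d1 (p - 1) (n - p) t)"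
    and b2: "\<beta> (p - 1) = msmul (A (p - 1) (n - p + 1)) s (d2 (p - 1) (n - p) t)"
    and b3: "\<And>i. i \<noteq> p \<Longrightarrow> i \<noteq> p - 1 \<Longrightarrow> \<beta> i = mzero (A i (n - i))"
    using sbnd[OF t(1)] by blast
  have bt: "\<beta> \<in> carr (tot A n)" using bB submodD(1)[OF bnd_sub] by auto
  let ?z = "madd (tot A n) z \<beta>"
  have zin: "?z \<in> hq n y" using hq_add_bnd[OF z(1) bic_t[OF y] bB] .
  have zc: "\<And>i. z i \<in> carr (A i (n - i))" using bic_t[OF z(2)] tot_ing by blast
  have zi: "?z i = madd (A i (n - i)) (z i) (\<beta> i)" for i by (simp add: tot_add)
  have zpv: "?z p = mzero (A p (n - p))" using zi[of p] b1 t zc[of p] by simp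
  have zo: "i \<noteq> p \<Longrightarrow> i \<noteq> p - 1 \<Longrightarrow> ?z i = z i" for i using zi[of i] b3[of i] zc[of i] by simp
  have zSR: "?z i \<in> SR i (n - i)" for i
  proof -
    consider "i = p" | "i = p - 1" | "i \<noteq> p \<and> i \<noteq> p - 1" by blast
    then show ?thesis
    proof cases
      case 1 then show ?thesis using zpv SR_zero by simp
    next
      case 2
      let ?d = "d2 (p - 1) (n - p) t"
      have dS: "?d \<in> SR (p - 1) (n - p + 1)"
      proof (rule SR_I)
        show "?d \<in> carr (A (p - 1) (n - p + 1))" using t by simp
        show "d2 (p - 1) (n - p + 1) ?d = mzero (A (p - 1) (n - p + 1 + 1))"
          by (rule d22g[OF t(1)]) simp_all
        have "d1 (p - 1) (n - p + 1) ?d = d2 p (n - p) (d1 (p - 1) (n - p) t)"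
          by (rule d12g[OF t(1)]) simp_all
        also have "\<dots> = mzero (A p (n - p + 1))" using SR_d2[OF zp] t(2) by simp
        finally show "d1 (p - 1) (n - p + 1) ?d = mzero (A (p - 1 + 1) (n - p + 1))" by simp
      qed
      have zS: "z (p - 1) \<in> SR (p - 1) (n - p + 1)" using bic_SR[OF z(2), of "p - 1"] unfolding idx2 .
      have "?z (p - 1) = madd (A (p - 1) (n - p + 1)) (z (p - 1)) (msmul (A (p - 1) (n - p + 1)) s ?d)"
        using zi[of "p - 1"] b2 unfolding idx2 by simp
      also have "\<dots> \<in> SR (p - 1) (n - p + 1)" using SR_add[OF zS SR_smul[OF dS]] .
      finally have "?z (p - 1) \<in> SR (p - 1) (n - (p - 1))" unfolding idx2 .
      then show ?thesis using 2 by simp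
    next
      case 3 then show ?thesis using zo bic_SR[OF z(2)] by simp
    qed
  qed
  have zt: "?z \<in> carr (tot A n)" using bt bic_t[OF z(2)] rm_add[OF tot_mod] by blast
  have zb: "bic ?z" unfolding bic_def using zt zSR by simp
  have "b - int (Suc k) < j \<Longrightarrow> j \<le> b \<Longrightarrow> ?z j = mzero (A j (n - j))" for j
  proof -
    assume j: "b - int (Suc k) < j" "j \<le> b"
    show ?thesis
    proof (cases "j = p")
      case True then show ?thesis using zpv by simp
    next
      case False
      then have "b - int k < j" "j \<noteq> p - 1" using j unfolding p_def by auto
      then show ?thesis using zo[OF False] zz j by simp
    qed
  qed
  then show ?case using zin zb by blast
qed

lemma intra_PB: assumes Y: "Y \<in> carr (recprod A d1 d2 n)" shows "intramural A d1 d2 n Y \<in> PB A d1 d2 n"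
proof -
  define y where "y i = (SOME u. u \<in> Y i)" for i
  have Yi: "\<And>i. Y i \<in> carr (receptor A d1 d2 i (n - i))" using Y unfolding recprod_carr by simp
  have ys: "\<And>i. y i \<in> SR i (n - i)" using rec_rep[OF Yi] unfolding y_def by simp
  have yt: "y \<in> carr (tot A n)" unfolding tot_in using ys SR_c by blast
  have yb: "bic y" unfolding bic_def using yt ys by simp
  have iy: "intramural A d1 d2 n Y = hq n y" unfolding intramural_def y_def by simp
  have inH: "hq n y \<in> carr (Htot A d1 d2 n)" using H_in[OF bic_cyc[OF yb]] .
  have "\<exists>x\<in>hq n y. \<forall>i\<in>I. x i = mzero (A i (n - i))" if I: "finite I" for I
  proof (cases "I = {}")
    case True then show ?thesis using H_self[OF bic_cyc[OF yb]] by blast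
  next
    case False
    obtain z where z: "z \<in> hq n y" "\<And>j. Max I - int (nat (Max I - Min I + 1)) < j \<Longrightarrow> j \<le> Max I \<Longrightarrow> z j = mzero (A j (n - j))"
      using kill[OF yb, of "Max I" "nat (Max I - Min I + 1)"] by blast
    have "\<forall>i\<in>I. z i = mzero (A i (n - i))"
    proof
      fix i assume i: "i \<in> I"
      have "Min I \<le> i" "i \<le> Max I" using i I False by auto
      moreover have "Min I \<le> Max I" using I False by auto
      ultimately show "z i = mzero (A i (n - i))" using z(2)[of i] by simp
    qed
    then show ?thesis using z(1) by blast
  qed
  then show ?thesis unfolding PB_def iy using inH by blast
qed

lemma PB_ker: assumes X: "X \<in> PB A d1 d2 n" shows "gmap X = mzero (donor_lim A d1 d2 n)"
proof
  fix i
  have XH: "X \<in> carr (Htot A d1 d2 n)" using X unfolding PB_def by simp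
  obtain x where x: "x \<in> X" "x i = mzero (A i (n - i))" using X unfolding PB_def by (auto dest!: spec[of _ "{i}"])
  have "gmap X i = dq i (n - i) (msmul (A i (n - i)) (eps i) (x i))" using g_rep[OF XH x(1)] by simp
  also have "\<dots> = mzero (donor A d1 d2 i (n - i))" using x(2) by (simp add: don_zero)
  finally show "gmap X i = mzero (donor_lim A d1 d2 n) i" by (simp add: DL_zero)
qed

end

context DCn begin

lemma ker_intra: assumes X: "X \<in> carr (Htot A d1 d2 n)" and g0: "gmap X = mzero (donor_lim A d1 d2 n)"
  shows "X \<in> intramural A d1 d2 n ` carr (recprod A d1 d2 n)"
proof -
  define x where "x = (SOME x. x \<in> X)"
  have xX: "x \<in> X" unfolding x_def using H_ne[OF X] .
  have xc: "x \<in> cycles A d1 d2 n" and Xx: "X = hq n x" using H_mem[OF X xX] by auto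
  have xt: "x \<in> carr (tot A n)" using cyc_tot[OF xc] .
  have xi: "\<And>i. x i \<in> carr (A i (n - i))" using cyc_c[OF xc] by simp
  have xND: "x i \<in> ND i (n - i)" for i
  proof -
    have e1: "gmap X i = dq i (n - i) (msmul (A i (n - i)) (eps i) (x i))" using g_rep[OF X xX] by simp
    have e2: "gmap X i = dq i (n - i) (mzero (A i (n - i)))" using g0 by (simp add: DL_zero don_zero)
    have "dq i (n - i) (msmul (A i (n - i)) (eps i) (x i)) = dq i (n - i) (mzero (A i (n - i)))"
      using e1 e2 by simp
    then have "madd (A i (n - i)) (msmul (A i (n - i)) (eps i) (x i)) (mneg (A i (n - i)) (mzero (A i (n - i)))) \<in> ND i (n - i)"
      using don_eq[OF SD_smul[OF cyc_SD[OF xc]] SD_zero] by simp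
    then have "msmul (A i (n - i)) (eps i) (x i) \<in> ND i (n - i)" using xi by simp
    from submodD(4)[OF ND_sub this, of "eps i"] show ?thesis using xi by (simp add: rm_eps_eps)
  qed
  have ex: "\<exists>a. a \<in> carr (A (i - 1) (n - i)) \<and> (\<exists>b\<in>carr (A i (n - i - 1)). x i = madd (A i (n - i)) (d1 (i - 1) (n - i) a) (d2 i (n - i - 1) b))" for i
    using xND[of i] unfolding ND_mem by blast
  define a where "a i = (SOME a. a \<in> carr (A (i - 1) (n - i)) \<and> (\<exists>b\<in>carr (A i (n - i - 1)). x i = madd (A i (n - i)) (d1 (i - 1) (n - i) a) (d2 i (n - i - 1) b)))" for i
  have aa: "a i \<in> carr (A (i - 1) (n - i)) \<and> (\<exists>b\<in>carr (A i (n - i - 1)). x i = madd (A i (n - i)) (d1 (i - 1) (n - i) (a i)) (d2 i (n - i - 1) b))" for i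
    using ex[of i] unfolding a_def by (rule someI_ex)
  have a1: "a (j + 1) \<in> carr (A j (n - j - 1))" for j using conjunct1[OF aa[of "j + 1"]] unfolding nidx by simp
  have ai: "a i \<in> carr (A (i - 1) (n - i))" for i using aa by simp
  define w where "w j = msmul (A j (n - j - 1)) (- s) (a (j + 1))" for j
  have wc: "w j \<in> carr (A j (n - j - 1))" for j unfolding w_def using a1 by simp
  have wt: "w \<in> carr (tot A (n - 1))" unfolding tot_in idx3 using wc by simp
  let ?b = "totd A d1 d2 (n - 1) w"
  have bB: "?b \<in> boundaries A d1 d2 n" unfolding boundaries_def using wt by simp
  have bt: "?b \<in> carr (tot A n)" using bB submodD(1)[OF bnd_sub] by auto
  have bi: "\<And>i. ?b i \<in> carr (A i (n - i))" using bt tot_ing by blast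
  have bc: "?b i = madd (A i (n - i)) (d2 i (n - i - 1) (w i)) (d1 (i - 1) (n - i) (a i))" for i
  proof -
    have wp: "w (i - 1) = msmul (A (i - 1) (n - i)) (- s) (a i)" unfolding w_def idx1 by simp
    have "?b i = madd (A i (n - i)) (d2 i (n - i - 1) (w i)) (msmul (A i (n - i)) (- s) (d1 (i - 1) (n - i) (w (i - 1))))"
      using bnd_comp[OF wt] by simp
    also have "msmul (A i (n - i)) (- s) (d1 (i - 1) (n - i) (w (i - 1))) = d1 (i - 1) (n - i) (a i)"
      unfolding wp using ai[of i] by (simp add: d1_smul rm_smul_smul sg_sq)
    finally show ?thesis .
  qed
  let ?y = "madd (tot A n) x (mneg (tot A n) ?b)"
  have mb: "mneg (tot A n) ?b \<in> boundaries A d1 d2 n" using submod_neg[OF bnd_sub bB] .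
  have yin: "?y \<in> hq n x" using hq_add_bnd[OF H_self[OF xc] xt mb] .
  have ycyc: "?y \<in> cycles A d1 d2 n" using cyc_add[OF xc submod_neg[OF cyc_sub subsetD[OF bnd_cyc bB]]] .
  have yi: "?y i = madd (A i (n - i)) (x i) (mneg (A i (n - i)) (?b i))" for i by (simp add: tot_add tot_neg)
  have yic: "\<And>i. ?y i \<in> carr (A i (n - i))" using yi xi bi by simp
  have yd2: "d2 i (n - i) (?y i) = mzero (A i (n - i + 1))" for i
  proof -
    obtain bb where bb: "bb \<in> carr (A i (n - i - 1))" "x i = madd (A i (n - i)) (d1 (i - 1) (n - i) (a i)) (d2 i (n - i - 1) bb)"
      using aa[of i] by blast
    let ?M = "A i (n - i + 1)"
    let ?P = "d2 i (n - i) (d1 (i - 1) (n - i) (a i))"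
    have Pc: "?P \<in> carr ?M" using ai[of i] by simp
    have dd: "\<And>v. v \<in> carr (A i (n - i - 1)) \<Longrightarrow> d2 i (n - i) (d2 i (n - i - 1) v) = mzero ?M"
      by (rule d22g) simp_all
    have di: "\<And>v. v \<in> carr (A i (n - i - 1)) \<Longrightarrow> d2 i (n - i - 1) v \<in> carr (A i (n - i))"
      by (rule d2_inj) simp_all
    have 1: "d2 i (n - i) (x i) = ?P" using bb ai[of i] dd[OF bb(1)] di[OF bb(1)] Pc by (simp add: d2_add)
    have 2: "d2 i (n - i) (?b i) = ?P" using bc[of i] ai[of i] dd[OF wc[of i]] di[OF wc[of i]] Pc by (simp add: d2_add)
    show ?thesis using yi[of i] xi[of i] bi[of i] 1 2 Pc by (simp add: d2_add d2_neg)
  qed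
  have yd1: "d1 i (n - i) (?y i) = mzero (A (i + 1) (n - i))" for i
  proof -
    let ?M = "A (i + 1) (n - i)"
    have "d2 (i + 1) (n - i - 1) (?y (i + 1)) = msmul ?M (- s) (d1 i (n - i) (?y i))"
      using cyc_d2[OF ycyc, of "i + 1"] unfolding nidx nidx2 by simp
    moreover have "d2 (i + 1) (n - i - 1) (?y (i + 1)) = mzero ?M" using yd2[of "i + 1"] unfolding nidx nidx2 .
    ultimately have e: "msmul ?M (- s) (d1 i (n - i) (?y i)) = mzero ?M" by simp
    have dc: "d1 i (n - i) (?y i) \<in> carr ?M" using yic by simp
    have "d1 i (n - i) (?y i) = msmul ?M (- s) (msmul ?M (- s) (d1 i (n - i) (?y i)))"
      using dc by (simp add: rm_smul_smul sg_sq)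
    also have "\<dots> = mzero ?M" using e by simp
    finally show ?thesis .
  qed
  have yS: "\<And>i. ?y i \<in> SR i (n - i)" using SR_I[OF yic yd2 yd1] .
  have yb: "bic ?y" unfolding bic_def using yS cyc_tot[OF ycyc] by simp
  let ?Y = "\<lambda>i. rq i (n - i) (?y i)"
  have Yc: "?Y \<in> carr (recprod A d1 d2 n)" unfolding recprod_carr using yS rec_in by simp
  have "intramural A d1 d2 n ?Y = hq n ?y" using intra_rq[OF yb] .
  also have "\<dots> = X" using H_mem(2)[OF H_in[OF xc] yin] Xx by simp
  finally show ?thesis by (rule image_eqI[OF _ Yc, rotated, OF sym])
qed

lemma PB_carr: "PB A d1 d2 n \<subseteq> carr (Htot A d1 d2 n)" unfolding PB_def by auto

lemma PB_intra: "PB A d1 d2 n = intramural A d1 d2 n ` carr (recprod A d1 d2 n)"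
proof
  show "PB A d1 d2 n \<subseteq> intramural A d1 d2 n ` carr (recprod A d1 d2 n)"
  proof
    fix X assume X: "X \<in> PB A d1 d2 n"
    show "X \<in> intramural A d1 d2 n ` carr (recprod A d1 d2 n)"
      by (rule ker_intra[OF subsetD[OF PB_carr X] PB_ker[OF X]])
  qed
  show "intramural A d1 d2 n ` carr (recprod A d1 d2 n) \<subseteq> PB A d1 d2 n"
  proof
    fix X assume "X \<in> intramural A d1 d2 n ` carr (recprod A d1 d2 n)"
    then obtain Y where "Y \<in> carr (recprod A d1 d2 n)" "X = intramural A d1 d2 n Y" by auto
    then show "X \<in> PB A d1 d2 n" using intra_PB by simp
  qed
qed

lemma g_main: "rmod_hom (Htot A d1 d2 n) (donor_lim A d1 d2 n) gmap
           \<and> gmap ` carr (Htot A d1 d2 n) = carr (donor_lim A d1 d2 n)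
           \<and> mker (Htot A d1 d2 n) (donor_lim A d1 d2 n) gmap = PB A d1 d2 n"
proof (intro conjI)
  show "rmod_hom (Htot A d1 d2 n) (donor_lim A d1 d2 n) gmap" by (rule g_hom)
  show "gmap ` carr (Htot A d1 d2 n) = carr (donor_lim A d1 d2 n)"
  proof
    show "gmap ` carr (Htot A d1 d2 n) \<subseteq> carr (donor_lim A d1 d2 n)" using g_hom unfolding rmod_hom_def by simp
    show "carr (donor_lim A d1 d2 n) \<subseteq> gmap ` carr (Htot A d1 d2 n)" using g_surj by (rule subsetI)
  qed
  show "mker (Htot A d1 d2 n) (donor_lim A d1 d2 n) gmap = PB A d1 d2 n"
  proof
    show "mker (Htot A d1 d2 n) (donor_lim A d1 d2 n) gmap \<subseteq> PB A d1 d2 n"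
    proof
      fix X assume "X \<in> mker (Htot A d1 d2 n) (donor_lim A d1 d2 n) gmap"
      then have X: "X \<in> carr (Htot A d1 d2 n)" "gmap X = mzero (donor_lim A d1 d2 n)" unfolding mker_def by auto
      then show "X \<in> PB A d1 d2 n" using ker_intra[OF X] PB_intra by simp
    qed
    show "PB A d1 d2 n \<subseteq> mker (Htot A d1 d2 n) (donor_lim A d1 d2 n) gmap"
    proof
      fix X assume X: "X \<in> PB A d1 d2 n"
      show "X \<in> mker (Htot A d1 d2 n) (donor_lim A d1 d2 n) gmap"
        unfolding mker_def using subsetD[OF PB_carr X] PB_ker[OF X] by simp
    qed
  qed
qed

end

context DC begin
lemma ext_v_hom: "rmod_hom (donor A d1 d2 i r) (receptor A d1 d2 (i + 1) r) (ext_v A d1 d2 i r)"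
  using ext_v_iso unfolding rmod_iso_def by simp
end

context DCn begin

abbreviation psi where "psi i \<equiv> (ext_h A d1 d2 i (n - i)
              \<circ> the_inv_into (carr (donor A d1 d2 i (n - i))) (ext_v A d1 d2 i (n - i)))"

lemma RL_carr: "carr (receptor_lim A d1 d2 n) = {Y. (\<forall>i. Y i \<in> carr (receptor A d1 d2 i (n - i + 1))) \<and> (\<forall>i. Y i = psi i (Y (i + 1)))}"
  unfolding receptor_lim_def invlim_def by auto
lemma RL_add: "madd (receptor_lim A d1 d2 n) Z W = (\<lambda>i. madd (receptor A d1 d2 i (n - i + 1)) (Z i) (W i))"
  unfolding receptor_lim_def invlim_def by simp
lemma RL_smul: "msmul (receptor_lim A d1 d2 n) a Z = (\<lambda>i. msmul (receptor A d1 d2 i (n - i + 1)) a (Z i))"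
  unfolding receptor_lim_def invlim_def by simp

lemma DL_elem: assumes Z: "Z \<in> carr (donor_lim A d1 d2 n)"
  shows "Z i \<in> carr (donor A d1 d2 i (n - i))" "Z i = phi i (Z (i + 1))"
proof -
  have ZZ: "(\<forall>i. Z i \<in> carr (donor A d1 d2 i (n - i))) \<and> (\<forall>i. Z i = phi i (Z (i + 1)))"
    using Z unfolding DL_carr by (rule CollectD)
  show "Z i \<in> carr (donor A d1 d2 i (n - i))" using conjunct1[OF ZZ] by (rule spec)
  show "Z i = phi i (Z (i + 1))" using conjunct2[OF ZZ] by (rule spec)
qed

lemma RL_elem: assumes Y: "Y \<in> carr (receptor_lim A d1 d2 n)"
  shows "Y i \<in> carr (receptor A d1 d2 i (n - i + 1))" "Y i = psi i (Y (i + 1))"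
proof -
  have YY: "(\<forall>i. Y i \<in> carr (receptor A d1 d2 i (n - i + 1))) \<and> (\<forall>i. Y i = psi i (Y (i + 1)))"
    using Y unfolding RL_carr by (rule CollectD)
  show "Y i \<in> carr (receptor A d1 d2 i (n - i + 1))" using conjunct1[OF YY] by (rule spec)
  show "Y i = psi i (Y (i + 1))" using conjunct2[OF YY] by (rule spec)
qed

lemma DL_prev: "Z \<in> carr (donor_lim A d1 d2 n) \<Longrightarrow> Z (i - 1) \<in> carr (donor A d1 d2 (i - 1) (n - i + 1))"
  using DL_elem(1)[of Z "i - 1"] unfolding idx2 .

lemma DL_comp_prev: assumes Z: "Z \<in> carr (donor_lim A d1 d2 n)"
  shows "ext_v A d1 d2 (i - 1) (n - i + 1) (Z (i - 1)) = ext_h A d1 d2 i (n - i) (Z i)"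
proof -
  have "ext_v A d1 d2 (i - 1) (n - (i - 1)) (Z (i - 1)) = ext_h A d1 d2 (i - 1 + 1) (n - (i - 1) - 1) (Z (i - 1 + 1))"
    using compat_iff[of Z "i - 1", OF DL_elem(1)[OF Z] DL_elem(1)[OF Z]] DL_elem(2)[OF Z, of "i - 1"] by simp
  then show ?thesis unfolding idx1 idx2 by simp
qed

definition rlmap where "rlmap Z = (\<lambda>i. ext_v A d1 d2 (i - 1) (n - i + 1) (Z (i - 1)))"

lemma rl_iso: "rmod_iso (donor_lim A d1 d2 n) (receptor_lim A d1 d2 n) rlmap"
proof -
  let ?D = "donor_lim A d1 d2 n" let ?R = "receptor_lim A d1 d2 n"
  have vh: "rmod_hom (donor A d1 d2 (i - 1) (n - i + 1)) (receptor A d1 d2 i (n - i + 1)) (ext_v A d1 d2 (i - 1) (n - i + 1))" for i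
    using ext_v_hom[of "i - 1" "n - i + 1"] by simp
  have into: "rlmap Z \<in> carr ?R" if Z: "Z \<in> carr ?D" for Z
  proof -
    have c: "rlmap Z i \<in> carr (receptor A d1 d2 i (n - i + 1))" for i
      unfolding rlmap_def using homD(1)[OF vh DL_prev[OF Z]] .
    have "rlmap Z i = psi i (rlmap Z (i + 1))" for i
    proof -
      have e: "n - (i + 1) + 1 = n - i" by simp
      have "rlmap Z (i + 1) = ext_v A d1 d2 i (n - i) (Z i)" unfolding rlmap_def e by simp
      then have "psi i (rlmap Z (i + 1)) = ext_h A d1 d2 i (n - i) (Z i)"
        using inv_ext_v[OF DL_elem(1)[OF Z]] by simp
      also have "\<dots> = rlmap Z i" unfolding rlmap_def using DL_comp_prev[OF Z] by simp
      finally show ?thesis by simp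
    qed
    then show ?thesis unfolding RL_carr using c by (intro CollectI conjI allI)
  qed
  have hom: "rmod_hom ?D ?R rlmap" unfolding rmod_hom_def
  proof (intro conjI ballI allI)
    show "rlmap ` carr ?D \<subseteq> carr ?R" using into by auto
  next
    fix Z W assume Z: "Z \<in> carr ?D" and W: "W \<in> carr ?D"
    show "rlmap (madd ?D Z W) = madd ?R (rlmap Z) (rlmap W)"
    proof
      fix i
      have "rlmap (madd ?D Z W) i = ext_v A d1 d2 (i - 1) (n - i + 1) (madd (donor A d1 d2 (i - 1) (n - i + 1)) (Z (i - 1)) (W (i - 1)))"
        unfolding rlmap_def DL_add idx2 by simp
      also have "\<dots> = madd ?R (rlmap Z) (rlmap W) i"
        using homD(2)[OF vh DL_prev[OF Z] DL_prev[OF W]] unfolding rlmap_def RL_add by simp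
      finally show "rlmap (madd ?D Z W) i = madd ?R (rlmap Z) (rlmap W) i" .
    qed
  next
    fix a Z assume Z: "Z \<in> carr ?D"
    show "rlmap (msmul ?D a Z) = msmul ?R a (rlmap Z)"
    proof
      fix i
      have "rlmap (msmul ?D a Z) i = ext_v A d1 d2 (i - 1) (n - i + 1) (msmul (donor A d1 d2 (i - 1) (n - i + 1)) a (Z (i - 1)))"
        unfolding rlmap_def DL_smul idx2 by simp
      also have "\<dots> = msmul ?R a (rlmap Z) i"
        using homD(3)[OF vh DL_prev[OF Z]] unfolding rlmap_def RL_smul by simp
      finally show "rlmap (msmul ?D a Z) i = msmul ?R a (rlmap Z) i" .
    qed
  qed
  have inj: "inj_on rlmap (carr ?D)"
  proof (rule inj_onI)
    fix Z W assume Z: "Z \<in> carr ?D" and W: "W \<in> carr ?D" and e: "rlmap Z = rlmap W"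
    show "Z = W"
    proof
      fix j
      have "rlmap Z (j + 1) = rlmap W (j + 1)" using e by simp
      then have "ext_v A d1 d2 j (n - j) (Z j) = ext_v A d1 d2 j (n - j) (W j)"
      proof -
        have e2: "n - (j + 1) + 1 = n - j" by simp
        assume "rlmap Z (j + 1) = rlmap W (j + 1)"
        then show ?thesis unfolding rlmap_def e2 by simp
      qed
      then show "Z j = W j" using inj_onD[OF ext_v_inj _ DL_elem(1)[OF Z] DL_elem(1)[OF W]] by simp
    qed
  qed
  have surj: "carr ?R \<subseteq> rlmap ` carr ?D"
  proof
    fix Y assume Y: "Y \<in> carr ?R"
    define Z where "Z j = the_inv_into (carr (donor A d1 d2 j (n - j))) (ext_v A d1 d2 j (n - j)) (Y (j + 1))" for j
    have Y1: "Y (j + 1) \<in> carr (receptor A d1 d2 (j + 1) (n - j))" for j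
    proof -
      have e: "n - (j + 1) + 1 = n - j" by simp
      show ?thesis using RL_elem(1)[OF Y, of "j + 1"] unfolding e .
    qed
    have Zc: "Z j \<in> carr (donor A d1 d2 j (n - j))" for j unfolding Z_def using inv_ext_v_in[OF Y1] .
    have Zv: "ext_v A d1 d2 j (n - j) (Z j) = Y (j + 1)" for j unfolding Z_def using ext_v_inv[OF Y1] .
    have "Z j = phi j (Z (j + 1))" for j
    proof -
      have "ext_v A d1 d2 j (n - j) (Z j) = ext_h A d1 d2 (j + 1) (n - j - 1) (Z (j + 1))"
      proof -
        have "Y (j + 1) = psi (j + 1) (Y (j + 1 + 1))" using RL_elem(2)[OF Y] .
        then have "Y (j + 1) = ext_h A d1 d2 (j + 1) (n - (j + 1)) (Z (j + 1))" unfolding Z_def by simp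
        then show ?thesis using Zv unfolding nidx by simp
      qed
      then show ?thesis using compat_iff[of Z j, OF Zc Zc] by simp
    qed
    then have ZD: "Z \<in> carr ?D" unfolding DL_carr using Zc by (intro CollectI conjI allI)
    have "rlmap Z = Y"
    proof
      fix i
      have "rlmap Z i = ext_v A d1 d2 (i - 1) (n - (i - 1)) (Z (i - 1))" unfolding rlmap_def idx2 by simp
      also have "\<dots> = Y (i - 1 + 1)" by (rule Zv)
      finally show "rlmap Z i = Y i" by simp
    qed
    then show "Y \<in> rlmap ` carr ?D" using ZD by (rule image_eqI[OF sym])
  qed
  have "rlmap ` carr ?D = carr ?R" using hom surj unfolding rmod_hom_def by blast
  then show ?thesis unfolding rmod_iso_def bij_betw_def using hom inj by simp
qed

end

context DC begin
lemma ext_h_hom: "rmod_hom (donor A d1 d2 i r) (receptor A d1 d2 i (r + 1)) (ext_h A d1 d2 i r)"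
  unfolding rmod_hom_def
proof (intro conjI ballI allI)
  show "ext_h A d1 d2 i r ` carr (donor A d1 d2 i r) \<subseteq> carr (receptor A d1 d2 i (r + 1))" using ext_h_in by auto
next
  fix X Y assume "X \<in> carr (donor A d1 d2 i r)" "Y \<in> carr (donor A d1 d2 i r)"
  then obtain x y where xy: "x \<in> SD i r" "y \<in> SD i r" "X = dq i r x" "Y = dq i r y" by (auto simp: don_carr)
  have c: "x \<in> carr (A i r)" "y \<in> carr (A i r)" using xy SDc by auto
  show "ext_h A d1 d2 i r (madd (donor A d1 d2 i r) X Y) = madd (receptor A d1 d2 i (r + 1)) (ext_h A d1 d2 i r X) (ext_h A d1 d2 i r Y)"
    using xy c by (simp add: don_add ext_h_q SD_add rec_add d2_SR d2_add)
next
  fix a X assume "X \<in> carr (donor A d1 d2 i r)"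
  then obtain x where xy: "x \<in> SD i r" "X = dq i r x" by (auto simp: don_carr)
  have c: "x \<in> carr (A i r)" using xy SDc by auto
  show "ext_h A d1 d2 i r (msmul (donor A d1 d2 i r) a X) = msmul (receptor A d1 d2 i (r + 1)) a (ext_h A d1 d2 i r X)"
    using xy c by (simp add: don_smul ext_h_q SD_smul rec_smul d2_SR d2_smul)
qed

lemma rec_idx: "r = r' \<Longrightarrow> receptor A d1 d2 i r = receptor A d1 d2 i r'" by simp
lemma don_idx: "r = r' \<Longrightarrow> donor A d1 d2 i r = donor A d1 d2 i r'" by simp
end

context DCn begin

lemma donprod_carr: "carr (donprod A d1 d2 m) = {X. \<forall>i. X i \<in> carr (donor A d1 d2 i (m - i))}" by (simp add: donprod_def)
lemma donprod_add: "madd (donprod A d1 d2 m) X Y = (\<lambda>i. madd (donor A d1 d2 i (m - i)) (X i) (Y i))" by (simp add: donprod_def)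
lemma donprod_smul: "msmul (donprod A d1 d2 m) a X = (\<lambda>i. msmul (donor A d1 d2 i (m - i)) a (X i))" by (simp add: donprod_def)
lemma recprod_zero: "mzero (recprod A d1 d2 m) = (\<lambda>i. mzero (receptor A d1 d2 i (m - i)))" by (simp add: recprod_def)

lemma dbar_n: "dbar A d1 d2 n X i = madd (receptor A d1 d2 i (n - i + 1)) (ext_h A d1 d2 i (n - i) (X i))
     (msmul (receptor A d1 d2 i (n - i + 1)) s (ext_v A d1 d2 (i - 1) (n - i + 1) (X (i - 1))))"
proof -
  have e: "n + 1 - i = n - i + 1" by simp
  show ?thesis unfolding dbar_def dbar1_def dbar2_def pow_sg rec_idx[OF e] ..
qed

lemma dbar_ker_carr: "carr (dbar_ker A d1 d2 n) = {X \<in> carr (donprod A d1 d2 n). dbar A d1 d2 n X = mzero (recprod A d1 d2 (n + 1))}"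
  unfolding dbar_ker_def mker_def by simp

lemma dbar_zero_iff: "dbar A d1 d2 n X = mzero (recprod A d1 d2 (n + 1)) \<longleftrightarrow> (\<forall>i. dbar A d1 d2 n X i = mzero (receptor A d1 d2 i (n - i + 1)))"
proof -
  have e: "\<And>i. n + 1 - i = n - i + 1" by simp
  show ?thesis unfolding recprod_zero e fun_eq_iff ..
qed

definition kmap where "kmap Z = (\<lambda>i. msmul (donor A d1 d2 i (n - i)) (eps i) (Z i))"

lemma dk_iso: "rmod_iso (donor_lim A d1 d2 n) (dbar_ker A d1 d2 n) kmap"
proof -
  let ?D = "donor_lim A d1 d2 n" let ?K = "dbar_ker A d1 d2 n"
  have into: "kmap Z \<in> carr ?K" if Z: "Z \<in> carr ?D" for Z
  proof -
    have c: "kmap Z \<in> carr (donprod A d1 d2 n)" unfolding donprod_carr kmap_def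
      using DL_elem(1)[OF Z] by (simp add: don_mod)
    have "dbar A d1 d2 n (kmap Z) i = mzero (receptor A d1 d2 i (n - i + 1))" for i
    proof -
      let ?R = "receptor A d1 d2 i (n - i + 1)"
      let ?W = "ext_h A d1 d2 i (n - i) (Z i)"
      have Wc: "?W \<in> carr ?R" using ext_h_in[OF DL_elem(1)[OF Z]] by simp
      have hh: "rmod_hom (donor A d1 d2 i (n - i)) ?R (ext_h A d1 d2 i (n - i))" using ext_h_hom[of i "n - i"] by simp
      have vh: "rmod_hom (donor A d1 d2 (i - 1) (n - i + 1)) ?R (ext_v A d1 d2 (i - 1) (n - i + 1))"
        using ext_v_hom[of "i - 1" "n - i + 1"] by simp
      have 1: "ext_h A d1 d2 i (n - i) (kmap Z i) = msmul ?R (eps i) ?W"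
        unfolding kmap_def using homD(3)[OF hh DL_elem(1)[OF Z]] .
      have 2: "ext_v A d1 d2 (i - 1) (n - i + 1) (kmap Z (i - 1)) = msmul ?R (eps (i - 1)) ?W"
      proof -
        have "kmap Z (i - 1) = msmul (donor A d1 d2 (i - 1) (n - i + 1)) (eps (i - 1)) (Z (i - 1))"
          unfolding kmap_def idx2 ..
        then show ?thesis using homD(3)[OF vh DL_prev[OF Z]] DL_comp_prev[OF Z] by simp
      qed
      have "dbar A d1 d2 n (kmap Z) i = madd ?R (msmul ?R (eps i) ?W) (msmul ?R (s * eps (i - 1)) ?W)"
        unfolding dbar_n 1 2 using Wc rec_mod by (simp add: rm_smul_smul)
      also have "\<dots> = mzero ?R" using Wc eps_sum[of i] rec_mod by (simp add: rm_smul_sum_zero)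
      finally show ?thesis .
    qed
    then show ?thesis unfolding dbar_ker_carr dbar_zero_iff using c by simp
  qed
  have hom: "rmod_hom ?D ?K kmap" unfolding rmod_hom_def
  proof (intro conjI ballI allI)
    show "kmap ` carr ?D \<subseteq> carr ?K" using into by auto
  next
    fix Z W assume Z: "Z \<in> carr ?D" and W: "W \<in> carr ?D"
    show "kmap (madd ?D Z W) = madd ?K (kmap Z) (kmap W)"
      unfolding kmap_def DL_add dbar_ker_def donprod_add sub_rmod_simps
      using DL_elem(1)[OF Z] DL_elem(1)[OF W] by (simp add: rm_smul_add[OF don_mod])
  next
    fix a Z assume Z: "Z \<in> carr ?D"
    show "kmap (msmul ?D a Z) = msmul ?K a (kmap Z)"
      unfolding kmap_def DL_smul dbar_ker_def donprod_smul sub_rmod_simps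
      using DL_elem(1)[OF Z] by (simp add: rm_eps_comm[OF don_mod])
  qed
  have inj: "inj_on kmap (carr ?D)"
  proof (rule inj_onI)
    fix Z W assume Z: "Z \<in> carr ?D" and W: "W \<in> carr ?D" and e: "kmap Z = kmap W"
    show "Z = W"
    proof
      fix i
      have "msmul (donor A d1 d2 i (n - i)) (eps i) (Z i) = msmul (donor A d1 d2 i (n - i)) (eps i) (W i)"
        using e unfolding kmap_def by (metis)
      then have "msmul (donor A d1 d2 i (n - i)) (eps i) (msmul (donor A d1 d2 i (n - i)) (eps i) (Z i))
        = msmul (donor A d1 d2 i (n - i)) (eps i) (msmul (donor A d1 d2 i (n - i)) (eps i) (W i))" by simp
      then show "Z i = W i" using DL_elem(1)[OF Z] DL_elem(1)[OF W] by (simp add: rm_eps_eps[OF don_mod])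
    qed
  qed
  have surj: "carr ?K \<subseteq> kmap ` carr ?D"
  proof
    fix X assume X: "X \<in> carr ?K"
    have Xc: "\<And>i. X i \<in> carr (donor A d1 d2 i (n - i))" using X unfolding dbar_ker_carr donprod_carr by simp
    have X0: "\<And>i. dbar A d1 d2 n X i = mzero (receptor A d1 d2 i (n - i + 1))"
      using X unfolding dbar_ker_carr dbar_zero_iff by simp
    define Z where "Z i = msmul (donor A d1 d2 i (n - i)) (eps i) (X i)" for i
    have Zc: "Z i \<in> carr (donor A d1 d2 i (n - i))" for i unfolding Z_def using Xc don_mod by simp
    have "Z i = phi i (Z (i + 1))" for i
    proof -
      let ?R = "receptor A d1 d2 (i + 1) (n - i)"
      let ?H = "ext_h A d1 d2 (i + 1) (n - i - 1) (X (i + 1))"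
      let ?V = "ext_v A d1 d2 i (n - i) (X i)"
      have X1: "X (i + 1) \<in> carr (donor A d1 d2 (i + 1) (n - i - 1))" using Xc[of "i + 1"] unfolding nidx .
      have hh: "rmod_hom (donor A d1 d2 (i + 1) (n - i - 1)) ?R (ext_h A d1 d2 (i + 1) (n - i - 1))"
        using ext_h_hom[of "i + 1" "n - i - 1"] by simp
      have Hc: "?H \<in> carr ?R" using homD(1)[OF hh X1] .
      have Vc: "?V \<in> carr ?R" using ext_v_in[OF Xc[of i]] .
      have "dbar A d1 d2 n X (i + 1) = madd ?R ?H (msmul ?R s ?V)"
      proof -
        have e: "n - (i + 1) + 1 = n - i" by simp
        show ?thesis unfolding dbar_n e nidx by simp
      qed
      then have "madd ?R ?H (msmul ?R s ?V) = mzero ?R" using X0[of "i + 1"] unfolding nidx nidx2 by simp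
      then have "msmul ?R s ?V = mneg ?R ?H" using rm_neg_unique[OF rec_mod Hc] Vc rec_mod by simp
      then have "?H = msmul ?R (- s) ?V" using Hc Vc rec_mod by (simp add: rm_neg_smul)
      moreover have "ext_h A d1 d2 (i + 1) (n - i - 1) (Z (i + 1)) = msmul ?R (eps (i + 1)) ?H"
        unfolding Z_def nidx using homD(3)[OF hh X1] .
      moreover have "ext_v A d1 d2 i (n - i) (Z i) = msmul ?R (eps i) ?V"
        unfolding Z_def using homD(3)[OF ext_v_hom Xc[of i]] .
      ultimately have "ext_v A d1 d2 i (n - i) (Z i) = ext_h A d1 d2 (i + 1) (n - i - 1) (Z (i + 1))"
        using Vc rec_mod eps_succ[of i] by (simp add: rm_smul_smul)
      then show ?thesis using compat_iff[of Z i, OF Zc Zc] by simp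
    qed
    then have ZD: "Z \<in> carr ?D" unfolding DL_carr using Zc by (intro CollectI conjI allI)
    have "kmap Z = X" unfolding kmap_def Z_def using Xc by (simp add: rm_eps_eps[OF don_mod])
    then show "X \<in> kmap ` carr ?D" using ZD by (rule image_eqI[OF sym])
  qed
  have "kmap ` carr ?D = carr ?K" using hom surj unfolding rmod_hom_def by blast
  then show ?thesis unfolding rmod_iso_def bij_betw_def using hom inj by simp
qed

end

lemma first_iso:
  assumes M: "is_rmod M" and N: "is_rmod N" and F: "rmod_hom M N F"
  shows "rmod_iso (sub_rmod N (F ` carr M)) (quot_rmod M {x \<in> carr M. F x = mzero N})
           (\<lambda>y. qcls M {x \<in> carr M. F x = mzero N} (SOME x. x \<in> carr M \<and> F x = y))"
proof -
  define K where "K = {x \<in> carr M. F x = mzero N}"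
  define f where "f y = qcls M K (SOME x. x \<in> carr M \<and> F x = y)" for y
  have Ks: "submod M K" unfolding K_def using submod_kernel[OF M N F] .
  have key: "f (F x) = qcls M K x" if x: "x \<in> carr M" for x
  proof -
    let ?x = "SOME x'. x' \<in> carr M \<and> F x' = F x"
    have sx: "?x \<in> carr M \<and> F ?x = F x" by (rule someI[of "\<lambda>x'. x' \<in> carr M \<and> F x' = F x" x]) (simp add: x)
    have "F (madd M ?x (mneg M x)) = mzero N" using sx x hom_diff[OF M F] homD(1)[OF F] N by simp
    then have "madd M ?x (mneg M x) \<in> K" unfolding K_def using sx x M by simp
    then show ?thesis unfolding f_def using qcls_eqI[OF M Ks] sx x by simp
  qed
  have hom: "rmod_hom (sub_rmod N (F ` carr M)) (quot_rmod M K) f" unfolding rmod_hom_def sub_rmod_simps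
  proof (intro conjI ballI allI)
    show "f ` F ` carr M \<subseteq> carr (quot_rmod M K)" using key by (auto simp: quot_carr[OF M Ks])
  next
    fix y y' assume "y \<in> F ` carr M" "y' \<in> F ` carr M"
    then obtain x x' where xx: "x \<in> carr M" "x' \<in> carr M" "y = F x" "y' = F x'" by auto
    have e: "madd N (F x) (F x') = F (madd M x x')" using homD(2)[OF F xx(1,2)] by simp
    show "f (madd N y y') = madd (quot_rmod M K) (f y) (f y')"
      using xx key e M by (simp add: quot_add[OF M Ks])
  next
    fix a y assume "y \<in> F ` carr M"
    then obtain x where xx: "x \<in> carr M" "y = F x" by auto
    have e: "msmul N a (F x) = F (msmul M a x)" using homD(3)[OF F xx(1)] by simp
    show "f (msmul N a y) = msmul (quot_rmod M K) a (f y)"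
      using xx key e M by (simp add: quot_smul[OF M Ks])
  qed
  have inj: "inj_on f (F ` carr M)"
  proof (rule inj_onI)
    fix y y' assume "y \<in> F ` carr M" "y' \<in> F ` carr M" and e: "f y = f y'"
    then obtain x x' where xx: "x \<in> carr M" "x' \<in> carr M" "y = F x" "y' = F x'" by auto
    have "qcls M K x = qcls M K x'" using e xx key by simp
    then have "madd M x (mneg M x') \<in> K" using qcls_eq_iff[OF M Ks xx(1,2)] by simp
    then have "madd N (F x) (mneg N (F x')) = mzero N" unfolding K_def using hom_diff[OF M F xx(1,2)] by simp
    then show "y = y'" using xx rm_eq_iff[OF N] homD(1)[OF F] by simp
  qed
  have surj: "f ` (F ` carr M) = carr (quot_rmod M K)"
  proof
    show "f ` F ` carr M \<subseteq> carr (quot_rmod M K)" using hom unfolding rmod_hom_def by simp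
    show "carr (quot_rmod M K) \<subseteq> f ` F ` carr M"
    proof
      fix Q assume "Q \<in> carr (quot_rmod M K)"
      then obtain x where x: "x \<in> carr M" "Q = qcls M K x" by (auto simp: quot_carr[OF M Ks])
      then have "Q = f (F x)" using key by simp
      then show "Q \<in> f ` F ` carr M" using x(1) by blast
    qed
  qed
  show ?thesis using hom inj surj unfolding rmod_iso_def bij_betw_def K_def f_def by simp
qed

context DCn begin

lemma rp_mod: "is_rmod (recprod A d1 d2 m)" unfolding recprod_def by (rule prod_rmod) (rule rec_mod)
lemma recprod_add: "madd (recprod A d1 d2 m) X Y = (\<lambda>i. madd (receptor A d1 d2 i (m - i)) (X i) (Y i))" by (simp add: recprod_def)
lemma recprod_smul: "msmul (recprod A d1 d2 m) a X = (\<lambda>i. msmul (receptor A d1 d2 i (m - i)) a (X i))" by (simp add: recprod_def)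

definition yrep where "yrep Y = (\<lambda>i. SOME u. u \<in> Y i)"

lemma yrep: assumes Y: "Y \<in> carr (recprod A d1 d2 n)"
  shows "bic (yrep Y)" "Y = (\<lambda>i. rq i (n - i) (yrep Y i))" "intramural A d1 d2 n Y = hq n (yrep Y)"
proof -
  have Yi: "\<And>i. Y i \<in> carr (receptor A d1 d2 i (n - i))" using Y unfolding recprod_carr by simp
  have ys: "\<And>i. yrep Y i \<in> SR i (n - i)" and yq: "\<And>i. rq i (n - i) (yrep Y i) = Y i"
    using rec_rep[OF Yi] unfolding yrep_def by auto
  have yt: "yrep Y \<in> carr (tot A n)" unfolding tot_in using ys SR_c by blast
  show "bic (yrep Y)" unfolding bic_def using yt ys by simp
  show "Y = (\<lambda>i. rq i (n - i) (yrep Y i))" using yq by simp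
  show "intramural A d1 d2 n Y = hq n (yrep Y)" unfolding intramural_def yrep_def ..
qed

lemma intra_hom: "rmod_hom (recprod A d1 d2 n) (Htot A d1 d2 n) (intramural A d1 d2 n)"
  unfolding rmod_hom_def
proof (intro conjI ballI allI)
  show "intramural A d1 d2 n ` carr (recprod A d1 d2 n) \<subseteq> carr (Htot A d1 d2 n)"
    using yrep H_in bic_cyc by auto
next
  fix Y Y' assume Y: "Y \<in> carr (recprod A d1 d2 n)" and Y': "Y' \<in> carr (recprod A d1 d2 n)"
  let ?y = "yrep Y" let ?y' = "yrep Y'"
  let ?z = "madd (tot A n) ?y ?y'"
  have zt: "?z \<in> carr (tot A n)" using rm_add[OF tot_mod bic_t[OF yrep(1)[OF Y]] bic_t[OF yrep(1)[OF Y']]] .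
  have zb: "bic ?z" unfolding bic_def using zt bic_SR[OF yrep(1)[OF Y]] bic_SR[OF yrep(1)[OF Y']]
    by (simp add: tot_add SR_add)
  have "madd (recprod A d1 d2 n) Y Y' = (\<lambda>i. rq i (n - i) (?z i))"
    apply (subst yrep(2)[OF Y], subst yrep(2)[OF Y'])
    using bic_SR[OF yrep(1)[OF Y]] bic_SR[OF yrep(1)[OF Y']] by (simp add: recprod_add rec_add tot_add)
  then have "intramural A d1 d2 n (madd (recprod A d1 d2 n) Y Y') = hq n ?z" using intra_rq[OF zb] by simp
  also have "\<dots> = madd (Htot A d1 d2 n) (hq n ?y) (hq n ?y')" using H_add bic_cyc yrep(1) Y Y' by simp
  finally show "intramural A d1 d2 n (madd (recprod A d1 d2 n) Y Y') = madd (Htot A d1 d2 n) (intramural A d1 d2 n Y) (intramural A d1 d2 n Y')"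
    using yrep(3)[OF Y] yrep(3)[OF Y'] by simp
next
  fix a Y assume Y: "Y \<in> carr (recprod A d1 d2 n)"
  let ?y = "yrep Y"
  let ?z = "msmul (tot A n) a ?y"
  have zt: "?z \<in> carr (tot A n)" using rm_smul[OF tot_mod bic_t[OF yrep(1)[OF Y]]] .
  have zb: "bic ?z" unfolding bic_def using zt bic_SR[OF yrep(1)[OF Y]]
    by (simp add: tot_smul SR_smul)
  have "msmul (recprod A d1 d2 n) a Y = (\<lambda>i. rq i (n - i) (?z i))"
    apply (subst yrep(2)[OF Y])
    using bic_SR[OF yrep(1)[OF Y]] by (simp add: recprod_smul rec_smul tot_smul)
  then have "intramural A d1 d2 n (msmul (recprod A d1 d2 n) a Y) = hq n ?z" using intra_rq[OF zb] by simp
  also have "\<dots> = msmul (Htot A d1 d2 n) a (hq n ?y)" using H_smul bic_cyc yrep(1) Y by simp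
  finally show "intramural A d1 d2 n (msmul (recprod A d1 d2 n) a Y) = msmul (Htot A d1 d2 n) a (intramural A d1 d2 n Y)"
    using yrep(3)[OF Y] by simp
qed

lemma dbar_nm1: "dbar A d1 d2 (n - 1) X i = madd (receptor A d1 d2 i (n - i)) (ext_h A d1 d2 i (n - i - 1) (X i))
     (msmul (receptor A d1 d2 i (n - i)) (- s) (ext_v A d1 d2 (i - 1) (n - i) (X (i - 1))))"
proof -
  have e1: "n - 1 + 1 - i = n - i" by simp
  have e2: "n - 1 - i + 1 = n - i" by simp
  show ?thesis unfolding dbar_def dbar1_def dbar2_def pow_sg e1 e2 idx3 nidx2 sg_pred ..
qed

lemma dbar_tot: assumes w: "w \<in> carr (tot A (n - 1))" and ws: "\<And>i. w i \<in> SD i (n - i - 1)"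
  shows "dbar A d1 d2 (n - 1) (\<lambda>i. dq i (n - 1 - i) (w i)) = (\<lambda>i. rq i (n - i) (totd A d1 d2 (n - 1) w i))"
    "bic (totd A d1 d2 (n - 1) w)"
proof -
  have wp: "w (i - 1) \<in> SD (i - 1) (n - i)" for i using ws[of "i - 1"] unfolding idx1 .
  have S1: "d2 i (n - i - 1) (w i) \<in> SR i (n - i)" for i using d2_SR[OF ws[of i]] unfolding nidx2 .
  have S2: "d1 (i - 1) (n - i) (w (i - 1)) \<in> SR i (n - i)" for i using d1_SR[OF wp[of i]] by simp
  have bS: "totd A d1 d2 (n - 1) w i \<in> SR i (n - i)" for i
    unfolding bnd_comp[OF w] using SR_add[OF S1 SR_smul[OF S2]] .
  have bt: "totd A d1 d2 (n - 1) w \<in> carr (tot A n)" using totd_in[OF w] by simp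
  show "bic (totd A d1 d2 (n - 1) w)" unfolding bic_def using bt bS by simp
  show "dbar A d1 d2 (n - 1) (\<lambda>i. dq i (n - 1 - i) (w i)) = (\<lambda>i. rq i (n - i) (totd A d1 d2 (n - 1) w i))"
  proof
    fix i
    have e: "n - 1 - (i - 1) = n - i" by simp
    have "dbar A d1 d2 (n - 1) (\<lambda>i. dq i (n - 1 - i) (w i)) i = madd (receptor A d1 d2 i (n - i)) (ext_h A d1 d2 i (n - i - 1) (dq i (n - i - 1) (w i)))
     (msmul (receptor A d1 d2 i (n - i)) (- s) (ext_v A d1 d2 (i - 1) (n - i) (dq (i - 1) (n - i) (w (i - 1)))))"
      unfolding dbar_nm1 idx3 e idx1 ..
    also have "\<dots> = madd (receptor A d1 d2 i (n - i)) (rq i (n - i) (d2 i (n - i - 1) (w i)))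
     (msmul (receptor A d1 d2 i (n - i)) (- s) (rq i (n - i) (d1 (i - 1) (n - i) (w (i - 1)))))"
      using ext_h_q[OF ws[of i]] ext_v_q[OF wp[of i]] unfolding nidx2 by simp
    also have "\<dots> = rq i (n - i) (totd A d1 d2 (n - 1) w i)"
      unfolding bnd_comp[OF w] using S1 S2 by (simp add: rec_smul rec_add SR_smul)
    finally show "dbar A d1 d2 (n - 1) (\<lambda>i. dq i (n - 1 - i) (w i)) i = rq i (n - i) (totd A d1 d2 (n - 1) w i)" .
  qed
qed

lemma ker_dim: "{Y \<in> carr (recprod A d1 d2 n). intramural A d1 d2 n Y = mzero (Htot A d1 d2 n)}
   = dbar A d1 d2 (n - 1) ` carr (donprod A d1 d2 (n - 1))"
proof
  show "{Y \<in> carr (recprod A d1 d2 n). intramural A d1 d2 n Y = mzero (Htot A d1 d2 n)} \<subseteq> dbar A d1 d2 (n - 1) ` carr (donprod A d1 d2 (n - 1))"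
  proof
    fix Y assume "Y \<in> {Y \<in> carr (recprod A d1 d2 n). intramural A d1 d2 n Y = mzero (Htot A d1 d2 n)}"
    then have Y: "Y \<in> carr (recprod A d1 d2 n)" and Y0: "intramural A d1 d2 n Y = mzero (Htot A d1 d2 n)" by auto
    let ?y = "yrep Y"
    have yb: "bic ?y" using yrep(1)[OF Y] .
    have zc: "mzero (tot A n) \<in> cycles A d1 d2 n" using submodD(2)[OF cyc_sub] .
    have "hq n ?y = hq n (mzero (tot A n))" using Y0 yrep(3)[OF Y] H_zero by simp
    then have "madd (tot A n) ?y (mneg (tot A n) (mzero (tot A n))) \<in> boundaries A d1 d2 n"
      using H_eq[OF bic_cyc[OF yb] zc] by simp
    then have "?y \<in> boundaries A d1 d2 n" using bic_t[OF yb] tot_mod by simp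
    then obtain w where w: "w \<in> carr (tot A (n - 1))" "?y = totd A d1 d2 (n - 1) w" unfolding boundaries_def by auto
    have ws: "w i \<in> SD i (n - i - 1)" for i
    proof -
      have wi: "w i \<in> carr (A i (n - i - 1))" using tot_ing[OF w(1), of "n - i - 1" i] by simp
      have wp: "w (i - 1) \<in> carr (A (i - 1) (n - i))" using tot_ing[OF w(1), of "n - i" "i - 1"] by simp
      have "mzero (A (i + 1) (n - i)) = d1 i (n - i) (?y i)" using SR_d1[OF bic_SR[OF yb]] by simp
      also have "\<dots> = d1 i (n - i) (d2 i (n - i - 1) (w i))"
      proof -
        have c1: "d2 i (n - i - 1) (w i) \<in> carr (A i (n - i))" using d2_inj[OF wi] by simp
        have c2: "d1 (i - 1) (n - i) (w (i - 1)) \<in> carr (A i (n - i))" using wp by simp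
        have "d1 i (n - i) (d1 (i - 1) (n - i) (w (i - 1))) = mzero (A (i + 1) (n - i))" using d11'[OF wp] .
        then show ?thesis unfolding w(2) bnd_comp[OF w(1)] using c1 c2 by (simp add: d1_add d1_smul)
      qed
      finally have "d1 i (n - i - 1 + 1) (d2 i (n - i - 1) (w i)) = mzero (A (i + 1) (n - i - 1 + 1))" unfolding nidx2 by simp
      then show ?thesis unfolding SD_def using wi by simp
    qed
    have X: "(\<lambda>i. dq i (n - 1 - i) (w i)) \<in> carr (donprod A d1 d2 (n - 1))"
      unfolding donprod_carr idx3 using ws don_in by simp
    have "dbar A d1 d2 (n - 1) (\<lambda>i. dq i (n - 1 - i) (w i)) = Y"
      using dbar_tot(1)[OF w(1) ws] yrep(2)[OF Y] w(2) by simp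
    then show "Y \<in> dbar A d1 d2 (n - 1) ` carr (donprod A d1 d2 (n - 1))" using X by (rule image_eqI[OF sym])
  qed
next
  show "dbar A d1 d2 (n - 1) ` carr (donprod A d1 d2 (n - 1)) \<subseteq> {Y \<in> carr (recprod A d1 d2 n). intramural A d1 d2 n Y = mzero (Htot A d1 d2 n)}"
  proof
    fix Y assume "Y \<in> dbar A d1 d2 (n - 1) ` carr (donprod A d1 d2 (n - 1))"
    then obtain X where X: "X \<in> carr (donprod A d1 d2 (n - 1))" "Y = dbar A d1 d2 (n - 1) X" by auto
    have Xi: "\<And>i. X i \<in> carr (donor A d1 d2 i (n - i - 1))" using X(1) unfolding donprod_carr idx3 by simp
    define w where "w i = (SOME x. x \<in> X i)" for i
    have ws: "\<And>i. w i \<in> SD i (n - i - 1)" and wq: "\<And>i. dq i (n - i - 1) (w i) = X i"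
      using don_rep[OF Xi] unfolding w_def by auto
    have wt: "w \<in> carr (tot A (n - 1))" unfolding tot_in idx3 using ws SDc by blast
    have XX: "X = (\<lambda>i. dq i (n - 1 - i) (w i))" unfolding idx3 using wq by simp
    have Yeq: "Y = (\<lambda>i. rq i (n - i) (totd A d1 d2 (n - 1) w i))" using dbar_tot(1)[OF wt ws] X(2) XX by simp
    have bb: "bic (totd A d1 d2 (n - 1) w)" using dbar_tot(2)[OF wt ws] .
    have YR: "Y \<in> carr (recprod A d1 d2 n)" unfolding recprod_carr Yeq using bic_SR[OF bb] rec_in by simp
    have zc: "mzero (tot A n) \<in> cycles A d1 d2 n" using submodD(2)[OF cyc_sub] .
    have bB: "totd A d1 d2 (n - 1) w \<in> boundaries A d1 d2 n" unfolding boundaries_def using wt by simp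
    have "intramural A d1 d2 n Y = hq n (totd A d1 d2 (n - 1) w)" unfolding Yeq using intra_rq[OF bb] .
    also have "\<dots> = hq n (mzero (tot A n))"
      using H_eqI[OF bic_cyc[OF bb] zc] bB bic_t[OF bb] tot_mod by simp
    finally show "Y \<in> {Y \<in> carr (recprod A d1 d2 n). intramural A d1 d2 n Y = mzero (Htot A d1 d2 n)}"
      using YR H_zero by simp
  qed
qed

lemma coker_iso: "\<exists>f. rmod_iso (sub_rmod (Htot A d1 d2 n) (PB A d1 d2 n)) (dbar_coker A d1 d2 n) f"
proof -
  have "rmod_iso (sub_rmod (Htot A d1 d2 n) (intramural A d1 d2 n ` carr (recprod A d1 d2 n)))
      (quot_rmod (recprod A d1 d2 n) {Y \<in> carr (recprod A d1 d2 n). intramural A d1 d2 n Y = mzero (Htot A d1 d2 n)})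
      (\<lambda>y. qcls (recprod A d1 d2 n) {Y \<in> carr (recprod A d1 d2 n). intramural A d1 d2 n Y = mzero (Htot A d1 d2 n)}
             (SOME x. x \<in> carr (recprod A d1 d2 n) \<and> intramural A d1 d2 n x = y))"
    by (rule first_iso[OF rp_mod H_mod intra_hom])
  then show ?thesis unfolding ker_dim PB_intra[symmetric] dbar_coker_def by blast
qed

end

theorem corollary6p6:
  fixes A :: "int \<Rightarrow> int \<Rightarrow> ('r::ring_1, 'm) rmod"
    and d1 d2 :: "int \<Rightarrow> int \<Rightarrow> 'm \<Rightarrow> 'm"
    and n :: int
  assumes "double_complex A d1 d2"
    and "columns_exact A d1"
  shows "(\<forall>i. rmod_iso (donor A d1 d2 i (n - i)) (receptor A d1 d2 (i + 1) (n - i)) (ext_v A d1 d2 i (n - i)))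
    \<and> (\<exists>g. rmod_hom (Htot A d1 d2 n) (donor_lim A d1 d2 n) g
           \<and> g ` carr (Htot A d1 d2 n) = carr (donor_lim A d1 d2 n)
           \<and> mker (Htot A d1 d2 n) (donor_lim A d1 d2 n) g = PB A d1 d2 n)
    \<and> (\<exists>f. rmod_iso (donor_lim A d1 d2 n) (receptor_lim A d1 d2 n) f)
    \<and> (\<exists>f. rmod_iso (donor_lim A d1 d2 n) (dbar_ker A d1 d2 n) f)
    \<and> PB A d1 d2 n = intramural A d1 d2 n ` carr (recprod A d1 d2 n)
    \<and> (\<exists>f. rmod_iso (sub_rmod (Htot A d1 d2 n) (PB A d1 d2 n)) (dbar_coker A d1 d2 n) f)"
proof -
  interpret DCn A d1 d2 n by unfold_locales (use assms in auto)
  show ?thesis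
  proof (intro conjI allI)
    show "\<And>i. rmod_iso (donor A d1 d2 i (n - i)) (receptor A d1 d2 (i + 1) (n - i)) (ext_v A d1 d2 i (n - i))"
      by (rule ext_v_iso)
    show "\<exists>g. rmod_hom (Htot A d1 d2 n) (donor_lim A d1 d2 n) g
           \<and> g ` carr (Htot A d1 d2 n) = carr (donor_lim A d1 d2 n)
           \<and> mker (Htot A d1 d2 n) (donor_lim A d1 d2 n) g = PB A d1 d2 n"
      using g_main by blast
    show "\<exists>f. rmod_iso (donor_lim A d1 d2 n) (receptor_lim A d1 d2 n) f" using rl_iso by blast
    show "\<exists>f. rmod_iso (donor_lim A d1 d2 n) (dbar_ker A d1 d2 n) f" using dk_iso by blast
    show "PB A d1 d2 n = intramural A d1 d2 n ` carr (recprod A d1 d2 n)" by (rule PB_intra)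
    show "\<exists>f. rmod_iso (sub_rmod (Htot A d1 d2 n) (PB A d1 d2 n)) (dbar_coker A d1 d2 n) f" by (rule coker_iso)
  qed
qed


end
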